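(* Let $N\ge 2$ and let $F$ be a marginal distribution on $[0,1]$ as described in the context. Suppose the general robust-version regularity conditions (I) hold: $$f(x)\ \ge\ \frac{x^{-1-\frac{N}{N-1}}}{N-1}\int_0^x s^{\frac{N}{N-1}}f(s)\,ds\quad\text{for all }x\in(0,1),\qquad \Pr(1)\ \ge\ \frac{1}{N-1}\int_{(0,1)}s^{\frac{N}{N-1}}f(s)\,ds.$$ Then the Second Price Auction with $\mathrm{Beta}(\frac{1}{N-1},1)$ Distributed Reserves $(q^*,t^* )$ and the General Adversarial Correlation Structure $\pi^*$ form a Nash equilibrium (saddle point) of the zero-sum game in which the auctioneer chooses an exclusive DSIC and EPIR mechanism and Nature chooses $\pi\in\Pi(F)$: $\pi^*\in\Pi(F)$ and $U((q^*,t^* ),\pi)\ge U((q^*,t^* ),\pi^* )\ge U((q,t),\pi^* )$ for every $\pi\in\Pi(F)$ and every exclusive DSIC and EPIR mechanism $(q,t)$. The revenue guarantee $\inf_{\pi\in\Pi(F)}U((q^*,t^* ),\pi)$ equals $E[X^{\frac{N}{N-1}}]$ with $X\sim F$. In addition, the general robust-version regularity conditions (II) — namely $x^2f(x)$ is non-decreasing on $(0,1)$ and $\Pr(1)\ge\frac{1}{N-1}\int_{(0,1)}s^{\frac{N}{N-1}}f(s)\,ds$ — imply the general robust-version regularity conditions (I).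
   Context: A single indivisible good is sold to $N$ risk-neutral bidders $I=\{1,\dots,N\}$ with private values $v_i\in[0,1]$. All bidders' values have the same marginal cdf $F$ on $[0,1]$ with support $[0,1]$; $F$ may have point masses at $0$ and at $1$ and is absolutely continuous on $(0,1)$ with density $f$; $\Pr(1)$ is the mass of $F$ at $1$ (if $F$ has a mass at $0$, $f(0)$ denotes $\Pr(0)$). $\Pi(F)$ is the set of Borel probability measures on $[0,1]^N$ all of whose one-dimensional marginals equal $F$. A mechanism $(q,t)$ consists of $q:[0,1]^N\to[0,1]^N$ with $\sum_iq_i(v)\le1$ and $t:[0,1]^N\to\mathbb{R}^N$; it is DSIC if $v_iq_i(v)-t_i(v)\ge v_iq_i(v_i',v_{-i})-t_i(v_i',v_{-i})$ for all $i,v,v_i'$, EPIR if $v_iq_i(v)-t_i(v)\ge0$ for all $i,v$, and exclusive if $q_i(v)=0$ whenever $v_i<\max_jv_j$. $U((q,t),\pi)=\int\sum_it_i(v)\,d\pi(v)$. For a profile $v$, $v_{(1)}$ and $v_{(2)}$ denote the highest and second highest entries. Second Price Auction with $\mathrm{Beta}(\frac1{N-1},1)$ Distributed Reserves $(q^*,t^* )$: if exactly one bidder $i$ has $v_i=v_{(1)}$, then $q_i^*(v)=v_{(1)}^{\frac1{N-1}}$, $t_i^*(v)=\frac1Nv_{(1)}^{\frac N{N-1}}+\frac{N-1}Nv_{(2)}^{\frac N{N-1}}$, and $q_j^*=t_j^*=0$ for $j\ne i$; if $K\ge2$ bidders have value $v_{(1)}$, each of them gets $q_i^*(v)=\frac{v_{(1)}^{1/(N-1)}}{K}$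 and pays $t_i^*(v)=\frac1Kv_{(1)}^{\frac N{N-1}}$, and all others get and pay $0$. General Adversarial Correlation Structure $\pi^*$: a symmetric distribution supported on $V^+$, the set of profiles in which either all coordinates are equal, or there is a unique highest coordinate and all other coordinates are equal. It places weight $f(0)$ at $(0,\dots,0)$; for each $i$, on the profiles with $v_i=v_{(1)}\in(0,1)$ and $v_j=v_{(2)}\in(0,v_{(1)}]$ for all $j\neq i$, it has density (w.r.t. Lebesgue measure in the two parameters $(v_{(1)},v_{(2)})$) $\frac{1}{(N-1)v_{(1)}^2}\Big(v_{(2)}f(v_{(2)})-\frac{v_{(2)}^{-\frac N{N-1}}}{N-1}\int_0^{v_{(2)}}s^{\frac N{N-1}}f(s)\,ds\Big)$; for each $i$, on the profiles with $v_i=1$ and $v_j=v_{(2)}\in(0,1)$ for all $j\ne i$, it has density (w.r.t. $dv_{(2)}$) $\frac1{N-1}\Big(v_{(2)}f(v_{(2)})-\frac{v_{(2)}^{-\frac N{N-1}}}{N-1}\int_0^{v_{(2)}}s^{\frac N{N-1}}f(s)\,ds\Big)$; and it has a point mass $\Pr(1)-\frac1{N-1}\int_{(0,1)}s^{\frac N{N-1}}f(s)\,ds$ at $(1,\dots,1)$. It places no weight elsewhere. *)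

theory Defs
  imports "HOL-Probability.Probability"
begin

text \<open>Bidders are indexed by a finite type 'n, N = CARD('n); value profiles are
vectors in real^'n.\<close>

definition cube :: "(real^'n::finite) set" where
  "cube = {v. \<forall>i. v $ i \<in> {0..1}}"

definition upd :: "real^'n::finite \<Rightarrow> 'n \<Rightarrow> real \<Rightarrow> real^'n" where
  "upd v i x = (\<chi> j. if j = i then x else v $ j)"

definition vmax :: "real^'n::finite \<Rightarrow> real" where
  "vmax v = Max (range (\<lambda>j. v $ j))"

definition nmax :: "real^'n::finite \<Rightarrow> nat" where
  "nmax v = card {i. v $ i = vmax v}"

definition vsec :: "real^'n::finite \<Rightarrow> real" where
  "vsec v = (if nmax v \<ge> 2 then vmax v else Max {v $ j | j. v $ j < vmax v})"

text \<open>Mechanism properties; a mechanism is a pair of functions q t :: real^'n => real^'n,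
relevant on the cube [0,1]^N.\<close>

definition feasible :: "(real^'n::finite \<Rightarrow> real^'n) \<Rightarrow> bool" where
  "feasible q \<longleftrightarrow> (\<forall>v\<in>cube. (\<forall>i. 0 \<le> q v $ i \<and> q v $ i \<le> 1) \<and> (\<Sum>i\<in>UNIV. q v $ i) \<le> 1)"

definition DSIC :: "(real^'n::finite \<Rightarrow> real^'n) \<Rightarrow> (real^'n \<Rightarrow> real^'n) \<Rightarrow> bool" where
  "DSIC q t \<longleftrightarrow> (\<forall>v\<in>cube. \<forall>i. \<forall>x\<in>{0..1}.
      v $ i * q v $ i - t v $ i \<ge> v $ i * q (upd v i x) $ i - t (upd v i x) $ i)"

definition EPIR :: "(real^'n::finite \<Rightarrow> real^'n) \<Rightarrow> (real^'n \<Rightarrow> real^'n) \<Rightarrow> bool" where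
  "EPIR q t \<longleftrightarrow> (\<forall>v\<in>cube. \<forall>i. v $ i * q v $ i - t v $ i \<ge> 0)"

definition exclusive :: "(real^'n::finite \<Rightarrow> real^'n) \<Rightarrow> bool" where
  "exclusive q \<longleftrightarrow> (\<forall>v\<in>cube. \<forall>i. v $ i < vmax v \<longrightarrow> q v $ i = 0)"

definition admissible :: "(real^'n::finite \<Rightarrow> real^'n) \<Rightarrow> (real^'n \<Rightarrow> real^'n) \<Rightarrow> bool" where
  "admissible q t \<longleftrightarrow> feasible q \<and> exclusive q \<and> DSIC q t \<and> EPIR q t"

definition U :: "(real^'n::finite \<Rightarrow> real^'n) \<Rightarrow> (real^'n) measure \<Rightarrow> real" where
  "U t \<pi> = (\<integral>v. (\<Sum>i\<in>UNIV. t v $ i) \<partial>\<pi>)"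

definition marginal_ok :: "real measure \<Rightarrow> (real \<Rightarrow> real) \<Rightarrow> bool" where
  "marginal_ok F f \<longleftrightarrow>
     prob_space F \<and> sets F = sets borel \<and> emeasure F {0..1} = 1 \<and>
     (\<forall>a b. 0 \<le> a \<and> a < b \<and> b \<le> 1 \<longrightarrow> measure F {a<..<b} > 0) \<and>
     f \<in> borel_measurable borel \<and> (\<forall>x\<in>{0<..<1}. 0 \<le> f x) \<and>
     (\<forall>A\<in>sets borel. A \<subseteq> {0<..<1} \<longrightarrow> emeasure F A = (\<integral>\<^sup>+x\<in>A. ennreal (f x) \<partial>lborel))"

definition PiF :: "real measure \<Rightarrow> (real^'n::finite) measure set" where
  "PiF F = {\<pi>. prob_space \<pi> \<and> sets \<pi> = sets borel \<and> (\<forall>i. distr \<pi> borel (\<lambda>v. v $ i) = F)}"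

definition expo :: "'n::finite itself \<Rightarrow> real" where
  "expo _ = real CARD('n) / (real CARD('n) - 1)"

definition J :: "'n::finite itself \<Rightarrow> (real \<Rightarrow> real) \<Rightarrow> real \<Rightarrow> real" where
  "J n f x = (LINT s:{0<..<x}|lborel. s powr expo n * f s)"

definition regI :: "'n::finite itself \<Rightarrow> real measure \<Rightarrow> (real \<Rightarrow> real) \<Rightarrow> bool" where
  "regI n F f \<longleftrightarrow>
     (\<forall>x\<in>{0<..<1}. f x \<ge> x powr (-1 - expo n) / (real CARD('n) - 1) * J n f x) \<and>
     measure F {1} \<ge> 1 / (real CARD('n) - 1) * J n f 1"

definition regII :: "'n::finite itself \<Rightarrow> real measure \<Rightarrow> (real \<Rightarrow> real) \<Rightarrow> bool" where
  "regII n F f \<longleftrightarrow>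
     mono_on {0<..<1} (\<lambda>x. x\<^sup>2 * f x) \<and>
     measure F {1} \<ge> 1 / (real CARD('n) - 1) * J n f 1"

definition qstar :: "real^'n::finite \<Rightarrow> real^'n" where
  "qstar v = (\<chi> i. if v $ i = vmax v
      then vmax v powr (1 / (real CARD('n) - 1)) / real (nmax v) else 0)"

definition tstar :: "real^'n::finite \<Rightarrow> real^'n" where
  "tstar v = (\<chi> i. if v $ i = vmax v
      then (if nmax v = 1
            then 1 / real CARD('n) * vmax v powr expo TYPE('n)
                 + (real CARD('n) - 1) / real CARD('n) * vsec v powr expo TYPE('n)
            else 1 / real (nmax v) * vmax v powr expo TYPE('n))
      else 0)"

definition hdens :: "'n::finite itself \<Rightarrow> (real \<Rightarrow> real) \<Rightarrow> real \<Rightarrow> real" where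
  "hdens n f y = y * f y - y powr (- expo n) / (real CARD('n) - 1) * J n f y"

definition emb :: "'n::finite \<Rightarrow> real \<Rightarrow> real \<Rightarrow> real^'n" where
  "emb i a b = (\<chi> j. if j = i then a else b)"

definition pistar_em :: "'n::finite itself \<Rightarrow> real measure \<Rightarrow> (real \<Rightarrow> real) \<Rightarrow> (real^'n) set \<Rightarrow> ennreal" where
  "pistar_em n F f A =
     ennreal (measure F {0}) * indicator A (0::real^'n)
   + (\<Sum>i\<in>UNIV. \<integral>\<^sup>+p\<in>{(a,b). 0 < b \<and> b \<le> a \<and> a < 1}.
        ennreal (1 / ((real CARD('n) - 1) * (fst p)\<^sup>2) * hdens n f (snd p))
        * indicator A (emb i (fst p) (snd p)) \<partial>(lborel :: (real \<times> real) measure))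
   + (\<Sum>i\<in>UNIV. \<integral>\<^sup>+b\<in>{0<..<1}.
        ennreal (1 / (real CARD('n) - 1) * hdens n f b) * indicator A (emb i 1 b) \<partial>lborel)
   + ennreal (measure F {1} - 1 / (real CARD('n) - 1) * J n f 1) * indicator A (1::real^'n)"

definition pistar :: "'n::finite itself \<Rightarrow> real measure \<Rightarrow> (real \<Rightarrow> real) \<Rightarrow> (real^'n) measure" where
  "pistar n F f = measure_of UNIV (sets borel) (pistar_em n F f)"

end

theory Submission
  imports Defs
begin


lemma card_ge2: "CARD('n::finite) \<ge> 2 \<Longrightarrow> \<exists>j::'n. j \<noteq> i"
proof (rule ccontr)
  assume "CARD('n) \<ge> 2" "\<not> (\<exists>j::'n. j \<noteq> i)"
  hence "(UNIV::'n set) = {i}" by auto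
  hence "CARD('n) = card {i}" by simp
  thus False using \<open>CARD('n) \<ge> 2\<close> by simp
qed

definition mo :: "real^'n::finite \<Rightarrow> 'n \<Rightarrow> real" where
  "mo v i = Max {v $ j | j. j \<noteq> i}"

lemma mo_fin: "finite {v $ j | j. j \<noteq> (i::'n::finite)}"
proof -
  have "{v $ j | j. j \<noteq> i} = (\<lambda>j. v $ j) ` {j. j \<noteq> i}" by auto
  thus ?thesis by simp
qed

lemma mo_ne: "CARD('n::finite) \<ge> 2 \<Longrightarrow> {v $ j | j. j \<noteq> (i::'n)} \<noteq> {}"
  using card_ge2[of i] by auto

lemma mo_ge: "CARD('n::finite) \<ge> 2 \<Longrightarrow> j \<noteq> i \<Longrightarrow> v $ j \<le> mo v (i::'n)"
  unfolding mo_def by (rule Max_ge[OF mo_fin]) auto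

lemma mo_att: "CARD('n::finite) \<ge> 2 \<Longrightarrow> \<exists>j. j \<noteq> i \<and> v $ j = mo v (i::'n)"
proof -
  assume a: "CARD('n) \<ge> 2"
  have "mo v i \<in> {v $ j | j. j \<noteq> i}" unfolding mo_def using Max_in[OF mo_fin mo_ne[OF a]] by blast
  thus ?thesis by auto
qed

lemma mo_upd: "mo (upd v i x) i = mo v i"
proof -
  have *: "\<And>j. j \<noteq> i \<Longrightarrow> upd v i x $ j = v $ j" by (simp add: upd_def)
  have "{upd v i x $ j |j. j \<noteq> i} = {v $ j |j. j \<noteq> i}"
  proof (intro set_eqI iffI)
    fix y assume "y \<in> {upd v i x $ j |j. j \<noteq> i}"
    then obtain j where "j \<noteq> i" "y = upd v i x $ j" by blast
    thus "y \<in> {v $ j |j. j \<noteq> i}" using * by auto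
  next
    fix y assume "y \<in> {v $ j |j. j \<noteq> i}"
    then obtain j where "j \<noteq> i" "y = v $ j" by blast
    thus "y \<in> {upd v i x $ j |j. j \<noteq> i}" using * by (metis (mono_tags, lifting) mem_Collect_eq)
  qed
  thus ?thesis unfolding mo_def by simp
qed

lemma upd_same: "upd v i x $ i = x" unfolding upd_def by simp

lemma vmax_ge: "v $ j \<le> vmax v"
  unfolding vmax_def by (rule Max_ge) auto

lemma vmax_att: "\<exists>j. v $ j = vmax (v::real^'n::finite)"
proof -
  have "vmax v \<in> range (\<lambda>j. v $ j)" unfolding vmax_def by (rule Max_in) auto
  thus ?thesis by auto
qed

lemma vmax_cube: "v \<in> cube \<Longrightarrow> 0 \<le> vmax v \<and> vmax v \<le> 1"
proof -
  assume c: "v \<in> cube"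
  obtain j where j: "v $ j = vmax v" using vmax_att by blast
  have "v $ j \<in> {0..1}" using c unfolding cube_def by blast
  thus ?thesis using j by simp
qed

lemma nmax_ge1: "nmax (v::real^'n::finite) \<ge> 1"
proof -
  obtain j where "v $ j = vmax v" using vmax_att by blast
  hence "{i. v $ i = vmax v} \<noteq> {}" by auto
  thus ?thesis unfolding nmax_def by (simp add: Suc_leI card_gt_0_iff)
qed

lemma B1:
  assumes N: "CARD('n::finite) \<ge> 2" and gt: "v $ i > mo v (i::'n)"
  shows "vmax v = v $ i" "nmax v = 1" "vsec v = mo v i"
proof -
  have lt: "j \<noteq> i \<Longrightarrow> v $ j < v $ i" for j using mo_ge[OF N, of j i v] gt by linarith
  have le: "v $ j \<le> v $ i" for j using lt by (cases "j = i") (auto intro: less_imp_le)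
  show vm: "vmax v = v $ i" unfolding vmax_def
    by (rule Max_eqI) (auto simp: le)
  have "{j. v $ j = vmax v} = {i}" using vm lt by fastforce
  thus nm: "nmax v = 1" unfolding nmax_def by simp
  have "{v $ j | j. v $ j < vmax v} = {v $ j | j. j \<noteq> i}" proof -
    have iff: "\<And>j. v $ j < v $ i \<longleftrightarrow> j \<noteq> i" using lt by auto
    show ?thesis by (simp add: vm iff)
  qed
  thus "vsec v = mo v i" unfolding vsec_def mo_def using nm by simp
qed

lemma B2:
  assumes N: "CARD('n::finite) \<ge> 2" and eq: "v $ i = mo v (i::'n)"
  shows "vmax v = v $ i" "nmax v \<ge> 2"
proof -
  have le: "v $ j \<le> v $ i" for j using mo_ge[OF N, of j i v] eq by (cases "j = i") auto
  show vm: "vmax v = v $ i" unfolding vmax_def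
    by (rule Max_eqI) (auto simp: le)
  obtain j where j: "j \<noteq> i" "v $ j = mo v i" using mo_att[OF N] by blast
  have "{i, j} \<subseteq> {k. v $ k = vmax v}" using j vm eq by auto
  hence "card {i, j} \<le> nmax v" unfolding nmax_def by (intro card_mono) auto
  thus "nmax v \<ge> 2" using j by simp
qed

lemma B3:
  assumes N: "CARD('n::finite) \<ge> 2" and lt: "v $ i < mo v (i::'n)"
  shows "v $ i < vmax v"
proof -
  obtain j where j: "j \<noteq> i" "v $ j = mo v i" using mo_att[OF N] by blast
  thus ?thesis using vmax_ge[of v j] lt by linarith
qed

lemma expo_eq: "CARD('n::finite) \<ge> 2 \<Longrightarrow> expo TYPE('n) = 1 + 1 / (real CARD('n) - 1)"
proof -
  assume "CARD('n) \<ge> 2"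
  hence h: "real CARD('n) - 1 > 0" by simp
  show ?thesis unfolding expo_def using h by (simp add: field_simps)
qed

lemma qt_gt:
  assumes N: "CARD('n::finite) \<ge> 2" and gt: "v $ i > mo v (i::'n)"
  shows "qstar v $ i = (v $ i) powr (1 / (real CARD('n) - 1))"
        "tstar v $ i = 1 / real CARD('n) * (v $ i) powr expo TYPE('n)
                 + (real CARD('n) - 1) / real CARD('n) * (mo v i) powr expo TYPE('n)"
  unfolding qstar_def tstar_def using B1[OF N gt] by simp_all

lemma qt_eq:
  assumes N: "CARD('n::finite) \<ge> 2" and eq: "v $ i = mo v (i::'n)"
  shows "\<exists>K::nat. K \<ge> 2 \<and> qstar v $ i = (mo v i) powr (1 / (real CARD('n) - 1)) / K
        \<and> tstar v $ i = 1 / K * (mo v i) powr expo TYPE('n)"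
proof -
  have "nmax v \<noteq> 1" using B2(2)[OF N eq] by simp
  thus ?thesis
    unfolding qstar_def tstar_def using B2[OF N eq] eq by (intro exI[of _ "nmax v"]) simp
qed

lemma qt_lt:
  assumes N: "CARD('n::finite) \<ge> 2" and lt: "v $ i < mo v (i::'n)"
  shows "qstar v $ i = 0" "tstar v $ i = 0"
  using B3[OF N lt] unfolding qstar_def tstar_def by auto

lemma powr_mul_self: "(y::real) \<ge> 0 \<Longrightarrow> y * y powr r = y powr (1 + r)"
  by (cases "y = 0") (auto simp: powr_add)

lemma young_e:
  assumes N: "CARD('n::finite) \<ge> 2" and y: "y \<ge> 0" and x: "x \<ge> 0"
  shows "y * x powr (1 / (real CARD('n) - 1)) - x powr expo TYPE('n) / real CARD('n)
         \<le> y powr expo TYPE('n) * (real CARD('n) - 1) / real CARD('n)"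
proof -
  define n where "n = real CARD('n)"
  have n2: "n \<ge> 2" using N unfolding n_def by simp
  have e: "expo TYPE('n) = n / (n - 1)" unfolding expo_def n_def by simp
  have "y * x powr (1/(n-1)) \<le> y powr (n/(n-1)) / (n/(n-1)) + (x powr (1/(n-1))) powr n / n"
    by (rule Youngs_inequality) (use n2 y x in \<open>auto simp: field_simps\<close>)
  also have "(x powr (1/(n-1))) powr n = x powr (n/(n-1))" using x by (simp add: powr_powr)
  finally have *: "y * x powr (1/(n-1)) \<le> y powr (n/(n-1)) / (n/(n-1)) + x powr (n/(n-1)) / n" .
  have "y powr (n/(n-1)) / (n/(n-1)) = y powr (n/(n-1)) * (n-1) / n" using n2 by simp
  thus ?thesis using * unfolding e n_def[symmetric] by linarith

qed


lemma mo_nonneg: "CARD('n::finite) \<ge> 2 \<Longrightarrow> v \<in> cube \<Longrightarrow> 0 \<le> mo v (i::'n) \<and> mo v i \<le> 1"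
proof -
  assume N: "CARD('n) \<ge> 2" and c: "v \<in> cube"
  obtain j where j: "j \<noteq> i" "v $ j = mo v i" using mo_att[OF N] by blast
  have "v $ j \<in> {0..1}" using c unfolding cube_def by blast
  thus ?thesis using j by simp
qed

lemma upd_cube: "v \<in> cube \<Longrightarrow> x \<in> {0..1} \<Longrightarrow> upd v i x \<in> cube"
  unfolding cube_def upd_def by auto

lemma util_bound:
  assumes N: "CARD('n::finite) \<ge> 2" and y: "0 \<le> y" and m: "0 \<le> mo w (i::'n)" and x: "0 \<le> w $ i"
  shows "y * qstar w $ i - tstar w $ i \<le>
    (if y > mo w i then (real CARD('n) - 1) / real CARD('n) * (y powr expo TYPE('n) - mo w i powr expo TYPE('n)) else 0)"
proof -
  define n where "n = real CARD('n)"
  define e where "e = expo TYPE('n)"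
  define r where "r = 1 / (n - 1)"
  define m where "m = mo w i"
  have n2: "n \<ge> 2" using N unfolding n_def by simp
  have e1: "e = 1 + r" unfolding e_def r_def n_def using expo_eq[OF N] by simp
  have e0: "e \<ge> 0" using e1 n2 unfolding r_def by simp
  have B0: "(if y > m then (n - 1) / n * (y powr e - m powr e) else 0) \<ge> 0"
  proof -
    have "y > m \<Longrightarrow> y powr e \<ge> m powr e" using m e0 unfolding m_def by (intro powr_mono2) auto
    thus ?thesis using n2 by auto
  qed
  have Y: "\<And>x. 0 \<le> x \<Longrightarrow> y * x powr r - x powr e / n \<le> y powr e * (n - 1) / n"
    using young_e[OF N y] unfolding n_def e_def r_def by blast
  consider (gt) "w $ i > m" | (eq) "w $ i = m" | (lt) "w $ i < m" by linarith
  thus ?thesis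
  proof cases
    case gt
    have q: "qstar w $ i = (w $ i) powr r" "tstar w $ i = 1/n * (w $ i) powr e + (n-1)/n * m powr e"
      using qt_gt[OF N gt[unfolded m_def]] unfolding n_def e_def r_def m_def by simp_all
    have "y * qstar w $ i - tstar w $ i = (y * (w $ i) powr r - (w $ i) powr e / n) - (n-1)/n * m powr e"
      unfolding q by simp
    also have "\<dots> \<le> y powr e * (n - 1) / n - (n-1)/n * m powr e" using Y[OF x] by linarith
    also have "\<dots> = (n - 1) / n * (y powr e - m powr e)" by (simp add: algebra_simps)
    finally have *: "y * qstar w $ i - tstar w $ i \<le> (n - 1) / n * (y powr e - m powr e)" .
    show ?thesis
    proof (cases "y > m")
      case True thus ?thesis using * unfolding n_def e_def m_def by simp
    next
      case False
      hence "y powr e \<le> m powr e" using y e0 by (intro powr_mono2) auto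
      hence "(n - 1) / n * (y powr e - m powr e) \<le> 0" using n2 by (intro mult_nonneg_nonpos) auto
      thus ?thesis using * False unfolding n_def e_def m_def by simp
    qed
  next
    case eq
    have eq': "w $ i = mo w i" using eq unfolding m_def .
    obtain K :: nat where K0: "real K \<ge> 2" "qstar w $ i = mo w i powr (1 / (real CARD('n) - 1)) / K"
       "tstar w $ i = 1 / K * mo w i powr expo TYPE('n)"
      using qt_eq[OF N eq'] by blast
    have K: "real K \<ge> 2" "qstar w $ i = m powr r / K" "tstar w $ i = 1 / K * m powr e"
      using K0 unfolding m_def r_def n_def e_def by simp_all

    have Kp: "real K \<ge> 1" using K by simp
    have "y * qstar w $ i - tstar w $ i = (y * m powr r - m powr e) / K"
      unfolding K(2,3) by (simp add: diff_divide_distrib)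
    also have "\<dots> \<le> (if y > m then (n - 1) / n * (y powr e - m powr e) else 0)"
    proof (cases "y > m")
      case True
      have "y * m powr r - m powr e = (y * m powr r - m powr e / n) - (n-1)/n * m powr e"
        using n2 by (simp add: field_simps)
      also have "\<dots> \<le> y powr e * (n - 1) / n - (n-1)/n * m powr e" using Y[OF m[folded m_def]] by linarith
      also have "\<dots> = (n - 1) / n * (y powr e - m powr e)" by (simp add: algebra_simps)
      finally have z: "y * m powr r - m powr e \<le> (n - 1) / n * (y powr e - m powr e)" .
      have "(y * m powr r - m powr e) / K \<le> (n - 1) / n * (y powr e - m powr e)"
      proof (cases "y * m powr r - m powr e \<ge> 0")
        case True
        hence "(y * m powr r - m powr e) / K \<le> (y * m powr r - m powr e) / 1" using Kp
          by (intro divide_left_mono) auto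
        hence "(y * m powr r - m powr e) / K \<le> y * m powr r - m powr e" by simp

        thus ?thesis using z by linarith
      next
        case False
        hence "(y * m powr r - m powr e) / K \<le> 0" using Kp by (simp add: divide_le_0_iff)
        thus ?thesis using B0 True by simp
      qed
      thus ?thesis using True by simp
    next
      case False
      have "y * m powr r \<le> m * m powr r" using False m_def m
        by (intro mult_right_mono) auto
      also have "\<dots> = m powr e" unfolding e1 using powr_mul_self m unfolding m_def by blast
      finally have "(y * m powr r - m powr e) / K \<le> 0" using Kp by (simp add: divide_le_0_iff)
      thus ?thesis using False by simp
    qed
    finally show ?thesis unfolding n_def e_def m_def .
  next
    case lt
    have "qstar w $ i = 0" "tstar w $ i = 0" using qt_lt[OF N lt[unfolded m_def]] by simp_all
    thus ?thesis using B0 unfolding n_def e_def m_def by simp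
  qed
qed

lemma util_true:
  assumes N: "CARD('n::finite) \<ge> 2" and m: "0 \<le> mo v (i::'n)" and x: "0 \<le> v $ i"
  shows "v $ i * qstar v $ i - tstar v $ i =
    (if v $ i > mo v i then (real CARD('n) - 1) / real CARD('n) * ((v $ i) powr expo TYPE('n) - mo v i powr expo TYPE('n)) else 0)"
proof -
  define n where "n = real CARD('n)"
  define e where "e = expo TYPE('n)"
  define r where "r = 1 / (n - 1)"
  define m where "m = mo v i"
  define y where "y = v $ i"
  have n2: "n \<ge> 2" using N unfolding n_def by simp
  have e1: "e = 1 + r" unfolding e_def r_def n_def using expo_eq[OF N] by simp
  have yy: "y * y powr r = y powr e" unfolding e1 using powr_mul_self x unfolding y_def by blast
  consider (gt) "y > m" | (eq) "y = m" | (lt) "y < m" by linarith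
  thus ?thesis
  proof cases
    case gt
    have q: "qstar v $ i = y powr r" "tstar v $ i = 1/n * y powr e + (n-1)/n * m powr e"
      using qt_gt[OF N gt[unfolded m_def y_def]] unfolding n_def e_def r_def m_def y_def by simp_all
    have "y * qstar v $ i - tstar v $ i = y * y powr r - (1/n * y powr e + (n-1)/n * m powr e)"
      unfolding q by simp
    also have "\<dots> = y powr e - (1/n * y powr e + (n-1)/n * m powr e)" unfolding yy ..
    also have "\<dots> = (n - 1) / n * (y powr e - m powr e)"
      using n2 by (simp add: divide_simps) (simp add: algebra_simps)
    finally have "y * qstar v $ i - tstar v $ i = (n - 1) / n * (y powr e - m powr e)" .
    thus ?thesis using gt unfolding n_def e_def m_def y_def by simp
  next
    case eq
    have eq': "v $ i = mo v i" using eq unfolding m_def y_def .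
    obtain K :: nat where K0: "qstar v $ i = mo v i powr (1 / (real CARD('n) - 1)) / K"
       "tstar v $ i = 1 / K * mo v i powr expo TYPE('n)"
      using qt_eq[OF N eq'] by blast
    have K: "qstar v $ i = m powr r / K" "tstar v $ i = 1 / K * m powr e"
      using K0 unfolding m_def r_def n_def e_def by simp_all
    have "y * qstar v $ i - tstar v $ i = y * (m powr r / K) - 1 / K * m powr e"
      unfolding K by simp
    also have "\<dots> = (y * y powr r - y powr e) / K"
      unfolding eq by (simp add: diff_divide_distrib)
    also have "\<dots> = 0" using yy by simp
    finally have "y * qstar v $ i - tstar v $ i = 0" .
    moreover have "\<not> v $ i > mo v i" using eq unfolding y_def m_def by simp
    ultimately show ?thesis unfolding y_def by simp

  next
    case lt
    have "qstar v $ i = 0" "tstar v $ i = 0" using qt_lt[OF N lt[unfolded m_def y_def]] by simp_all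
    thus ?thesis using lt unfolding n_def e_def m_def y_def by simp
  qed
qed

lemma util_true_nonneg:
  assumes N: "CARD('n::finite) \<ge> 2" and c: "v \<in> cube"
  shows "v $ (i::'n) * qstar v $ i - tstar v $ i \<ge> 0"
proof -
  have m: "0 \<le> mo v i" using mo_nonneg[OF N c] by simp
  have x: "0 \<le> v $ i" using c unfolding cube_def by auto
  have e0: "expo TYPE('n) \<ge> 0" using expo_eq[OF N] N by simp
  have "v $ i > mo v i \<Longrightarrow> (v $ i) powr expo TYPE('n) \<ge> mo v i powr expo TYPE('n)"
    using m e0 by (intro powr_mono2) auto
  thus ?thesis unfolding util_true[OF N m x] using N by auto
qed

lemma qstar_props:
  assumes c: "(v::real^'n::finite) \<in> cube"
  shows "0 \<le> qstar v $ i \<and> qstar v $ i \<le> 1" "(\<Sum>i\<in>UNIV. qstar v $ i) \<le> 1"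
proof -
  have vm: "0 \<le> vmax v" "vmax v \<le> 1" using vmax_cube[OF c] by auto
  have p: "0 \<le> vmax v powr (1 / (real CARD('n) - 1))" "vmax v powr (1 / (real CARD('n) - 1)) \<le> 1"
  proof -
    have "CARD('n) \<ge> 1" using card_gt_0_iff[of "UNIV::'n set"] by (simp add: Suc_le_eq)

    hence "1 / (real CARD('n) - 1) \<ge> 0" by simp

    thus "0 \<le> vmax v powr (1 / (real CARD('n) - 1))" "vmax v powr (1 / (real CARD('n) - 1)) \<le> 1"
      using vm by (auto intro: powr_le1)
  qed
  have k: "real (nmax v) \<ge> 1" using nmax_ge1[of v] by simp
  have "vmax v powr (1 / (real CARD('n) - 1)) / real (nmax v) \<le> 1"
    using p k by (simp add: divide_le_eq)
  thus "0 \<le> qstar v $ i \<and> qstar v $ i \<le> 1" unfolding qstar_def using p k by simp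
  have "(\<Sum>i\<in>UNIV. qstar v $ i) = (\<Sum>i\<in>{i. v $ i = vmax v}. vmax v powr (1 / (real CARD('n) - 1)) / real (nmax v))"
  proof -
    have "(\<Sum>i\<in>UNIV. qstar v $ i) = (\<Sum>i\<in>UNIV. if v $ i = vmax v then vmax v powr (1 / (real CARD('n) - 1)) / real (nmax v) else 0)"
      unfolding qstar_def by simp
    also have "\<dots> = (\<Sum>i\<in>{i \<in> UNIV. v $ i = vmax v}. vmax v powr (1 / (real CARD('n) - 1)) / real (nmax v))"
      by (rule sum.inter_filter[symmetric]) simp
    finally show ?thesis by simp
  qed
  also have "\<dots> = vmax v powr (1 / (real CARD('n) - 1))"
  proof -
    have kk: "real (card {i. v $ i = vmax v}) \<noteq> 0" using k unfolding nmax_def by linarith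
    show ?thesis using kk unfolding nmax_def by simp
  qed


  finally show "(\<Sum>i\<in>UNIV. qstar v $ i) \<le> 1" using p by simp
qed

lemma admissible_star:
  assumes N: "CARD('n::finite) \<ge> 2"
  shows "admissible (qstar :: real^'n \<Rightarrow> real^'n) tstar"
  unfolding admissible_def
proof (intro conjI)
  show "feasible (qstar :: real^'n \<Rightarrow> real^'n)" unfolding feasible_def using qstar_props by blast
  show "exclusive (qstar :: real^'n \<Rightarrow> real^'n)" unfolding exclusive_def qstar_def by auto
  show "EPIR (qstar :: real^'n \<Rightarrow> real^'n) tstar" unfolding EPIR_def using util_true_nonneg[OF N] by blast
  show "DSIC (qstar :: real^'n \<Rightarrow> real^'n) tstar" unfolding DSIC_def
  proof (intro ballI allI)
    fix v :: "real^'n" and i and x :: real assume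
 c: "v \<in> cube" and x: "x \<in> {0..1}"
    have m: "0 \<le> mo v i" using mo_nonneg[OF N c] by simp
    have y: "0 \<le> v $ i" using c unfolding cube_def by auto
    have "v $ i * qstar (upd v i x) $ i - tstar (upd v i x) $ i \<le>
      (if v $ i > mo (upd v i x) i then (real CARD('n) - 1) / real CARD('n) * ((v $ i) powr expo TYPE('n) - mo (upd v i x) i powr expo TYPE('n)) else 0)"
      by (rule util_bound[OF N y]) (use m x in \<open>simp_all add: mo_upd upd_same\<close>)
    also have "\<dots> = v $ i * qstar v $ i - tstar v $ i"
      unfolding util_true[OF N m y] mo_upd by simp
    finally show "v $ i * qstar v $ i - tstar v $ i \<ge> v $ i * qstar (upd v i x) $ i - tstar (upd v i x) $ i" .
  qed
qed


lemma mok: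
  assumes "marginal_ok F f"
  shows mok_prob: "prob_space F" and mok_sets: "sets F = sets borel"
    and mok_01: "emeasure F {0..1} = 1"
    and mok_meas: "f \<in> borel_measurable borel"
    and mok_nonneg: "\<And>x. x \<in> {0<..<1} \<Longrightarrow> 0 \<le> f x"
    and mok_dens: "\<And>A. A \<in> sets borel \<Longrightarrow> A \<subseteq> {0<..<1} \<Longrightarrow> emeasure F A = (\<integral>\<^sup>+x\<in>A. ennreal (f x) \<partial>lborel)"
  using assms unfolding marginal_ok_def by auto

lemma f_nn_le1:
  assumes F: "marginal_ok F f"
  shows "(\<integral>\<^sup>+x. ennreal (f x) * indicator {0<..<1} x \<partial>lborel) \<le> 1"
proof -
  have "(\<integral>\<^sup>+x. ennreal (f x) * indicator {0<..<1} x \<partial>lborel) = emeasure F {0<..<1}"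
    using mok_dens[OF F, of "{0<..<1}"] by simp
  also have "\<dots> \<le> 1" using prob_space.emeasure_le_1[OF mok_prob[OF F]] by simp
  finally show ?thesis .
qed

lemma f_int:
  assumes F: "marginal_ok F f"
  shows "integrable lborel (\<lambda>x. indicator {0<..<1} x * f x)"
proof (rule integrableI_nonneg)
  show "(\<lambda>x. indicator {0<..<1} x * f x) \<in> borel_measurable lborel" using mok_meas[OF F] by simp
  show "AE x in lborel. 0 \<le> indicator {0<..<1} x * f x"
    using mok_nonneg[OF F] by (intro AE_I2) (auto split: split_indicator)
  have "(\<integral>\<^sup>+x. ennreal (indicator {0<..<1} x * f x) \<partial>lborel) = (\<integral>\<^sup>+x. ennreal (f x) * indicator {0<..<1} x \<partial>lborel)"
    by (intro nn_integral_cong) (auto split: split_indicator)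
  also have "\<dots> < \<infinity>" using f_nn_le1[OF F] by (simp add: le_less_trans)
  finally show "(\<integral>\<^sup>+x. ennreal (indicator {0<..<1} x * f x) \<partial>lborel) < \<infinity>" .
qed

lemma J_int:
  assumes F: "marginal_ok F f" and x: "x \<le> 1" and e: "0 \<le> e"
  shows "integrable lborel (\<lambda>s. indicator {0<..<x} s * (s powr e * f s))"
proof (rule Bochner_Integration.integrable_bound[OF f_int[OF F]])
  show "(\<lambda>s. indicator {0<..<x} s * (s powr e * f s)) \<in> borel_measurable lborel"
    using mok_meas[OF F] by simp
  show "AE s in lborel. norm (indicator {0<..<x} s * (s powr e * f s)) \<le> norm (indicator {0<..<1} s * f s)"
  proof (intro AE_I2)
    fix s :: real
    show "norm (indicator {0<..<x} s * (s powr e * f s)) \<le> norm (indicator {0<..<1} s * f s)"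
    proof (cases "s \<in> {0<..<x}")
      case True
      hence s: "s \<in> {0<..<1}" using x by auto
      have "s powr e \<le> 1" using s e by (intro powr_le1) auto
      moreover have "0 \<le> s powr e" by simp
      moreover have "0 \<le> f s" using mok_nonneg[OF F s] .
      ultimately have "s powr e * f s \<le> f s" by (simp add: mult_left_le_one_le)
      thus ?thesis using True s \<open>0 \<le> f s\<close> by simp
    qed simp
  qed
qed

lemma J_eq: "J n f x = (\<integral>s. indicator {0<..<x} s * (s powr expo n * f s) \<partial>lborel)"
  unfolding J_def set_lebesgue_integral_def by simp

lemma J_nonneg:
  assumes F: "marginal_ok F f" and x: "x \<le> 1"
  shows "0 \<le> J n f x"
  unfolding J_eq using mok_nonneg[OF F] x
  by (intro integral_nonneg_AE AE_I2) (auto split: split_indicator)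

lemma J_enn:
  assumes F: "marginal_ok F f" and x: "x \<le> 1" and e: "0 \<le> expo n"
  shows "ennreal (J n f x) = (\<integral>\<^sup>+s. ennreal (s powr expo n * f s) * indicator {0<..<x} s \<partial>lborel)"
proof -
  have "(\<integral>\<^sup>+s. ennreal (s powr expo n * f s) * indicator {0<..<x} s \<partial>lborel)
      = (\<integral>\<^sup>+s. ennreal (indicator {0<..<x} s * (s powr expo n * f s)) \<partial>lborel)"
    by (intro nn_integral_cong) (auto split: split_indicator)
  also have "\<dots> = ennreal (J n f x)" unfolding J_eq
    using mok_nonneg[OF F] x
    by (intro nn_integral_eq_integral J_int[OF F x e] AE_I2) (auto split: split_indicator)
  finally show ?thesis by simp
qed

lemma J_meas:
  assumes F: "marginal_ok F f"
  shows "J n f \<in> borel_measurable borel"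
proof -
  have fm[measurable]: "f \<in> borel_measurable borel" using mok_meas[OF F] .
  have "(\<lambda>x. \<integral>s. indicator {0<..<x} s * (s powr expo n * f s) \<partial>lborel) \<in> borel_measurable borel"
  proof (rule lborel.borel_measurable_lebesgue_integral)
    have "(\<lambda>(x, s). indicator {0<..<x} s * (s powr expo n * f s)) =
          (\<lambda>p::real\<times>real. (if 0 < snd p \<and> snd p < fst p then 1 else 0) * (snd p powr expo n * f (snd p)))"
      by (auto simp: fun_eq_iff split: split_indicator)
    also have "\<dots> \<in> borel_measurable (borel \<Otimes>\<^sub>M lborel)" by measurable
    finally show "(\<lambda>(x, s). indicator {0<..<x} s * (s powr expo n * f s)) \<in> borel_measurable (borel \<Otimes>\<^sub>M lborel)" .
  qed
  thus ?thesis unfolding J_eq[abs_def] .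
qed

lemma expo_gt1: "CARD('n::finite) \<ge> 2 \<Longrightarrow> expo TYPE('n) > 1"
  unfolding expo_def by (simp add: field_simps)

lemma regII_regI:
  assumes N: "CARD('n::finite) \<ge> 2" and F: "marginal_ok F f" and R: "regII TYPE('n) F f"
  shows "regI TYPE('n) F f"
proof -
  define e where "e = expo TYPE('n)"
  define n where "n = real CARD('n)"
  have n2: "n \<ge> 2" using N unfolding n_def by simp
  have e1: "e > 1" using expo_gt1[OF N] unfolding e_def .
  have en: "e - 1 = 1 / (n - 1)" unfolding e_def expo_def n_def[symmetric] using n2 by (simp add: field_simps)
  have mono: "mono_on {0<..<1} (\<lambda>x. x\<^sup>2 * f x)" using R unfolding regII_def by simp
  have pt: "f x \<ge> x powr (-1 - e) / (n - 1) * J TYPE('n) f x" if x: "x \<in> {0<..<1}" for x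
  proof -
    have fx: "0 \<le> f x" using mok_nonneg[OF F x] .
    define C where "C = x\<^sup>2 * f x"
    have C0: "0 \<le> C" unfolding C_def using fx by simp
    have hi: "((\<lambda>s. C * s powr (e - 2)) has_integral (C * (x powr (e - 2 + 1) / (e - 2 + 1)))) {0..x}"
      by (intro has_integral_mult_right has_integral_powr_from_0) (use e1 x in auto)
    have "ennreal (J TYPE('n) f x) = (\<integral>\<^sup>+s. ennreal (s powr e * f s) * indicator {0<..<x} s \<partial>lborel)"
      unfolding e_def using x e1 by (intro J_enn[OF F]) (auto simp: e_def)
    also have "\<dots> \<le> (\<integral>\<^sup>+s. ennreal (C * s powr (e - 2)) * indicator {0..x} s \<partial>lborel)"
    proof (intro nn_integral_mono)
      fix s :: real
      show "ennreal (s powr e * f s) * indicator {0<..<x} s \<le> ennreal (C * s powr (e - 2)) * indicator {0..x} s"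
      proof (cases "s \<in> {0<..<x}")
        case True
        hence s: "0 < s" "s < x" by auto
        have "s\<^sup>2 * f s \<le> C" unfolding C_def using mono x s unfolding mono_on_def by auto
        hence "s powr (e - 2) * (s\<^sup>2 * f s) \<le> s powr (e - 2) * C" by (intro mult_left_mono) auto
        moreover have "s powr (e - 2) * s\<^sup>2 = s powr e"
          using s by (simp add: powr_add[symmetric] flip: powr_numeral)
        ultimately have "s powr e * f s \<le> C * s powr (e - 2)" by (simp add: algebra_simps)
        thus ?thesis using True s by (auto intro: ennreal_leI)
      qed simp
    qed
    also have "\<dots> = ennreal (C * (x powr (e - 1) / (e - 1)))"
      using nn_integral_has_integral_lebesgue'[OF _ hi] C0 by simp
    finally have Jle: "J TYPE('n) f x \<le> C * (x powr (e - 1) / (e - 1))"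
      using C0 e1 x by (subst (asm) ennreal_le_iff) auto
    have "x powr (-1 - e) / (n - 1) * J TYPE('n) f x \<le> x powr (-1 - e) / (n - 1) * (C * (x powr (e - 1) / (e - 1)))"
      using Jle n2 by (intro mult_left_mono) auto
    also have "\<dots> = x powr (-1 - e) * x\<^sup>2 * x powr (e - 1) * f x" unfolding C_def en using n2 by (simp add: field_simps)
    also have "x powr (-1 - e) * x\<^sup>2 * x powr (e - 1) = 1"
      using x by (simp add: powr_add[symmetric] flip: powr_numeral)
    finally show ?thesis by simp
  qed
  show ?thesis using pt R unfolding regI_def regII_def e_def n_def by auto
qed


lemma vmax_meas[measurable]: "vmax \<in> borel_measurable (borel :: (real^'n::finite) measure)"
  unfolding vmax_def by measurable

lemma vsec_alt:
  assumes N: "CARD('n::finite) \<ge> 2"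
  shows "vsec (v::real^'n) = Max ((\<lambda>p. min (v $ fst p) (v $ snd p)) ` {p. fst p \<noteq> snd p})"
proof -
  define P where "P = {p::'n\<times>'n. fst p \<noteq> snd p}"
  obtain i0 :: 'n where "True" by simp
  obtain j0 where "j0 \<noteq> i0" using card_ge2[OF N] by blast
  hence Pne: "P \<noteq> {}" unfolding P_def by auto
  have Pfin: "finite P" by simp
  have allle: "min (v $ fst p) (v $ snd p) \<le> vmax v" for p using vmax_ge[of v] by (simp add: min.coboundedI1)
  consider "nmax v \<ge> 2" | "nmax v = 1" using nmax_ge1[of v] by linarith
  thus ?thesis
  proof cases
    case 1
    have c2: "card {i. v $ i = vmax v} \<ge> 2" using 1 unfolding nmax_def .
    then obtain i j where ij: "i \<noteq> j" "v $ i = vmax v" "v $ j = vmax v"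
    proof -
      assume r: "\<And>i j. i \<noteq> j \<Longrightarrow> v $ i = vmax v \<Longrightarrow> v $ j = vmax v \<Longrightarrow> thesis"
      obtain i where i: "v $ i = vmax v" using vmax_att by blast
      have "{k. v $ k = vmax v} \<noteq> {i}" using c2 by auto
      then obtain j where "v $ j = vmax v" "j \<noteq> i" using i by blast
      thus thesis using r[of j i] i by auto
    qed
    have "Max ((\<lambda>p. min (v $ fst p) (v $ snd p)) ` P) = vmax v"
      by (rule Max_eqI) (use Pfin allle ij in \<open>auto simp: P_def intro!: image_eqI[of _ _ "(i,j)"]\<close>)
    moreover have "vsec v = vmax v" using 1 unfolding vsec_def by simp
    ultimately show ?thesis unfolding P_def by simp
  next
    case 2
    then obtain i where i: "{k. v $ k = vmax v} = {i}" unfolding nmax_def by (auto simp: card_1_singleton_iff)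
    have vi: "v $ i = vmax v" using i by auto
    have lt: "j \<noteq> i \<Longrightarrow> v $ j < vmax v" for j using i vmax_ge[of v j] by (auto simp: less_le)
    have gt: "v $ i > mo v i"
    proof -
      obtain j where j: "j \<noteq> i" "v $ j = mo v i" using mo_att[OF N] by blast
      thus ?thesis using lt[OF j(1)] vi by simp
    qed
    have vs: "vsec v = mo v i" using B1(3)[OF N gt] .
    obtain j where j: "j \<noteq> i" "v $ j = mo v i" using mo_att[OF N] by blast
    have "Max ((\<lambda>p. min (v $ fst p) (v $ snd p)) ` P) = mo v i"
    proof (rule Max_eqI)
      show "finite ((\<lambda>p. min (v $ fst p) (v $ snd p)) ` P)" by simp
      show "mo v i \<in> (\<lambda>p. min (v $ fst p) (v $ snd p)) ` P"
        using j gt unfolding P_def by (intro image_eqI[of _ _ "(i,j)"]) auto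
      fix y assume "y \<in> (\<lambda>p. min (v $ fst p) (v $ snd p)) ` P"
      then obtain a b where ab: "a \<noteq> b" "y = min (v $ a) (v $ b)" unfolding P_def by auto
      show "y \<le> mo v i"
      proof (cases "a = i")
        case True
        hence "b \<noteq> i" using ab by simp
        thus ?thesis using ab mo_ge[OF N, of b i v] by (simp add: min.coboundedI2)
      next
        case False
        thus ?thesis using ab mo_ge[OF N, of a i v] by (simp add: min.coboundedI1)
      qed
    qed
    thus ?thesis using vs unfolding P_def by simp
  qed
qed

lemma vsec_meas[measurable]:
  assumes N: "CARD('n::finite) \<ge> 2"
  shows "vsec \<in> borel_measurable (borel :: (real^'n) measure)"
proof -
  have "vsec = (\<lambda>v::real^'n. Max ((\<lambda>p. min (v $ fst p) (v $ snd p)) ` {p. fst p \<noteq> snd p}))"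
    using vsec_alt[OF N] by auto
  also have "\<dots> \<in> borel_measurable borel" by measurable
  finally show ?thesis .
qed

definition Rn :: "real^'n::finite \<Rightarrow> real" where
  "Rn v = (\<Sum>i\<in>UNIV. if v $ i = vmax v then 1 else 0)"

lemma Rn_eq: "Rn v = real (nmax v)"
proof -
  have "Rn v = (\<Sum>i\<in>{i \<in> UNIV. v $ i = vmax v}. 1)" unfolding Rn_def
    by (rule sum.inter_filter[symmetric]) simp
  thus ?thesis unfolding nmax_def by simp
qed

lemma Rn_meas[measurable]: "Rn \<in> borel_measurable (borel :: (real^'n::finite) measure)"
  unfolding Rn_def by measurable

lemma tstar_alt: "tstar (v::real^'n::finite) $ i = (if v $ i = vmax v
      then (if Rn v = 1
            then 1 / real CARD('n) * vmax v powr expo TYPE('n)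
                 + (real CARD('n) - 1) / real CARD('n) * vsec v powr expo TYPE('n)
            else 1 / Rn v * vmax v powr expo TYPE('n))
      else 0)"
  unfolding tstar_def Rn_eq by simp

lemma tstar_meas:
  assumes N: "CARD('n::finite) \<ge> 2"
  shows "(\<lambda>v::real^'n. \<Sum>i\<in>UNIV. tstar v $ i) \<in> borel_measurable borel"
proof -
  note vsec_meas[OF N, measurable]
  show ?thesis unfolding tstar_alt by measurable
qed

lemma emb_meas[measurable]: "(\<lambda>p::real\<times>real. emb i (fst p) (snd p)) \<in> borel_measurable borel"
proof -
  have "(\<lambda>p::real\<times>real. emb i (fst p) (snd p)) = (\<lambda>p. \<chi> j. if j = i then fst p else snd p)"
    unfolding emb_def by simp
  also have "\<dots> \<in> borel_measurable borel"
  proof (intro borel_measurable_continuous_onI continuous_on_vec_lambda)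
    fix j show "continuous_on UNIV (\<lambda>p::real\<times>real. if j = i then fst p else snd p)"
      by (cases "j = i") (auto intro: continuous_intros)
  qed
  finally show ?thesis .
qed

lemma emb1_meas[measurable]: "(\<lambda>b::real. emb i 1 b) \<in> borel_measurable borel"
proof -
  have "(\<lambda>b::real. emb i 1 b) = (\<lambda>b. \<chi> j. if j = i then 1 else b)"
    unfolding emb_def by simp
  also have "\<dots> \<in> borel_measurable borel"
  proof (intro borel_measurable_continuous_onI continuous_on_vec_lambda)
    fix j show "continuous_on UNIV (\<lambda>b::real. if j = i then 1 else b)"
      by (cases "j = i") (auto intro: continuous_intros)
  qed

  finally show ?thesis .
qed


lemma powr_has_integral:
  fixes s x p :: real
  assumes s: "0 < s" "s \<le> x" and p: "p \<noteq> -1"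
  shows "((\<lambda>b. b powr p) has_integral ((x powr (p + 1) - s powr (p + 1)) / (p + 1))) {s..x}"
proof -
  have "((\<lambda>b. b powr p) has_integral ((\<lambda>b. b powr (p + 1) / (p + 1)) x - (\<lambda>b. b powr (p + 1) / (p + 1)) s)) {s..x}"
  proof (rule fundamental_theorem_of_calculus)
    show "s \<le> x" using s by simp
    fix b assume b: "b \<in> {s..x}"
    hence b0: "0 < b" using s by auto
    have "((\<lambda>b. b powr (p + 1)) has_real_derivative ((p + 1) * b powr (p + 1 - 1))) (at b)"
      by (rule has_real_derivative_powr[OF b0])
    hence "((\<lambda>b. b powr (p + 1) / (p + 1)) has_real_derivative ((p + 1) * b powr (p + 1 - 1) / (p + 1))) (at b)"
      by (rule DERIV_cdivide)
    also have "(p + 1) * b powr (p + 1 - 1) / (p + 1) = b powr p" using p by simp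
    finally show "((\<lambda>b. b powr (p + 1) / (p + 1)) has_vector_derivative b powr p) (at b within {s..x})"
      by (simp add: has_real_derivative_iff_has_vector_derivative has_vector_derivative_at_within)
  qed
  thus ?thesis by (simp add: diff_divide_distrib)
qed

lemma powr_nn_integral:
  fixes s x p :: real
  assumes s: "0 < s" "s \<le> x" and p: "p \<noteq> -1"
  shows "(\<integral>\<^sup>+b. ennreal (b powr p) * indicator {s<..<x} b \<partial>lborel) = ennreal ((x powr (p + 1) - s powr (p + 1)) / (p + 1))"
    "(\<integral>\<^sup>+b. ennreal (b powr p) * indicator {s..<x} b \<partial>lborel) = ennreal ((x powr (p + 1) - s powr (p + 1)) / (p + 1))"
proof -
  have h: "((\<lambda>b. b powr p) has_integral ((x powr (p + 1) - s powr (p + 1)) / (p + 1))) {s<..<x}"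
    using powr_has_integral[OF s p] has_integral_open_interval[of "\<lambda>b. b powr p" _ s x] by simp
  show "(\<integral>\<^sup>+b. ennreal (b powr p) * indicator {s<..<x} b \<partial>lborel) = ennreal ((x powr (p + 1) - s powr (p + 1)) / (p + 1))"
    by (rule nn_integral_has_integral_lebesgue'[OF _ h]) simp
  have "(\<integral>\<^sup>+b. ennreal (b powr p) * indicator {s..<x} b \<partial>lborel) = (\<integral>\<^sup>+b. ennreal (b powr p) * indicator {s<..<x} b \<partial>lborel)"
  proof (rule nn_integral_cong_AE)
    have "AE b in lborel. b \<noteq> s" by (rule AE_lborel_singleton)
    thus "AE b in lborel. ennreal (b powr p) * indicator {s..<x} b = ennreal (b powr p) * indicator {s<..<x} b"
      by eventually_elim (auto split: split_indicator)
  qed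
  also have "\<dots> = ennreal ((x powr (p + 1) - s powr (p + 1)) / (p + 1))"
    by (rule nn_integral_has_integral_lebesgue'[OF _ h]) simp
  finally show "(\<integral>\<^sup>+b. ennreal (b powr p) * indicator {s..<x} b \<partial>lborel) = ennreal ((x powr (p + 1) - s powr (p + 1)) / (p + 1))" .
qed

lemma hdens_meas:
  assumes F: "marginal_ok F f"
  shows "hdens n f \<in> borel_measurable borel"
proof -
  note [measurable] = mok_meas[OF F] J_meas[OF F]
  show ?thesis unfolding hdens_def[abs_def] by measurable
qed

lemma hdens_nonneg:
  assumes N: "CARD('n::finite) \<ge> 2" and R: "regI TYPE('n) F f" and y: "y \<in> {0<..<1}"
  shows "0 \<le> hdens TYPE('n) f y"
proof -
  have "f y \<ge> y powr (-1 - expo TYPE('n)) / (real CARD('n) - 1) * J TYPE('n) f y"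
    using R y unfolding regI_def by auto
  hence "y * f y \<ge> y * (y powr (-1 - expo TYPE('n)) / (real CARD('n) - 1) * J TYPE('n) f y)"
    using y by (intro mult_left_mono) auto
  also have "y * (y powr (-1 - expo TYPE('n)) / (real CARD('n) - 1) * J TYPE('n) f y)
      = y powr (- expo TYPE('n)) / (real CARD('n) - 1) * J TYPE('n) f y"
  proof -
    have "y * y powr (-1 - expo TYPE('n)) = y powr (- expo TYPE('n))"
      using y by (simp add: powr_add[symmetric] powr_mult_base)
    thus ?thesis by (simp add: algebra_simps)
  qed
  finally show ?thesis unfolding hdens_def by simp
qed

lemma G_lemma:
  assumes N: "CARD('n::finite) \<ge> 2" and F: "marginal_ok F f" and R: "regI TYPE('n) F f"
    and x: "0 < x" "x \<le> 1"
  shows "(\<integral>\<^sup>+b. ennreal (hdens TYPE('n) f b) * indicator {0<..<x} b \<partial>lborel)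
         = ennreal (x powr (1 - expo TYPE('n)) * J TYPE('n) f x)"
proof -
  define e where "e = expo TYPE('n)"
  define N1 where "N1 = real CARD('n) - 1"
  define JJ where "JJ = J TYPE('n) f"
  define h where "h = hdens TYPE('n) f"
  have N1: "N1 \<ge> 1" using N unfolding N1_def by simp
  have e1: "e > 1" using expo_gt1[OF N] unfolding e_def .
  have eN: "e - 1 = 1 / N1" unfolding e_def expo_def N1_def using N by (simp add: field_simps)
  note fm[measurable] = mok_meas[OF F]
  note Jm[measurable] = J_meas[OF F, of "TYPE('n)", folded JJ_def]
  note hm[measurable] = hdens_meas[OF F, of "TYPE('n)", folded h_def]
  have Jn: "\<And>b. b \<le> 1 \<Longrightarrow> 0 \<le> JJ b" unfolding JJ_def using J_nonneg[OF F] by blast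
  have JE: "\<And>b. b \<le> 1 \<Longrightarrow> ennreal (JJ b) = (\<integral>\<^sup>+s. ennreal (s powr e * f s) * indicator {0<..<b} s \<partial>lborel)"
    unfolding JJ_def e_def using e1 by (intro J_enn[OF F]) (auto simp: e_def)
  have hn: "\<And>b. b \<in> {0<..<1} \<Longrightarrow> 0 \<le> h b" unfolding h_def using hdens_nonneg[OF N R] by blast
  have hdef: "\<And>b. h b = b * f b - b powr (- e) / N1 * JJ b"
    unfolding h_def hdens_def e_def N1_def JJ_def by simp
  define P where "P = (\<integral>\<^sup>+b. ennreal (b * f b) * indicator {0<..<x} b \<partial>lborel)"
  define Q where "Q = (\<integral>\<^sup>+b. ennreal (b powr (- e) / N1 * JJ b) * indicator {0<..<x} b \<partial>lborel)"
  define R0 where "R0 = ennreal (x powr (1 - e) * JJ x)"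
  have Pfin: "P < \<infinity>"
  proof -
    have "P \<le> (\<integral>\<^sup>+b. ennreal (f b) * indicator {0<..<1} b \<partial>lborel)"
      unfolding P_def
    proof (intro nn_integral_mono)
      fix b :: real
      show "ennreal (b * f b) * indicator {0<..<x} b \<le> ennreal (f b) * indicator {0<..<1} b"
      proof (cases "b \<in> {0<..<x}")
        case True
        hence b: "b \<in> {0<..<1}" using x by auto
        have "b * f b \<le> f b" using b mok_nonneg[OF F b] by (simp add: mult_left_le_one_le)
        thus ?thesis using True b by (auto intro: ennreal_leI)
      qed simp
    qed
    also have "\<dots> \<le> 1" by (rule f_nn_le1[OF F])
    finally show ?thesis by (simp add: le_less_trans)
  qed
  have step1: "P = (\<integral>\<^sup>+b. ennreal (h b) * indicator {0<..<x} b \<partial>lborel) + Q"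
  proof -
    have "P = (\<integral>\<^sup>+b. ennreal (h b) * indicator {0<..<x} b + ennreal (b powr (- e) / N1 * JJ b) * indicator {0<..<x} b \<partial>lborel)"
      unfolding P_def
    proof (intro nn_integral_cong)
      fix b :: real
      show "ennreal (b * f b) * indicator {0<..<x} b = ennreal (h b) * indicator {0<..<x} b + ennreal (b powr (- e) / N1 * JJ b) * indicator {0<..<x} b"
      proof (cases "b \<in> {0<..<x}")
        case True
        hence b: "b \<in> {0<..<1}" using x by auto
        have "0 \<le> b powr (- e) / N1 * JJ b" using Jn[of b] b N1 by auto
        moreover have "0 \<le> h b" using hn[OF b] .
        ultimately have "ennreal (h b) + ennreal (b powr (- e) / N1 * JJ b) = ennreal (b * f b)"
          by (simp add: ennreal_plus[symmetric] hdef del: ennreal_plus)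
        thus ?thesis using True by simp
      qed simp
    qed
    also have "\<dots> = (\<integral>\<^sup>+b. ennreal (h b) * indicator {0<..<x} b \<partial>lborel) + Q"
      unfolding Q_def by (rule nn_integral_add) auto
    finally show ?thesis .
  qed
  have inner: "(\<integral>\<^sup>+b. ennreal (b powr (- e)) * indicator {s<..<x} b \<partial>lborel) = ennreal ((s powr (1 - e) - x powr (1 - e)) * N1)"
    if s: "0 < s" "s < x" for s
  proof -
    have "(\<integral>\<^sup>+b. ennreal (b powr (- e)) * indicator {s<..<x} b \<partial>lborel) = ennreal ((x powr (- e + 1) - s powr (- e + 1)) / (- e + 1))"
      using s e1 by (intro powr_nn_integral(1)) auto
    also have "(x powr (- e + 1) - s powr (- e + 1)) / (- e + 1) = (s powr (1 - e) - x powr (1 - e)) * N1"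
    proof -
      have q: "- e + 1 = 1 - e" by simp
      have i0: "1 - e = - (1 / N1)" using eN by linarith
      have i: "1 / (1 - e) = - N1" unfolding i0 using N1 by simp

      have "(x powr (1 - e) - s powr (1 - e)) / (1 - e) = (x powr (1 - e) - s powr (1 - e)) * (1 / (1 - e))" by simp
      also have "\<dots> = (s powr (1 - e) - x powr (1 - e)) * N1" unfolding i by (simp add: algebra_simps)
      finally show ?thesis unfolding q .
    qed

    finally show ?thesis .
  qed
  have step2: "Q + R0 = P"
  proof -
    have "Q = (\<integral>\<^sup>+b. ennreal (1 / N1) * (ennreal (b powr (- e)) * indicator {0<..<x} b * ennreal (JJ b)) \<partial>lborel)"
      unfolding Q_def
    proof (intro nn_integral_cong)
      fix b :: real
      show "ennreal (b powr (- e) / N1 * JJ b) * indicator {0<..<x} b = ennreal (1 / N1) * (ennreal (b powr (- e)) * indicator {0<..<x} b * ennreal (JJ b))"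
      proof (cases "b \<in> {0<..<x}")
        case True
        hence "0 \<le> JJ b" using Jn x by auto
        thus ?thesis using True N1 by (simp add: ennreal_mult[symmetric] del: ennreal_mult)
      qed simp
    qed
    also have "\<dots> = ennreal (1 / N1) * (\<integral>\<^sup>+b. ennreal (b powr (- e)) * indicator {0<..<x} b * ennreal (JJ b) \<partial>lborel)"
      by (rule nn_integral_cmult) auto
    also have "(\<integral>\<^sup>+b. ennreal (b powr (- e)) * indicator {0<..<x} b * ennreal (JJ b) \<partial>lborel)
        = (\<integral>\<^sup>+b. \<integral>\<^sup>+s. ennreal (b powr (- e)) * indicator {0<..<x} b * (ennreal (s powr e * f s) * indicator {0<..<b} s) \<partial>lborel \<partial>lborel)"
    proof (intro nn_integral_cong)
      fix b :: real
      show "ennreal (b powr (- e)) * indicator {0<..<x} b * ennreal (JJ b) = (\<integral>\<^sup>+s. ennreal (b powr (- e)) * indicator {0<..<x} b * (ennreal (s powr e * f s) * indicator {0<..<b} s) \<partial>lborel)"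
      proof (cases "b \<in> {0<..<x}")
        case True
        hence "b \<le> 1" using x by auto
        thus ?thesis unfolding JE[OF \<open>b \<le> 1\<close>] by (subst nn_integral_cmult) auto
      qed simp
    qed
    also have "\<dots> = (\<integral>\<^sup>+s. \<integral>\<^sup>+b. ennreal (b powr (- e)) * indicator {0<..<x} b * (ennreal (s powr e * f s) * indicator {0<..<b} s) \<partial>lborel \<partial>lborel)"
    proof (rule lborel_pair.Fubini'[symmetric])
      have "(\<lambda>(b, s). ennreal (b powr (- e)) * indicator {0<..<x} b * (ennreal (s powr e * f s) * indicator {0<..<b} s))
          = (\<lambda>p::real\<times>real. ennreal (fst p powr (- e)) * indicator {0<..<x} (fst p) * (ennreal (snd p powr e * f (snd p)) * (if 0 < snd p \<and> snd p < fst p then 1 else 0)))"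
        by (auto simp: fun_eq_iff split: split_indicator)
      also have "\<dots> \<in> borel_measurable (lborel \<Otimes>\<^sub>M lborel)" by measurable
      finally show "(\<lambda>(b, s). ennreal (b powr (- e)) * indicator {0<..<x} b * (ennreal (s powr e * f s) * indicator {0<..<b} s)) \<in> borel_measurable (lborel \<Otimes>\<^sub>M lborel)" .
    qed
    also have "\<dots> = (\<integral>\<^sup>+s. ennreal (s powr e * f s) * indicator {0<..<x} s * ennreal ((s powr (1 - e) - x powr (1 - e)) * N1) \<partial>lborel)"
    proof (intro nn_integral_cong)
      fix s :: real
      show "(\<integral>\<^sup>+b. ennreal (b powr (- e)) * indicator {0<..<x} b * (ennreal (s powr e * f s) * indicator {0<..<b} s) \<partial>lborel)
          = ennreal (s powr e * f s) * indicator {0<..<x} s * ennreal ((s powr (1 - e) - x powr (1 - e)) * N1)"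
      proof (cases "s \<in> {0<..<x}")
        case True
        have "(\<integral>\<^sup>+b. ennreal (b powr (- e)) * indicator {0<..<x} b * (ennreal (s powr e * f s) * indicator {0<..<b} s) \<partial>lborel)
            = (\<integral>\<^sup>+b. ennreal (s powr e * f s) * (ennreal (b powr (- e)) * indicator {s<..<x} b) \<partial>lborel)"
          using True by (intro nn_integral_cong) (auto split: split_indicator simp: mult.commute)
        also have "\<dots> = ennreal (s powr e * f s) * (\<integral>\<^sup>+b. ennreal (b powr (- e)) * indicator {s<..<x} b \<partial>lborel)"
          by (rule nn_integral_cmult) auto
        also have "\<dots> = ennreal (s powr e * f s) * ennreal ((s powr (1 - e) - x powr (1 - e)) * N1)"
          using True by (subst inner) auto
        finally show ?thesis using True by simp
      next
        case False
        have "(\<integral>\<^sup>+b. ennreal (b powr (- e)) * indicator {0<..<x} b * (ennreal (s powr e * f s) * indicator {0<..<b} s) \<partial>lborel) = (\<integral>\<^sup>+(b::real). 0 \<partial>lborel)"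
          by (intro nn_integral_cong) (use False in \<open>auto split: split_indicator\<close>)

        thus ?thesis using False by simp
      qed
    qed
    finally have Qeq: "Q = ennreal (1 / N1) * (\<integral>\<^sup>+s. ennreal (s powr e * f s) * indicator {0<..<x} s * ennreal ((s powr (1 - e) - x powr (1 - e)) * N1) \<partial>lborel)" .
    also have "\<dots> = (\<integral>\<^sup>+s. ennreal (1 / N1) * (ennreal (s powr e * f s) * indicator {0<..<x} s * ennreal ((s powr (1 - e) - x powr (1 - e)) * N1)) \<partial>lborel)"
      by (rule nn_integral_cmult[symmetric]) auto
    finally have Q2: "Q = (\<integral>\<^sup>+s. ennreal (s powr e * f s * (s powr (1 - e) - x powr (1 - e))) * indicator {0<..<x} s \<partial>lborel)"
    proof -
      assume Q1: "Q = (\<integral>\<^sup>+s. ennreal (1 / N1) * (ennreal (s powr e * f s) * indicator {0<..<x} s * ennreal ((s powr (1 - e) - x powr (1 - e)) * N1)) \<partial>lborel)"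
      show ?thesis unfolding Q1
      proof (intro nn_integral_cong)
        fix s :: real
        show "ennreal (1 / N1) * (ennreal (s powr e * f s) * indicator {0<..<x} s * ennreal ((s powr (1 - e) - x powr (1 - e)) * N1))
            = ennreal (s powr e * f s * (s powr (1 - e) - x powr (1 - e))) * indicator {0<..<x} s"
        proof (cases "s \<in> {0<..<x}")
          case True
          hence s1: "s \<in> {0<..<1}" using x by auto
          have fs: "0 \<le> f s" using mok_nonneg[OF F s1] .
          have d: "0 \<le> s powr (1 - e) - x powr (1 - e)"
            using True e1 by (auto intro!: powr_mono2')
          have "ennreal (1 / N1) * (ennreal (s powr e * f s) * ennreal ((s powr (1 - e) - x powr (1 - e)) * N1))
              = ennreal (1 / N1 * ((s powr e * f s) * ((s powr (1 - e) - x powr (1 - e)) * N1)))"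
            using fs d N1 by (simp add: ennreal_mult[symmetric] del: ennreal_mult)
          also have "1 / N1 * ((s powr e * f s) * ((s powr (1 - e) - x powr (1 - e)) * N1)) = s powr e * f s * (s powr (1 - e) - x powr (1 - e))"
            using N1 by (simp add: field_simps)
          finally show ?thesis using True by simp
        qed simp
      qed
    qed
    have R2: "R0 = (\<integral>\<^sup>+s. ennreal (s powr e * f s * x powr (1 - e)) * indicator {0<..<x} s \<partial>lborel)"
    proof -
      have "R0 = ennreal (x powr (1 - e)) * ennreal (JJ x)" unfolding R0_def
        using Jn[OF x(2)] by (simp add: ennreal_mult)
      also have "\<dots> = ennreal (x powr (1 - e)) * (\<integral>\<^sup>+s. ennreal (s powr e * f s) * indicator {0<..<x} s \<partial>lborel)"
        using JE[OF x(2)] by simp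
      also have "\<dots> = (\<integral>\<^sup>+s. ennreal (x powr (1 - e)) * (ennreal (s powr e * f s) * indicator {0<..<x} s) \<partial>lborel)"
        by (rule nn_integral_cmult[symmetric]) auto
      also have "\<dots> = (\<integral>\<^sup>+s. ennreal (s powr e * f s * x powr (1 - e)) * indicator {0<..<x} s \<partial>lborel)"
      proof (intro nn_integral_cong)
        fix s :: real
        show "ennreal (x powr (1 - e)) * (ennreal (s powr e * f s) * indicator {0<..<x} s) = ennreal (s powr e * f s * x powr (1 - e)) * indicator {0<..<x} s"
        proof (cases "s \<in> {0<..<x}")
          case True
          hence s1: "s \<in> {0<..<1}" using x by auto
          have fs: "0 \<le> f s" using mok_nonneg[OF F s1] .
          thus ?thesis using True by (simp add: ennreal_mult[symmetric] mult.commute del: ennreal_mult)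
        qed simp
      qed
      finally show ?thesis .
    qed
    have "Q + R0 = (\<integral>\<^sup>+s. ennreal (s powr e * f s * (s powr (1 - e) - x powr (1 - e))) * indicator {0<..<x} s
                 + ennreal (s powr e * f s * x powr (1 - e)) * indicator {0<..<x} s \<partial>lborel)"
      unfolding Q2 R2 by (rule nn_integral_add[symmetric]) auto
    also have "\<dots> = P" unfolding P_def
    proof (intro nn_integral_cong)
      fix s :: real
      show "ennreal (s powr e * f s * (s powr (1 - e) - x powr (1 - e))) * indicator {0<..<x} s
                 + ennreal (s powr e * f s * x powr (1 - e)) * indicator {0<..<x} s = ennreal (s * f s) * indicator {0<..<x} s"
      proof (cases "s \<in> {0<..<x}")
        case True
        hence s1: "s \<in> {0<..<1}" using x by auto
        have fs: "0 \<le> f s" using mok_nonneg[OF F s1] .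
        have d: "0 \<le> s powr (1 - e) - x powr (1 - e)"
          using True e1 by (auto intro!: powr_mono2')
        have ss: "s powr e * s powr (1 - e) = s" using s1 by (simp add: powr_add[symmetric])
        have "ennreal (s powr e * f s * (s powr (1 - e) - x powr (1 - e))) + ennreal (s powr e * f s * x powr (1 - e))
            = ennreal (s powr e * f s * (s powr (1 - e) - x powr (1 - e)) + s powr e * f s * x powr (1 - e))"
          using fs d by (intro ennreal_plus[symmetric]) auto
        also have "s powr e * f s * (s powr (1 - e) - x powr (1 - e)) + s powr e * f s * x powr (1 - e) = s * f s"
          using ss by (simp add: algebra_simps)
        finally show ?thesis using True by simp
      qed simp
    qed
    finally show ?thesis .
  qed
  have "Q \<le> P" unfolding step2[symmetric] by simp
  hence "Q < \<infinity>" using Pfin by (rule le_less_trans)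
  hence Qfin: "Q \<noteq> \<infinity>" by simp

  have "Q + (\<integral>\<^sup>+b. ennreal (h b) * indicator {0<..<x} b \<partial>lborel) = Q + R0"
    using step1 step2 by (metis add.commute)
  hence "(\<integral>\<^sup>+b. ennreal (h b) * indicator {0<..<x} b \<partial>lborel) = R0"
    using Qfin ennreal_add_left_cancel by metis

  thus ?thesis unfolding h_def R0_def e_def JJ_def .
qed


lemma nn_integral_sum_measures:
  assumes fin: "finite K" and sets: "\<And>k. k \<in> K \<Longrightarrow> sets (\<nu> k) = sets L"
    and em: "\<And>A. A \<in> sets L \<Longrightarrow> emeasure L A = (\<Sum>k\<in>K. emeasure (\<nu> k) A)"
    and g: "g \<in> borel_measurable L"
  shows "(\<integral>\<^sup>+x. g x \<partial>L) = (\<Sum>k\<in>K. \<integral>\<^sup>+x. g x \<partial>\<nu> k)"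
  using g
proof (induction rule: borel_measurable_induct)
  case (cong f g)
  have "(\<integral>\<^sup>+x. f x \<partial>L) = (\<integral>\<^sup>+x. g x \<partial>L)" using cong(3) by (intro nn_integral_cong) auto
  also have "\<dots> = (\<Sum>k\<in>K. \<integral>\<^sup>+x. g x \<partial>\<nu> k)" using cong(4) .
  also have "\<dots> = (\<Sum>k\<in>K. \<integral>\<^sup>+x. f x \<partial>\<nu> k)"
  proof (intro sum.cong refl nn_integral_cong)
    fix k x assume k: "k \<in> K" and x: "x \<in> space (\<nu> k)"
    have "space (\<nu> k) = space L" using sets[OF k] by (rule sets_eq_imp_space_eq)
    thus "g x = f x" using cong(3) x by auto
  qed
  finally show ?case .
next
  case (set A)
  have "(\<integral>\<^sup>+x. indicator A x \<partial>L) = emeasure L A" using set by (rule nn_integral_indicator)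
  also have "\<dots> = (\<Sum>k\<in>K. emeasure (\<nu> k) A)" using em[OF set] .
  also have "\<dots> = (\<Sum>k\<in>K. \<integral>\<^sup>+x. indicator A x \<partial>\<nu> k)"
    using set sets by (intro sum.cong refl nn_integral_indicator[symmetric]) auto
  finally show ?case .
next
  case (mult u c)
  have um: "k \<in> K \<Longrightarrow> u \<in> borel_measurable (\<nu> k)" for k
    using mult(2) sets[of k] by (simp cong: measurable_cong_sets)
  have "(\<integral>\<^sup>+x. c * u x \<partial>L) = c * (\<integral>\<^sup>+x. u x \<partial>L)" using mult(2) by (rule nn_integral_cmult)
  also have "\<dots> = (\<Sum>k\<in>K. c * \<integral>\<^sup>+x. u x \<partial>\<nu> k)" using mult(4) by (simp add: sum_distrib_left)
  also have "\<dots> = (\<Sum>k\<in>K. \<integral>\<^sup>+x. c * u x \<partial>\<nu> k)"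
    using um by (intro sum.cong refl nn_integral_cmult[symmetric]) auto
  finally show ?case .
next
  case (add u v)
  have um: "k \<in> K \<Longrightarrow> u \<in> borel_measurable (\<nu> k)" "k \<in> K \<Longrightarrow> v \<in> borel_measurable (\<nu> k)" for k
    using \<open>u \<in> borel_measurable L\<close> \<open>v \<in> borel_measurable L\<close> sets[of k] by (simp_all cong: measurable_cong_sets)
  have "(\<integral>\<^sup>+x. v x + u x \<partial>L) = (\<integral>\<^sup>+x. v x \<partial>L) + (\<integral>\<^sup>+x. u x \<partial>L)"
    using \<open>u \<in> borel_measurable L\<close> \<open>v \<in> borel_measurable L\<close> by (intro nn_integral_add) auto
  also have "\<dots> = (\<Sum>k\<in>K. (\<integral>\<^sup>+x. v x \<partial>\<nu> k) + (\<integral>\<^sup>+x. u x \<partial>\<nu> k))"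
    using add.IH by (simp add: sum.distrib)
  also have "\<dots> = (\<Sum>k\<in>K. \<integral>\<^sup>+x. v x + u x \<partial>\<nu> k)"
    using um by (intro sum.cong refl nn_integral_add[symmetric]) auto
  finally show ?case .
next
  case (seq U)
  note Um = \<open>\<And>i. U i \<in> borel_measurable L\<close>
  note Uinc = \<open>incseq U\<close>
  have um: "k \<in> K \<Longrightarrow> U i \<in> borel_measurable (\<nu> k)" for k i
    using Um sets[of k] by (simp cong: measurable_cong_sets)
  have "(\<integral>\<^sup>+x. (\<Squnion> range U) x \<partial>L) = (\<integral>\<^sup>+x. (\<Squnion>i. U i x) \<partial>L)" by (simp add: image_comp)
  also have "\<dots> = (\<Squnion>i. \<integral>\<^sup>+x. U i x \<partial>L)" using Uinc Um by (rule nn_integral_monotone_convergence_SUP)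
  also have "\<dots> = (\<Squnion>i. \<Sum>k\<in>K. \<integral>\<^sup>+x. U i x \<partial>\<nu> k)" using seq.IH by simp
  also have "\<dots> = (\<Sum>k\<in>K. \<Squnion>i. \<integral>\<^sup>+x. U i x \<partial>\<nu> k)"
  proof (rule ennreal_SUP_sum)
    fix k assume "k \<in> K"
    show "incseq (\<lambda>i. \<integral>\<^sup>+x. U i x \<partial>\<nu> k)"
      using Uinc unfolding incseq_def le_fun_def by (auto intro!: nn_integral_mono)
  qed
  also have "\<dots> = (\<Sum>k\<in>K. \<integral>\<^sup>+x. (\<Squnion>i. U i x) \<partial>\<nu> k)"
    using Uinc um by (intro sum.cong refl nn_integral_monotone_convergence_SUP[symmetric]) auto

  also have "\<dots> = (\<Sum>k\<in>K. \<integral>\<^sup>+x. (\<Squnion> range U) x \<partial>\<nu> k)" by (simp add: image_comp)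
  finally show ?case .
qed

definition Sset :: "(real \<times> real) set" where
  "Sset = {(a, b). 0 < b \<and> b \<le> a \<and> a < 1}"

lemma Sset_meas[measurable]: "Sset \<in> sets borel"
proof -
  have "Sset = {p::real\<times>real. 0 < snd p \<and> snd p \<le> fst p \<and> fst p < 1}" unfolding Sset_def by auto
  also have "\<dots> \<in> sets (borel \<Otimes>\<^sub>M borel)"
  proof -
    have "Measurable.pred (borel \<Otimes>\<^sub>M borel) (\<lambda>p::real\<times>real. 0 < snd p \<and> snd p \<le> fst p \<and> fst p < 1)"
      by measurable
    thus ?thesis unfolding pred_def by (simp add: space_pair_measure)
  qed
  finally show ?thesis unfolding borel_prod .
qed

definition Wf :: "'n::finite itself \<Rightarrow> (real \<Rightarrow> real) \<Rightarrow> real \<times> real \<Rightarrow> real" where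
  "Wf n f p = 1 / ((real CARD('n) - 1) * (fst p)\<^sup>2) * hdens n f (snd p)"

definition cf :: "'n::finite itself \<Rightarrow> (real \<Rightarrow> real) \<Rightarrow> real \<Rightarrow> real" where
  "cf n f b = 1 / (real CARD('n) - 1) * hdens n f b"

definition mass1 :: "'n::finite itself \<Rightarrow> real measure \<Rightarrow> (real \<Rightarrow> real) \<Rightarrow> real" where
  "mass1 n F f = measure F {1} - 1 / (real CARD('n) - 1) * J n f 1"

definition nu :: "'n::finite itself \<Rightarrow> real measure \<Rightarrow> (real \<Rightarrow> real) \<Rightarrow> nat \<times> 'n \<Rightarrow> (real^'n) measure" where
  "nu n F f k = (if fst k = 0 then density (return borel 0) (\<lambda>_. ennreal (measure F {0}))
     else if fst k = 1 then distr (density lborel (\<lambda>p. ennreal (Wf n f p) * indicator Sset p)) borel (\<lambda>p. emb (snd k) (fst p) (snd p))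
     else if fst k = 2 then distr (density lborel (\<lambda>b. ennreal (cf n f b) * indicator {0<..<1} b)) borel (\<lambda>b. emb (snd k) 1 b)
     else density (return borel 1) (\<lambda>_. ennreal (mass1 n F f)))"

definition Kset :: "(nat \<times> 'n::finite) set" where
  "Kset = {(0, undefined)} \<union> ({1} \<times> UNIV) \<union> ({2} \<times> UNIV) \<union> {(3, undefined)}"

lemma Kset_fin: "finite (Kset :: (nat \<times> 'n::finite) set)" unfolding Kset_def by simp

lemma sum_Kset:
  "(\<Sum>k\<in>(Kset :: (nat \<times> 'n::finite) set). \<phi> k) = \<phi> (0, undefined) + (\<Sum>i\<in>UNIV. \<phi> (1, i)) + (\<Sum>i\<in>UNIV. \<phi> (2, i)) + \<phi> (3, undefined)"
proof -
  have d: "(({(0::nat, undefined::'n)} \<union> ({1} \<times> UNIV)) \<union> ({2} \<times> UNIV)) \<inter> {(3, undefined)} = {}"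
    "({(0::nat, undefined::'n)} \<union> ({1} \<times> UNIV)) \<inter> ({2} \<times> UNIV) = {}"
    "{(0::nat, undefined::'n)} \<inter> ({1} \<times> UNIV) = {}" by auto
  have s1: "(\<Sum>k\<in>{1::nat} \<times> (UNIV::'n set). \<phi> k) = (\<Sum>i\<in>UNIV. \<phi> (1, i))"
  proof -
    have "{1::nat} \<times> (UNIV::'n set) = (\<lambda>i. (1, i)) ` UNIV" by auto
    thus ?thesis by (simp add: sum.reindex inj_on_def)
  qed
  have s2: "(\<Sum>k\<in>{2::nat} \<times> (UNIV::'n set). \<phi> k) = (\<Sum>i\<in>UNIV. \<phi> (2, i))"
  proof -
    have "{2::nat} \<times> (UNIV::'n set) = (\<lambda>i. (2, i)) ` UNIV" by auto
    thus ?thesis by (simp add: sum.reindex inj_on_def)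
  qed
  have "sum \<phi> Kset = sum \<phi> ({(0::nat, undefined::'n)} \<union> ({1} \<times> UNIV) \<union> ({2} \<times> UNIV)) + sum \<phi> {(3, undefined)}"
    unfolding Kset_def by (rule sum.union_disjoint) (use d in auto)
  also have "sum \<phi> ({(0::nat, undefined::'n)} \<union> ({1} \<times> UNIV) \<union> ({2} \<times> UNIV)) = sum \<phi> ({(0::nat, undefined::'n)} \<union> ({1} \<times> UNIV)) + sum \<phi> ({2} \<times> UNIV)"
    by (rule sum.union_disjoint) (use d in auto)
  also have "sum \<phi> ({(0::nat, undefined::'n)} \<union> ({1} \<times> UNIV)) = sum \<phi> {(0::nat, undefined::'n)} + sum \<phi> ({1} \<times> UNIV)"
    by (rule sum.union_disjoint) (use d in auto)
  finally show ?thesis unfolding s1 s2 by simp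
qed

context
  fixes F :: "real measure" and f :: "real \<Rightarrow> real"
  assumes F: "marginal_ok F f"
begin

lemma Wf_meas[measurable]: "Wf n f \<in> borel_measurable borel"
proof -
  note [measurable] = hdens_meas[OF F]
  show ?thesis unfolding Wf_def[abs_def] borel_prod[symmetric] by measurable
qed

lemma cf_meas[measurable]: "cf n f \<in> borel_measurable borel"
proof -
  note [measurable] = hdens_meas[OF F]
  show ?thesis unfolding cf_def[abs_def] by measurable
qed

lemma sets_nu: "sets (nu n F f k) = sets borel"
  unfolding nu_def by simp

lemma nn_integral_nu:
  fixes g :: "real^'n::finite \<Rightarrow> ennreal"
  assumes g[measurable]: "g \<in> borel_measurable borel"
  shows "(\<integral>\<^sup>+x. g x \<partial>nu TYPE('n) F f (0, i)) = ennreal (measure F {0}) * g 0"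
    "(\<integral>\<^sup>+x. g x \<partial>nu TYPE('n) F f (1, i)) = (\<integral>\<^sup>+p. ennreal (Wf TYPE('n) f p) * indicator Sset p * g (emb i (fst p) (snd p)) \<partial>lborel)"
    "(\<integral>\<^sup>+x. g x \<partial>nu TYPE('n) F f (2, i)) = (\<integral>\<^sup>+b. ennreal (cf TYPE('n) f b) * indicator {0<..<1} b * g (emb i 1 b) \<partial>lborel)"
    "(\<integral>\<^sup>+x. g x \<partial>nu TYPE('n) F f (3, i)) = ennreal (mass1 TYPE('n) F f) * g 1"
proof -
  show "(\<integral>\<^sup>+x. g x \<partial>nu TYPE('n) F f (0, i)) = ennreal (measure F {0}) * g 0"
    unfolding nu_def by (simp add: nn_integral_density nn_integral_return)
  show "(\<integral>\<^sup>+x. g x \<partial>nu TYPE('n) F f (3, i)) = ennreal (mass1 TYPE('n) F f) * g 1"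
    unfolding nu_def by (simp add: nn_integral_density nn_integral_return)
  show "(\<integral>\<^sup>+x. g x \<partial>nu TYPE('n) F f (1, i)) = (\<integral>\<^sup>+p. ennreal (Wf TYPE('n) f p) * indicator Sset p * g (emb i (fst p) (snd p)) \<partial>lborel)"
    unfolding nu_def by (simp add: nn_integral_distr nn_integral_density)
  show "(\<integral>\<^sup>+x. g x \<partial>nu TYPE('n) F f (2, i)) = (\<integral>\<^sup>+b. ennreal (cf TYPE('n) f b) * indicator {0<..<1} b * g (emb i 1 b) \<partial>lborel)"
    unfolding nu_def by (simp add: nn_integral_distr nn_integral_density)
qed

definition Phi :: "'n::finite itself \<Rightarrow> (real^'n \<Rightarrow> ennreal) \<Rightarrow> ennreal" where
  "Phi n g = ennreal (measure F {0}) * g 0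
     + (\<Sum>i\<in>UNIV. \<integral>\<^sup>+p. ennreal (Wf n f p) * indicator Sset p * g (emb i (fst p) (snd p)) \<partial>lborel)
     + (\<Sum>i\<in>UNIV. \<integral>\<^sup>+b. ennreal (cf n f b) * indicator {0<..<1} b * g (emb i 1 b) \<partial>lborel)
     + ennreal (mass1 n F f) * g 1"

lemma Phi_nu:
  assumes g: "g \<in> borel_measurable borel"
  shows "Phi TYPE('n::finite) g = (\<Sum>k\<in>Kset. \<integral>\<^sup>+x. g x \<partial>nu TYPE('n) F f k)"
  unfolding sum_Kset Phi_def nn_integral_nu[OF g] by simp

lemma pistar_em_Phi: "pistar_em TYPE('n::finite) F f A = Phi TYPE('n) (indicator A)"
proof -
  have 1: "\<And>i. (\<integral>\<^sup>+p\<in>{(a,b). 0 < b \<and> b \<le> a \<and> a < 1}.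
        ennreal (1 / ((real CARD('n) - 1) * (fst p)\<^sup>2) * hdens TYPE('n) f (snd p))
        * indicator A (emb i (fst p) (snd p)) \<partial>(lborel :: (real \<times> real) measure))
      = (\<integral>\<^sup>+p. ennreal (Wf TYPE('n) f p) * indicator Sset p * indicator A (emb i (fst p) (snd p)) \<partial>lborel)"
    unfolding Wf_def Sset_def by (intro nn_integral_cong) (simp add: mult_ac)
  have 2: "\<And>i. (\<integral>\<^sup>+b\<in>{0<..<1}.
        ennreal (1 / (real CARD('n) - 1) * hdens TYPE('n) f b) * indicator A (emb i 1 b) \<partial>lborel)
      = (\<integral>\<^sup>+b. ennreal (cf TYPE('n) f b) * indicator {0<..<1} b * indicator A (emb i 1 b) \<partial>lborel)"
    unfolding cf_def by (intro nn_integral_cong) (simp add: mult_ac)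
  show ?thesis unfolding pistar_em_def Phi_def 1 2 mass1_def by simp
qed

lemma pistar_em_nu:
  assumes A: "A \<in> sets borel"
  shows "pistar_em TYPE('n::finite) F f A = (\<Sum>k\<in>Kset. emeasure (nu TYPE('n) F f k) A)"
proof -
  have "pistar_em TYPE('n::finite) F f A = (\<Sum>k\<in>Kset. \<integral>\<^sup>+x. indicator A x \<partial>nu TYPE('n) F f k)"
    unfolding pistar_em_Phi using A by (intro Phi_nu) simp
  also have "\<dots> = (\<Sum>k\<in>Kset. emeasure (nu TYPE('n) F f k) A)"
    using A by (intro sum.cong refl nn_integral_indicator) (simp add: sets_nu)
  finally show ?thesis .
qed

lemma emeasure_pistar:
  assumes A: "A \<in> sets borel"
  shows "emeasure (pistar TYPE('n::finite) F f) A = pistar_em TYPE('n) F f A"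
  unfolding pistar_def
proof (rule emeasure_measure_of_sigma)
  show "sigma_algebra UNIV (sets (borel :: (real^'n) measure))"
    using sets.sigma_algebra_axioms[of "borel :: (real^'n) measure"] by simp
  show "positive (sets borel) (pistar_em TYPE('n) F f)"
    unfolding positive_def pistar_em_Phi Phi_def by simp
  show "A \<in> sets borel" by fact
  show "countably_additive (sets borel) (pistar_em TYPE('n) F f)"
    unfolding countably_additive_def
  proof (intro allI impI)
    fix B :: "nat \<Rightarrow> (real^'n) set"
    assume B: "range B \<subseteq> sets borel" "disjoint_family B" "\<Union> (range B) \<in> sets borel"
    have "(\<Sum>j. pistar_em TYPE('n) F f (B j)) = (\<Sum>j. \<Sum>k\<in>Kset. emeasure (nu TYPE('n) F f k) (B j))"
      using B(1) by (subst pistar_em_nu) auto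
    also have "\<dots> = (\<Sum>k\<in>Kset. \<Sum>j. emeasure (nu TYPE('n) F f k) (B j))"
      by (rule suminf_sum) simp
    also have "\<dots> = (\<Sum>k\<in>Kset. emeasure (nu TYPE('n) F f k) (\<Union> (range B)))"
      using B by (intro sum.cong refl suminf_emeasure) (auto simp: sets_nu)
    also have "\<dots> = pistar_em TYPE('n) F f (\<Union> (range B))"
      using B(3) by (subst pistar_em_nu) auto
    finally show "(\<Sum>j. pistar_em TYPE('n) F f (B j)) = pistar_em TYPE('n) F f (\<Union> (range B))" .
  qed
qed

lemma sets_pistar: "sets (pistar TYPE('n::finite) F f) = sets borel"
  unfolding pistar_def using sets.sigma_sets_eq[of "borel :: (real^'n) measure"] by simp

lemma space_pistar
: "space (pistar TYPE('n::finite) F f) = UNIV"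
  unfolding pistar_def by simp

lemma nn_integral_pistar:
  assumes g: "g \<in> borel_measurable borel"
  shows "(\<integral>\<^sup>+x. g x \<partial>pistar TYPE('n::finite) F f) = Phi TYPE('n) g"
proof -
  have "(\<integral>\<^sup>+x. g x \<partial>pistar TYPE('n::finite) F f) = (\<Sum>k\<in>Kset. \<integral>\<^sup>+x. g x \<partial>nu TYPE('n) F f k)"
  proof (rule nn_integral_sum_measures[OF Kset_fin])
    show "\<And>k. sets (nu TYPE('n) F f k) = sets (pistar TYPE('n) F f)" by (simp add: sets_nu sets_pistar)
    show "\<And>A. A \<in> sets (pistar TYPE('n) F f) \<Longrightarrow> emeasure (pistar TYPE('n) F f) A = (\<Sum>k\<in>Kset. emeasure (nu TYPE('n) F f k) A)"
      unfolding sets_pistar by (simp add: emeasure_pistar pistar_em_nu)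
    show "g \<in> borel_measurable (pistar TYPE('n) F f)" using g by (simp cong: measurable_cong_sets add: sets_pistar)
  qed
  also have "\<dots> = Phi TYPE('n) g" using Phi_nu[OF g] by simp
  finally show ?thesis .
qed

end


lemma sum_if_eq:
  fixes X Y :: ennreal
  shows "(\<Sum>i\<in>(UNIV::'n::finite set). if i = k then X else Y) = X + ennreal (real CARD('n) - 1) * Y"
proof -
  have "(\<Sum>i\<in>(UNIV::'n set). if i = k then X else Y) = X + (\<Sum>i\<in>UNIV - {k}. if i = k then X else Y)"
    by (subst sum.remove[of _ k]) auto
  also have "(\<Sum>i\<in>UNIV - {k}. if i = k then X else Y) = (\<Sum>i\<in>UNIV - {k}. Y)" by (intro sum.cong) auto
  also have "\<dots> = of_nat (CARD('n) - 1) * Y" by (simp add: card_Diff_singleton)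
  also have "(of_nat (CARD('n) - 1) :: ennreal) = ennreal (real CARD('n) - 1)"
  proof -
    have "CARD('n) \<ge> 1" using card_gt_0_iff[of "UNIV::'n set"] by (simp add: Suc_le_eq)
    thus ?thesis by (simp add: ennreal_of_nat_eq_real_of_nat of_nat_diff)
  qed
  finally show ?thesis .
qed

lemma emb_nth: "emb i a b $ k = (if k = i then a else b)" unfolding emb_def by simp

context
  fixes F :: "real measure" and f :: "real \<Rightarrow> real"
  assumes N: "CARD('n::finite) \<ge> 2" and F: "marginal_ok F f" and R: "regI TYPE('n) F f"
begin

definition "e0 = expo TYPE('n)"
definition "N1 = real CARD('n) - 1"
definition "h0 = hdens TYPE('n) f"
definition "J0 = J TYPE('n) f"

lemma N1_ge: "N1 \<ge> 1" unfolding N1_def using N by simp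
lemma e0_gt: "e0 > 1" unfolding e0_def using expo_gt1[OF N] .
lemma h0_nn: "b \<in> {0<..<1} \<Longrightarrow> 0 \<le> h0 b" unfolding h0_def using hdens_nonneg[OF N R] by blast
lemma J0_nn: "b \<le> 1 \<Longrightarrow> 0 \<le> J0 b" unfolding J0_def using J_nonneg[OF F] by blast
lemma h0_meas[measurable]: "h0 \<in> borel_measurable borel" unfolding h0_def using hdens_meas[OF F] .
lemma J0_meas[measurable]: "J0 \<in> borel_measurable borel" unfolding J0_def using J_meas[OF F] .
lemma f_meas[measurable]: "f \<in> borel_measurable borel" using mok_meas[OF F] .

lemma G0: "0 < x \<Longrightarrow> x \<le> 1 \<Longrightarrow> (\<integral>\<^sup>+b. ennreal (h0 b) * indicator {0<..<x} b \<partial>lborel) = ennreal (x powr (1 - e0) * J0 x)"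
  unfolding h0_def e0_def J0_def by (rule G_lemma[OF N F R])

lemma Wf_eq: "Wf TYPE('n) f p = 1 / (N1 * (fst p)\<^sup>2) * h0 (snd p)"
  unfolding Wf_def N1_def h0_def by simp

lemma cf_eq: "cf TYPE('n) f b = h0 b / N1"
  unfolding cf_def N1_def h0_def by simp

lemma X1_eq:
  fixes A :: "real set"
  assumes A[measurable]: "A \<in> sets borel"
  shows "(\<integral>\<^sup>+p. ennreal (Wf TYPE('n) f p) * indicator Sset p * indicator A (fst p) \<partial>lborel)
    = (\<integral>\<^sup>+a. ennreal (a powr (-1 - e0) * J0 a / N1) * indicator (A \<inter> {0<..<1}) a \<partial>lborel)"
proof -
  have "(\<integral>\<^sup>+p. ennreal (Wf TYPE('n) f p) * indicator Sset p * indicator A (fst p) \<partial>lborel)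
      = (\<integral>\<^sup>+p. ennreal (Wf TYPE('n) f p) * indicator Sset p * indicator A (fst p) \<partial>(lborel \<Otimes>\<^sub>M lborel))"
    by (simp add: lborel_prod)
  also have "\<dots> = (\<integral>\<^sup>+a. \<integral>\<^sup>+b. ennreal (Wf TYPE('n) f (a, b)) * indicator Sset (a, b) * indicator A a \<partial>lborel \<partial>lborel)"
  proof -
    have [measurable]: "Wf TYPE('n) f \<in> borel_measurable (borel \<Otimes>\<^sub>M borel)"
      using Wf_meas[OF F] by (simp add: borel_prod)
    have [measurable]: "Sset \<in> sets (borel \<Otimes>\<^sub>M borel)" unfolding borel_prod by (rule Sset_meas)
    have "(\<lambda>p. ennreal (Wf TYPE('n) f p) * indicator Sset p * indicator A (fst p)) \<in> borel_measurable (borel \<Otimes>\<^sub>M borel)"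
      by measurable
    hence m: "(\<lambda>p. ennreal (Wf TYPE('n) f p) * indicator Sset p * indicator A (fst p)) \<in> borel_measurable (lborel \<Otimes>\<^sub>M lborel)"
      unfolding lborel_prod borel_prod by simp
    show ?thesis using lborel.nn_integral_fst[OF m] by simp
  qed
  also have "\<dots> = (\<integral>\<^sup>+a. ennreal (a powr (-1 - e0) * J0 a / N1) * indicator (A \<inter> {0<..<1}) a \<partial>lborel)"
  proof (intro nn_integral_cong)
    fix a :: real
    show "(\<integral>\<^sup>+b. ennreal (Wf TYPE('n) f (a, b)) * indicator Sset (a, b) * indicator A a \<partial>lborel)
        = ennreal (a powr (-1 - e0) * J0 a / N1) * indicator (A \<inter> {0<..<1}) a"
    proof (cases "a \<in> A \<inter> {0<..<1}")
      case True
      hence a: "0 < a" "a < 1" "a \<in> A" by auto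
      have "(\<integral>\<^sup>+b. ennreal (Wf TYPE('n) f (a, b)) * indicator Sset (a, b) * indicator A a \<partial>lborel)
          = (\<integral>\<^sup>+b. ennreal (1 / (N1 * a\<^sup>2)) * (ennreal (h0 b) * indicator {0<..<a} b) \<partial>lborel)"
      proof (rule nn_integral_cong_AE)
        have "AE b in lborel. b \<noteq> a" by (rule AE_lborel_singleton)
        thus "AE b in lborel. ennreal (Wf TYPE('n) f (a, b)) * indicator Sset (a, b) * indicator A a
            = ennreal (1 / (N1 * a\<^sup>2)) * (ennreal (h0 b) * indicator {0<..<a} b)"
        proof eventually_elim
          fix b :: real assume "b \<noteq> a"
          show "ennreal (Wf TYPE('n) f (a, b)) * indicator Sset (a, b) * indicator A a
            = ennreal (1 / (N1 * a\<^sup>2)) * (ennreal (h0 b) * indicator {0<..<a} b)"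
          proof (cases "b \<in> {0<..<a}")
            case True
            hence "0 \<le> h0 b" using a by (intro h0_nn) auto
            moreover have "(a, b) \<in> Sset" using True a unfolding Sset_def by auto
            ultimately show ?thesis using True a N1_ge
              by (simp add: Wf_eq ennreal_mult[symmetric] del: ennreal_mult)
          next
            case False
            hence "(a, b) \<notin> Sset" using \<open>b \<noteq> a\<close> unfolding Sset_def by auto
            thus ?thesis using False by simp
          qed
        qed
      qed
      also have "\<dots> = ennreal (1 / (N1 * a\<^sup>2)) * (\<integral>\<^sup>+b. ennreal (h0 b) * indicator {0<..<a} b \<partial>lborel)"
        by (rule nn_integral_cmult) simp
      also have "\<dots> = ennreal (1 / (N1 * a\<^sup>2)) * ennreal (a powr (1 - e0) * J0 a)"
        using a by (simp add: G0)
      also have "\<dots> = ennreal (a powr (-1 - e0) * J0 a / N1)"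
      proof -
        have "0 \<le> J0 a" using a by (intro J0_nn) auto
        hence "ennreal (1 / (N1 * a\<^sup>2)) * ennreal (a powr (1 - e0) * J0 a) = ennreal (1 / (N1 * a\<^sup>2) * (a powr (1 - e0) * J0 a))"
          using N1_ge by (simp add: ennreal_mult[symmetric] del: ennreal_mult)
        also have "1 / (N1 * a\<^sup>2) * (a powr (1 - e0) * J0 a) = a powr (-1 - e0) * J0 a / N1"
        proof -
          have "a powr (1 - e0) / a\<^sup>2 = a powr (-1 - e0)"
            using a by (simp add: powr_diff[symmetric] flip: powr_numeral)
          thus ?thesis using N1_ge a by (simp add: field_simps)
        qed
        finally show ?thesis .
      qed
      finally show ?thesis using True by simp
    next
      case False
      have "(\<integral>\<^sup>+b. ennreal (Wf TYPE('n) f (a, b)) * indicator Sset (a, b) * indicator A a \<partial>lborel) = (\<integral>\<^sup>+(b::real). 0 \<partial>lborel)"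
        by (intro nn_integral_cong) (use False in \<open>auto simp: Sset_def split: split_indicator\<close>)
      thus ?thesis using False by simp
    qed
  qed
  finally show ?thesis .
qed

lemma Y1_eq:
  fixes A :: "real set"
  assumes A[measurable]: "A \<in> sets borel"
  shows "(\<integral>\<^sup>+p. ennreal (Wf TYPE('n) f p) * indicator Sset p * indicator A (snd p) \<partial>lborel)
    = (\<integral>\<^sup>+b. ennreal (h0 b / N1 * (1 / b - 1)) * indicator (A \<inter> {0<..<1}) b \<partial>lborel)"
proof -
  have "(\<integral>\<^sup>+p. ennreal (Wf TYPE('n) f p) * indicator Sset p * indicator A (snd p) \<partial>lborel)
      = (\<integral>\<^sup>+p. ennreal (Wf TYPE('n) f p) * indicator Sset p * indicator A (snd p) \<partial>(lborel \<Otimes>\<^sub>M lborel))"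
    by (simp add: lborel_prod)
  also have "\<dots> = (\<integral>\<^sup>+b. \<integral>\<^sup>+a. ennreal (Wf TYPE('n) f (a, b)) * indicator Sset (a, b) * indicator A b \<partial>lborel \<partial>lborel)"
  proof -
    have [measurable]: "Wf TYPE('n) f \<in> borel_measurable (borel \<Otimes>\<^sub>M borel)"
      using Wf_meas[OF F] by (simp add: borel_prod)
    have [measurable]: "Sset \<in> sets (borel \<Otimes>\<^sub>M borel)" unfolding borel_prod by (rule Sset_meas)
    have "(\<lambda>p. ennreal (Wf TYPE('n) f p) * indicator Sset p * indicator A (snd p)) \<in> borel_measurable (borel \<Otimes>\<^sub>M borel)"
      by measurable
    hence m: "(\<lambda>p. ennreal (Wf TYPE('n) f p) * indicator Sset p * indicator A (snd p)) \<in> borel_measurable (lborel \<Otimes>\<^sub>M lborel)"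
      unfolding lborel_prod borel_prod by simp
    show ?thesis using lborel_pair.nn_integral_snd[OF m] by simp
  qed
  also have "\<dots> = (\<integral>\<^sup>+b. ennreal (h0 b / N1 * (1 / b - 1)) * indicator (A \<inter> {0<..<1}) b \<partial>lborel)"
  proof (intro nn_integral_cong)
    fix b :: real
    show "(\<integral>\<^sup>+a. ennreal (Wf TYPE('n) f (a, b)) * indicator Sset (a, b) * indicator A b \<partial>lborel)
        = ennreal (h0 b / N1 * (1 / b - 1)) * indicator (A \<inter> {0<..<1}) b"
    proof (cases "b \<in> A \<inter> {0<..<1}")
      case True
      hence b: "0 < b" "b < 1" "b \<in> A" by auto
      have hb: "0 \<le> h0 b" using b by (intro h0_nn) auto
      have "(\<integral>\<^sup>+a. ennreal (Wf TYPE('n) f (a, b)) * indicator Sset (a, b) * indicator A b \<partial>lborel)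
          = (\<integral>\<^sup>+a. ennreal (h0 b / N1) * (ennreal (a powr (-2)) * indicator {b..<1} a) \<partial>lborel)"
      proof (intro nn_integral_cong)
        fix a :: real
        show "ennreal (Wf TYPE('n) f (a, b)) * indicator Sset (a, b) * indicator A b
            = ennreal (h0 b / N1) * (ennreal (a powr (-2)) * indicator {b..<1} a)"
        proof (cases "a \<in> {b..<1}")
          case True
          hence a: "0 < a" using b by auto
          have "(a, b) \<in> Sset" using True b unfolding Sset_def by auto
          moreover have "1 / (N1 * a\<^sup>2) * h0 b = h0 b / N1 * a powr (-2)"
            using a N1_ge by (simp add: powr_minus field_simps flip: powr_numeral)
          ultimately show ?thesis using True b hb N1_ge
            by (simp add: Wf_eq ennreal_mult[symmetric] del: ennreal_mult)
        next
          case False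
          hence "(a, b) \<notin> Sset" unfolding Sset_def by auto
          thus ?thesis using False by simp
        qed
      qed
      also have "\<dots> = ennreal (h0 b / N1) * (\<integral>\<^sup>+a. ennreal (a powr (-2)) * indicator {b..<1} a \<partial>lborel)"
        by (rule nn_integral_cmult) simp
      also have "(\<integral>\<^sup>+a. ennreal (a powr (-2)) * indicator {b..<1} a \<partial>lborel) = ennreal ((1 powr (-2 + 1) - b powr (-2 + 1)) / (-2 + 1))"
        using b by (intro powr_nn_integral(2)) auto
      also have "(1 powr (-2 + 1) - b powr (-2 + 1)) / (-2 + 1) = 1 / b - 1"
        using b by (simp add: powr_minus_divide)
      also have "ennreal (h0 b / N1) * ennreal (1 / b - 1) = ennreal (h0 b / N1 * (1 / b - 1))"
        using hb N1_ge b by (simp add: ennreal_mult[symmetric] del: ennreal_mult)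
      finally show ?thesis using True by simp
    next
      case False
      have "(\<integral>\<^sup>+a. ennreal (Wf TYPE('n) f (a, b)) * indicator Sset (a, b) * indicator A b \<partial>lborel) = (\<integral>\<^sup>+(a::real). 0 \<partial>lborel)"
        by (intro nn_integral_cong) (use False in \<open>auto simp: Sset_def split: split_indicator\<close>)
      thus ?thesis using False by simp
    qed
  qed
  finally show ?thesis .
qed

lemma X2_eq:
  fixes A :: "real set"
  shows "(\<integral>\<^sup>+b. ennreal (cf TYPE('n) f b) * indicator {0<..<1} b * indicator A 1 \<partial>lborel)
    = ennreal (J0 1 / N1) * indicator A 1"
proof -
  have "(\<integral>\<^sup>+b. ennreal (cf TYPE('n) f b) * indicator {0<..<1} b * indicator A 1 \<partial>lborel)
      = (\<integral>\<^sup>+b. (ennreal (1 / N1) * indicator A 1) * (ennreal (h0 b) * indicator {0<..<1} b) \<partial>lborel)"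
  proof (intro nn_integral_cong)
    fix b :: real
    show "ennreal (cf TYPE('n) f b) * indicator {0<..<1} b * indicator A 1 = (ennreal (1 / N1) * indicator A 1) * (ennreal (h0 b) * indicator {0<..<1} b)"
    proof (cases "b \<in> {0<..<1}")
      case True
      hence "0 \<le> h0 b" by (rule h0_nn)
      thus ?thesis using True N1_ge by (simp add: cf_eq ennreal_mult[symmetric] mult_ac del: ennreal_mult)
    qed simp
  qed
  also have "\<dots> = (ennreal (1 / N1) * indicator A 1) * (\<integral>\<^sup>+b. ennreal (h0 b) * indicator {0<..<1} b \<partial>lborel)"
    by (rule nn_integral_cmult) simp
  also have "\<dots> = (ennreal (1 / N1) * indicator A 1) * ennreal (J0 1)" by (simp add: G0)
  also have "\<dots> = ennreal (J0 1 / N1) * indicator A 1"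
    using J0_nn[of 1] N1_ge by (simp add: ennreal_mult[symmetric] mult_ac del: ennreal_mult)
  finally show ?thesis .
qed

lemma Y2_eq:
  fixes A :: "real set"
  shows "(\<integral>\<^sup>+b. ennreal (cf TYPE('n) f b) * indicator {0<..<1} b * indicator A b \<partial>lborel)
    = (\<integral>\<^sup>+b. ennreal (h0 b / N1) * indicator (A \<inter> {0<..<1}) b \<partial>lborel)"
  by (intro nn_integral_cong) (auto simp: cf_eq split: split_indicator)

lemma Y1_cf:
  fixes A :: "real set"
  assumes A: "A \<in> sets borel"
  shows "(\<integral>\<^sup>+p. ennreal (Wf TYPE('n) f p) * indicator Sset p * indicator A (snd p) \<partial>lborel)
    = (\<integral>\<^sup>+b. ennreal (cf TYPE('n) f b * (1 / b - 1)) * indicator (A \<inter> {0<..<1}) b \<partial>lborel)"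
  unfolding Y1_eq[OF A] cf_eq ..

lemma X2_J:
  fixes A :: "real set"
  shows "(\<integral>\<^sup>+b. ennreal (cf TYPE('n) f b) * indicator {0<..<1} b * indicator A 1 \<partial>lborel)
    = ennreal (J TYPE('n) f 1 / (real CARD('n) - 1)) * indicator A 1"
  unfolding X2_eq J0_def N1_def ..

lemma pointwise_f:
  assumes a: "a \<in> {0<..<1}"
  shows "a powr (-1 - e0) * J0 a / N1 + N1 * (h0 a / N1 * (1 / a - 1)) + N1 * (h0 a / N1) = f a"
proof -
  have h: "h0 a = a * f a - a powr (- e0) / N1 * J0 a" unfolding h0_def hdens_def e0_def N1_def J0_def by simp
  have p: "a powr (- e0) = a * a powr (-1 - e0)" using a by (simp add: powr_add[symmetric] powr_mult_base)
  have "N1 * (h0 a / N1 * (1 / a - 1)) + N1 * (h0 a / N1) = h0 a / a" using N1_ge a by (simp add: field_simps)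
  also have "\<dots> = f a - a powr (-1 - e0) * J0 a / N1" unfolding h p using a N1_ge by (simp add: field_simps)
  finally show ?thesis by simp
qed

lemma marginal_eq:
  assumes A: "A \<in> sets (borel :: real measure)"
  shows "emeasure (pistar TYPE('n) F f) {v. v $ k \<in> A} = emeasure F A"
proof -
  define m0 where "m0 = measure F {0}"
  define m1 where "m1 = mass1 TYPE('n) F f"
  have P: "prob_space F" using mok_prob[OF F] .
  interpret PF: prob_space F by (rule P)
  have spF: "space F = UNIV" using sets_eq_imp_space_eq[OF mok_sets[OF F]] by simp
  have sF: "sets F = sets borel" using mok_sets[OF F] .
  have m1nn: "0 \<le> m1" unfolding m1_def mass1_def using R unfolding regI_def by simp
  have m1eq: "J0 1 / N1 + m1 = measure F {1}" unfolding m1_def mass1_def J0_def N1_def by simp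
  have Bm: "{v :: real^'n. v $ k \<in> A} \<in> sets borel"
  proof -
    have "(\<lambda>v::real^'n. v $ k) \<in> borel_measurable borel" by simp
    hence "(\<lambda>v::real^'n. v $ k) -` A \<inter> space borel \<in> sets borel" using A by (rule measurable_sets)
    thus ?thesis by (simp add: vimage_def)
  qed
  have ind: "indicator {v :: real^'n. v $ k \<in> A} = (\<lambda>v. indicator A (v $ k))"
    by (auto simp: fun_eq_iff split: split_indicator)
  have "emeasure (pistar TYPE('n) F f) {v. v $ k \<in> A} = Phi F f TYPE('n) (indicator {v. v $ k \<in> A})"
    using emeasure_pistar[OF F Bm] pistar_em_Phi[OF F] by simp
  also have "\<dots> = ennreal m0 * indicator A 0
      + ((\<integral>\<^sup>+a. ennreal (a powr (-1 - e0) * J0 a / N1) * indicator (A \<inter> {0<..<1}) a \<partial>lborel)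
          + ennreal N1 * (\<integral>\<^sup>+b. ennreal (h0 b / N1 * (1 / b - 1)) * indicator (A \<inter> {0<..<1}) b \<partial>lborel))
      + (ennreal (J0 1 / N1) * indicator A 1
          + ennreal N1 * (\<integral>\<^sup>+b. ennreal (h0 b / N1) * indicator (A \<inter> {0<..<1}) b \<partial>lborel))
      + ennreal m1 * indicator A 1"
  proof -
    have t1: "(\<Sum>i\<in>UNIV. \<integral>\<^sup>+p. ennreal (Wf TYPE('n) f p) * indicator Sset p * indicator A (emb i (fst p) (snd p) $ k) \<partial>lborel)
       = (\<integral>\<^sup>+a. ennreal (a powr (-1 - e0) * J0 a / N1) * indicator (A \<inter> {0<..<1}) a \<partial>lborel)
          + ennreal N1 * (\<integral>\<^sup>+b. ennreal (h0 b / N1 * (1 / b - 1)) * indicator (A \<inter> {0<..<1}) b \<partial>lborel)"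
    proof -
      have "(\<Sum>i\<in>UNIV. \<integral>\<^sup>+p. ennreal (Wf TYPE('n) f p) * indicator Sset p * indicator A (emb i (fst p) (snd p) $ k) \<partial>lborel)
        = (\<Sum>i\<in>UNIV. if i = k then (\<integral>\<^sup>+p. ennreal (Wf TYPE('n) f p) * indicator Sset p * indicator A (fst p) \<partial>lborel)
            else (\<integral>\<^sup>+p. ennreal (Wf TYPE('n) f p) * indicator Sset p * indicator A (snd p) \<partial>lborel))"
        by (intro sum.cong refl) (auto simp: emb_nth)
      also have "\<dots> = (\<integral>\<^sup>+p. ennreal (Wf TYPE('n) f p) * indicator Sset p * indicator A (fst p) \<partial>lborel)
          + ennreal (real CARD('n) - 1) * (\<integral>\<^sup>+p. ennreal (Wf TYPE('n) f p) * indicator Sset p * indicator A (snd p) \<partial>lborel)"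
        by (rule sum_if_eq)
      finally show ?thesis unfolding X1_eq[OF A] Y1_eq[OF A] N1_def .
    qed
    have t2: "(\<Sum>i\<in>UNIV. \<integral>\<^sup>+b. ennreal (cf TYPE('n) f b) * indicator {0<..<1} b * indicator A (emb i 1 b $ k) \<partial>lborel)
       = ennreal (J0 1 / N1) * indicator A 1
          + ennreal N1 * (\<integral>\<^sup>+b. ennreal (h0 b / N1) * indicator (A \<inter> {0<..<1}) b \<partial>lborel)"
    proof -
      have "(\<Sum>i\<in>UNIV. \<integral>\<^sup>+b. ennreal (cf TYPE('n) f b) * indicator {0<..<1} b * indicator A (emb i 1 b $ k) \<partial>lborel)
        = (\<Sum>i\<in>UNIV. if i = k then (\<integral>\<^sup>+b. ennreal (cf TYPE('n) f b) * indicator {0<..<1} b * indicator A 1 \<partial>lborel)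
            else (\<integral>\<^sup>+b. ennreal (cf TYPE('n) f b) * indicator {0<..<1} b * indicator A b \<partial>lborel))"
        by (intro sum.cong refl) (auto simp: emb_nth)
      also have "\<dots> = (\<integral>\<^sup>+b. ennreal (cf TYPE('n) f b) * indicator {0<..<1} b * indicator A 1 \<partial>lborel)
          + ennreal (real CARD('n) - 1) * (\<integral>\<^sup>+b. ennreal (cf TYPE('n) f b) * indicator {0<..<1} b * indicator A b \<partial>lborel)"
        by (rule sum_if_eq)
      finally show ?thesis unfolding X2_eq Y2_eq N1_def .
    qed
    have ph: "Phi F f TYPE('n) g = ennreal (measure F {0}) * g 0
     + (\<Sum>i\<in>UNIV. \<integral>\<^sup>+p. ennreal (Wf TYPE('n) f p) * indicator Sset p * g (emb i (fst p) (snd p)) \<partial>lborel)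
     + (\<Sum>i\<in>UNIV. \<integral>\<^sup>+b. ennreal (cf TYPE('n) f b) * indicator {0<..<1} b * g (emb i 1 b) \<partial>lborel)
     + ennreal (mass1 TYPE('n) F f) * g 1" for g
      unfolding Phi_def[OF F] ..
    show ?thesis unfolding ind ph t1 t2 m0_def m1_def by simp
  qed
  also have "\<dots> = ennreal m0 * indicator A 0 + (\<integral>\<^sup>+a. ennreal (f a) * indicator (A \<inter> {0<..<1}) a \<partial>lborel)
      + ennreal (measure F {1}) * indicator A 1"
  proof -
    have "(\<integral>\<^sup>+a. ennreal (a powr (-1 - e0) * J0 a / N1) * indicator (A \<inter> {0<..<1}) a \<partial>lborel)
          + ennreal N1 * (\<integral>\<^sup>+b. ennreal (h0 b / N1 * (1 / b - 1)) * indicator (A \<inter> {0<..<1}) b \<partial>lborel)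
          + ennreal N1 * (\<integral>\<^sup>+b. ennreal (h0 b / N1) * indicator (A \<inter> {0<..<1}) b \<partial>lborel)
        = (\<integral>\<^sup>+a. ennreal (a powr (-1 - e0) * J0 a / N1) * indicator (A \<inter> {0<..<1}) a
            + ennreal N1 * (ennreal (h0 a / N1 * (1 / a - 1)) * indicator (A \<inter> {0<..<1}) a)
            + ennreal N1 * (ennreal (h0 a / N1) * indicator (A \<inter> {0<..<1}) a) \<partial>lborel)"
      using A by (simp add: nn_integral_add nn_integral_cmult)
    also have "\<dots> = (\<integral>\<^sup>+a. ennreal (f a) * indicator (A \<inter> {0<..<1}) a \<partial>lborel)"
    proof (intro nn_integral_cong)
      fix a :: real
      show "ennreal (a powr (-1 - e0) * J0 a / N1) * indicator (A \<inter> {0<..<1}) a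
            + ennreal N1 * (ennreal (h0 a / N1 * (1 / a - 1)) * indicator (A \<inter> {0<..<1}) a)
            + ennreal N1 * (ennreal (h0 a / N1) * indicator (A \<inter> {0<..<1}) a) = ennreal (f a) * indicator (A \<inter> {0<..<1}) a"
      proof (cases "a \<in> A \<inter> {0<..<1}")
        case True
        hence a: "a \<in> {0<..<1}" by auto
        have nn: "0 \<le> a powr (-1 - e0) * J0 a / N1" "0 \<le> N1 * (h0 a / N1 * (1 / a - 1))" "0 \<le> N1 * (h0 a / N1)"
          using J0_nn[of a] h0_nn[OF a] N1_ge a by auto
        have "ennreal (a powr (-1 - e0) * J0 a / N1) + ennreal N1 * ennreal (h0 a / N1 * (1 / a - 1)) + ennreal N1 * ennreal (h0 a / N1)
            = ennreal (a powr (-1 - e0) * J0 a / N1 + N1 * (h0 a / N1 * (1 / a - 1)) + N1 * (h0 a / N1))"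
          using nn N1_ge h0_nn[OF a] a by (simp add: ennreal_mult[symmetric] ennreal_plus[symmetric] del: ennreal_mult ennreal_plus)
        also have "\<dots> = ennreal (f a)" using pointwise_f[OF a] by simp
        finally show ?thesis using True by simp
      qed simp
    qed
    finally have I: "(\<integral>\<^sup>+a. ennreal (a powr (-1 - e0) * J0 a / N1) * indicator (A \<inter> {0<..<1}) a \<partial>lborel)
          + ennreal N1 * (\<integral>\<^sup>+b. ennreal (h0 b / N1 * (1 / b - 1)) * indicator (A \<inter> {0<..<1}) b \<partial>lborel)
          + ennreal N1 * (\<integral>\<^sup>+b. ennreal (h0 b / N1) * indicator (A \<inter> {0<..<1}) b \<partial>lborel)
        = (\<integral>\<^sup>+a. ennreal (f a) * indicator (A \<inter> {0<..<1}) a \<partial>lborel)" .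
    have M: "ennreal (J0 1 / N1) * indicator A 1 + ennreal m1 * indicator A 1 = ennreal (measure F {1}) * indicator A 1"
    proof -
      have "ennreal (J0 1 / N1) + ennreal m1 = ennreal (measure F {1})"
        using m1eq m1nn J0_nn[of 1] N1_ge by (simp add: ennreal_plus[symmetric] del: ennreal_plus)
      thus ?thesis by (simp add: distrib_right[symmetric])
    qed
    show ?thesis using I M by (simp add: algebra_simps)
  qed
  also have "\<dots> = emeasure F A"
  proof -
    have s0: "A \<inter> {0} \<in> sets F" "A \<inter> {0<..<1} \<in> sets F" "A \<inter> {1} \<in> sets F" "A - {0..1} \<in> sets F"
      using A sF by auto
    have e0': "emeasure F (A \<inter> {0}) = ennreal m0 * indicator A 0"
      unfolding m0_def using PF.emeasure_eq_measure[of "{0}"] by (auto split: split_indicator)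
    have e1': "emeasure F (A \<inter> {1}) = ennreal (measure F {1}) * indicator A 1"
      using PF.emeasure_eq_measure[of "{1}"] by (auto split: split_indicator)
    have ed: "emeasure F (A \<inter> {0<..<1}) = (\<integral>\<^sup>+a. ennreal (f a) * indicator (A \<inter> {0<..<1}) a \<partial>lborel)"
      using mok_dens[OF F, of "A \<inter> {0<..<1}"] A by auto
    have eo: "emeasure F (A - {0..1}) = 0"
    proof -
      have "emeasure F (A - {0..1}) \<le> emeasure F (space F - {0..1})"
        using s0 sF spF by (intro emeasure_mono) auto
      also have "\<dots> = emeasure F (space F) - emeasure F {0..1}"
        using sF spF by (intro emeasure_Diff) auto
      also have "\<dots> = 0" using mok_01[OF F] prob_space.emeasure_space_1[OF P] by simp
      finally show ?thesis by simp
    qed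
    have "A = (A \<inter> {0}) \<union> (A \<inter> {0<..<1}) \<union> (A \<inter> {1}) \<union> (A - {0..1})" by auto
    hence "emeasure F A = emeasure F ((A \<inter> {0}) \<union> (A \<inter> {0<..<1}) \<union> (A \<inter> {1}) \<union> (A - {0..1}))" by simp
    also have "\<dots> = emeasure F ((A \<inter> {0}) \<union> (A \<inter> {0<..<1}) \<union> (A \<inter> {1})) + emeasure F (A - {0..1})"
      by (rule plus_emeasure[symmetric]) (use s0 in auto)
    also have "emeasure F ((A \<inter> {0}) \<union> (A \<inter> {0<..<1}) \<union> (A \<inter> {1})) = emeasure F ((A \<inter> {0}) \<union> (A \<inter> {0<..<1})) + emeasure F (A \<inter> {1})"
      by (rule plus_emeasure[symmetric]) (use s0 in auto)
    also have "emeasure F ((A \<inter> {0}) \<union> (A \<inter> {0<..<1})) = emeasure F (A \<inter> {0}) + emeasure F (A \<inter> {0<..<1})"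
      by (rule plus_emeasure[symmetric]) (use s0 in auto)
    finally show ?thesis using e0' e1' ed eo by simp
  qed
  finally show ?thesis .
qed

end


lemma sum_if_real:
  fixes X Y :: real
  shows "(\<Sum>i\<in>(UNIV::'n::finite set). if i = k then X else Y) = X + (real CARD('n) - 1) * Y"
proof -
  have "(\<Sum>i\<in>(UNIV::'n set). if i = k then X else Y) = X + (\<Sum>i\<in>UNIV - {k}. if i = k then X else Y)"
    by (subst sum.remove[of _ k]) auto
  also have "(\<Sum>i\<in>UNIV - {k}. if i = k then X else Y) = (\<Sum>i\<in>UNIV - {k}. Y)" by (intro sum.cong) auto
  also have "\<dots> = real (CARD('n) - 1) * Y" by (simp add: card_Diff_singleton)
  also have "real (CARD('n) - 1) = real CARD('n) - 1"
  proof -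
    have "CARD('n) \<ge> 1" using card_gt_0_iff[of "UNIV::'n set"] by (simp add: Suc_le_eq)
    thus ?thesis by (simp add: of_nat_diff)
  qed
  finally show ?thesis .
qed

lemma sum_tstar_if:
  "(\<Sum>j\<in>UNIV. tstar (v::real^'n::finite) $ j) = real (nmax v) * (if nmax v = 1
            then 1 / real CARD('n) * vmax v powr expo TYPE('n)
                 + (real CARD('n) - 1) / real CARD('n) * vsec v powr expo TYPE('n)
            else 1 / real (nmax v) * vmax v powr expo TYPE('n))"
proof -
  define c where "c = (if nmax v = 1
            then 1 / real CARD('n) * vmax v powr expo TYPE('n)
                 + (real CARD('n) - 1) / real CARD('n) * vsec v powr expo TYPE('n)
            else 1 / real (nmax v) * vmax v powr expo TYPE('n))"
  have "(\<Sum>j\<in>UNIV. tstar v $ j) = (\<Sum>j\<in>UNIV. if v $ j = vmax v then c else 0)"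
    unfolding tstar_def c_def by simp
  also have "\<dots> = (\<Sum>j\<in>{j \<in> UNIV. v $ j = vmax v}. c)"
    by (rule sum.inter_filter[symmetric]) simp
  also have "\<dots> = real (nmax v) * c" unfolding nmax_def by simp
  finally show ?thesis unfolding c_def .
qed

lemma mo_emb: "CARD('n::finite) \<ge> 2 \<Longrightarrow> mo (emb i a b :: real^'n) i = b"
proof -
  assume N: "CARD('n) \<ge> 2"
  obtain j where "j \<noteq> i" using card_ge2[OF N] by blast
  hence "{emb i a b $ j |j. j \<noteq> i} = {b}" by (auto simp: emb_nth)
  thus ?thesis unfolding mo_def by simp
qed

lemma tstar_sum_emb:
  assumes N: "CARD('n::finite) \<ge> 2" and ab: "0 \<le> b" "b \<le> a"
  shows "(\<Sum>j\<in>UNIV. tstar (emb i a b :: real^'n) $ j) = 1 / real CARD('n) * (\<Sum>j\<in>UNIV. (emb i a b $ j) powr expo TYPE('n))"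
proof -
  define n where "n = real CARD('n)"
  define e where "e = expo TYPE('n)"
  have n2: "n \<ge> 2" using N unfolding n_def by simp
  have rhs: "(\<Sum>j\<in>UNIV. (emb i a b $ j) powr e) = a powr e + (n - 1) * b powr e"
  proof -
    have "(\<Sum>j\<in>UNIV. (emb i a b $ j) powr e) = (\<Sum>j\<in>UNIV. if j = i then a powr e else b powr e)"
      by (intro sum.cong) (auto simp: emb_nth)
    also have "\<dots> = a powr e + (real CARD('n) - 1) * b powr e" by (rule sum_if_real)
    finally show ?thesis unfolding n_def .
  qed
  show ?thesis
  proof (cases "b < a")
    case True
    let ?v = "emb i a b :: real^'n"
    have gt: "?v $ i > mo ?v i" using True mo_emb[OF N] by (simp add: emb_nth)
    have others: "j \<noteq> i \<Longrightarrow> tstar ?v $ j = 0" for j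
    proof -
      assume j: "j \<noteq> i"
      have "?v $ j < mo ?v j" using mo_ge[OF N, of i j ?v] j True by (simp add: emb_nth)
      thus ?thesis by (rule qt_lt(2)[OF N])
    qed
    have "(\<Sum>j\<in>UNIV. tstar ?v $ j) = tstar ?v $ i + (\<Sum>j\<in>UNIV - {i}. tstar ?v $ j)"
      by (subst sum.remove[of _ i]) auto
    also have "(\<Sum>j\<in>UNIV - {i}. tstar ?v $ j) = 0" using others by simp
    also have "tstar ?v $ i = 1 / n * a powr e + (n - 1) / n * b powr e"
      using qt_gt(2)[OF N gt] mo_emb[OF N] unfolding n_def e_def by (simp add: emb_nth)
    finally show ?thesis unfolding e_def[symmetric] n_def[symmetric] rhs using n2 by (simp add: field_simps)
  next
    case False
    hence ab': "a = b" using ab by simp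
    let ?v = "emb i a b :: real^'n"
    have all: "?v $ j = a" for j using ab' by (simp add: emb_nth)
    have vm: "vmax ?v = a" unfolding vmax_def using all by simp
    have nm: "nmax ?v = CARD('n)" unfolding nmax_def using all vm by simp
    have "(\<Sum>j\<in>UNIV. tstar ?v $ j) = a powr e"
      unfolding sum_tstar_if nm vm e_def using N by simp
    also have "\<dots> = 1 / n * (a powr e + (n - 1) * b powr e)" using ab' n2 by (simp add: field_simps)
    finally have X: "(\<Sum>j\<in>UNIV. tstar ?v $ j) = 1 / n * (a powr e + (n - 1) * b powr e)" .
    show ?thesis using X rhs unfolding e_def n_def by simp
  qed
qed

lemma tstar_sum_lower:
  assumes N: "CARD('n::finite) \<ge> 2" and c: "(v::real^'n) \<in> cube"
  shows "1 / real CARD('n) * (\<Sum>j\<in>UNIV. (v $ j) powr expo TYPE('n)) \<le> (\<Sum>j\<in>UNIV. tstar v $ j)"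
proof -
  define n where "n = real CARD('n)"
  define e where "e = expo TYPE('n)"
  have n2: "n \<ge> 2" using N unfolding n_def by simp
  have e0: "e \<ge> 0" using expo_gt1[OF N] unfolding e_def by simp
  have vnn: "0 \<le> v $ j" for j using c unfolding cube_def by auto
  have le_max: "(v $ j) powr e \<le> vmax v powr e" for j using vnn vmax_ge[of v j] e0 by (intro powr_mono2) auto
  consider "nmax v = 1" | "nmax v \<ge> 2" using nmax_ge1[of v] by linarith
  thus ?thesis
  proof cases
    case 1
    then obtain i where i: "{k. v $ k = vmax v} = {i}" unfolding nmax_def by (auto simp: card_1_singleton_iff)
    have vi: "v $ i = vmax v" using i by auto
    have lt: "j \<noteq> i \<Longrightarrow> v $ j < vmax v" for j using i vmax_ge[of v j] by (auto simp: less_le)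
    have gt: "v $ i > mo v i"
    proof -
      obtain j where j: "j \<noteq> i" "v $ j = mo v i" using mo_att[OF N] by blast
      thus ?thesis using lt[OF j(1)] vi by simp
    qed
    have vs: "vsec v = mo v i" using B1(3)[OF N gt] .
    have S: "(\<Sum>j\<in>UNIV. tstar v $ j) = 1 / n * vmax v powr e + (n - 1) / n * mo v i powr e"
      unfolding sum_tstar_if 1 vs n_def e_def by simp
    have "(\<Sum>j\<in>UNIV. (v $ j) powr e) = (v $ i) powr e + (\<Sum>j\<in>UNIV - {i}. (v $ j) powr e)"
      by (subst sum.remove[of _ i]) auto
    also have "(\<Sum>j\<in>UNIV - {i}. (v $ j) powr e) \<le> (\<Sum>j\<in>UNIV - {i}. mo v i powr e)"
      using mo_ge[OF N, of _ i v] vnn e0 by (intro sum_mono powr_mono2) auto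
    also have "(\<Sum>j\<in>UNIV - {i}. mo v i powr e) = (n - 1) * mo v i powr e"
      unfolding n_def by (simp add: card_Diff_singleton of_nat_diff)
    finally have "(\<Sum>j\<in>UNIV. (v $ j) powr e) \<le> vmax v powr e + (n - 1) * mo v i powr e" using vi by simp
    hence "1 / n * (\<Sum>j\<in>UNIV. (v $ j) powr e) \<le> 1 / n * (vmax v powr e + (n - 1) * mo v i powr e)"
      using n2 by (intro mult_left_mono) auto
    also have "\<dots> = (\<Sum>j\<in>UNIV. tstar v $ j)" unfolding S using n2 by (simp add: field_simps)
    finally show ?thesis unfolding n_def e_def .
  next
    case 2
    have S: "(\<Sum>j\<in>UNIV. tstar v $ j) = vmax v powr e"
      unfolding sum_tstar_if e_def using 2 by simp
    have "(\<Sum>j\<in>UNIV. (v $ j) powr e) \<le> (\<Sum>j\<in>(UNIV::'n set). vmax v powr e)"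
      by (intro sum_mono le_max)
    also have "\<dots> = n * vmax v powr e" unfolding n_def by simp
    finally have "1 / n * (\<Sum>j\<in>UNIV. (v $ j) powr e) \<le> 1 / n * (n * vmax v powr e)"
      using n2 by (intro mult_left_mono) auto
    also have "\<dots> = (\<Sum>j\<in>UNIV. tstar v $ j)" unfolding S using n2 by simp
    finally show ?thesis unfolding n_def e_def .
  qed
qed

lemma tstar_sum_bounds:
  assumes N: "CARD('n::finite) \<ge> 2" and c: "(v::real^'n) \<in> cube"
  shows "0 \<le> (\<Sum>j\<in>UNIV. tstar v $ j)" "(\<Sum>j\<in>UNIV. tstar v $ j) \<le> 1"
proof -
  have "0 \<le> 1 / real CARD('n) * (\<Sum>j\<in>UNIV. (v $ j) powr expo TYPE('n))" by (simp add: sum_nonneg)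
  thus "0 \<le> (\<Sum>j\<in>UNIV. tstar v $ j)" using tstar_sum_lower[OF N c] by linarith
  have "(\<Sum>j\<in>UNIV. tstar v $ j) \<le> (\<Sum>j\<in>UNIV. v $ j * qstar v $ j)"
    using util_true_nonneg[OF N c] by (intro sum_mono) (simp add: algebra_simps)
  also have "\<dots> \<le> (\<Sum>j\<in>UNIV. qstar v $ j)"
  proof (intro sum_mono)
    fix j
    have "0 \<le> qstar v $ j" "v $ j \<le> 1" "0 \<le> v $ j" using qstar_props(1)[OF c, of j] c unfolding cube_def by auto
    thus "v $ j * qstar v $ j \<le> qstar v $ j" by (intro mult_left_le_one_le) auto
  qed
  also have "\<dots> \<le> 1" using qstar_props(2)[OF c] .
  finally show "(\<Sum>j\<in>UNIV. tstar v $ j) \<le> 1" .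
qed

lemma PiF_AE_cube:
  assumes F: "marginal_ok F f" and \<pi>: "\<pi> \<in> PiF F"
  shows "AE v in \<pi>. (v::real^'n::finite) \<in> cube"
proof -
  have sp: "sets \<pi> = sets borel" and d: "\<And>i. distr \<pi> borel (\<lambda>v. v $ i) = F" using \<pi> unfolding PiF_def by auto
  have spi: "space \<pi> = UNIV" using sets_eq_imp_space_eq[OF sp] by simp
  have P: "prob_space F" using mok_prob[OF F] .
  have spF: "space F = UNIV" using sets_eq_imp_space_eq[OF mok_sets[OF F]] by simp
  have Fout: "emeasure F (UNIV - {0..1}) = 0"
  proof -
    have "emeasure F (space F - {0..1}) = emeasure F (space F) - emeasure F {0..1}"
      using mok_sets[OF F] spF mok_01[OF F] by (intro emeasure_Diff) auto
    thus ?thesis using mok_01[OF F] prob_space.emeasure_space_1[OF P] spF by simp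
  qed
  have "AE v in \<pi>. v $ i \<in> {0..1}" for i
  proof (rule AE_I')
    show "{v. v $ i \<in> UNIV - {0..1}} \<in> null_sets \<pi>"
    proof -
      have m: "(\<lambda>v::real^'n. v $ i) \<in> \<pi> \<rightarrow>\<^sub>M borel" using sp by (simp cong: measurable_cong_sets)
      have "emeasure (distr \<pi> borel (\<lambda>v. v $ i)) (UNIV - {0..1}) = emeasure \<pi> ((\<lambda>v. v $ i) -` (UNIV - {0..1}) \<inter> space \<pi>)"
        using m by (intro emeasure_distr) auto
      hence "emeasure \<pi> {v. v $ i \<in> UNIV - {0..1}} = 0" using d[of i] Fout spi by (simp add: vimage_def)
      moreover have "{v. v $ i \<in> UNIV - {0..1}} \<in> sets \<pi>"
        using measurable_sets[OF m, of "UNIV - {0..1}"] spi by (simp add: vimage_def)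
      ultimately show ?thesis by (simp add: null_sets_def)
    qed
    show "{v \<in> space \<pi>. \<not> v $ i \<in> {0..1}} \<subseteq> {v. v $ i \<in> UNIV - {0..1}}" by auto
  qed
  hence "AE v in \<pi>. \<forall>i\<in>UNIV. v $ i \<in> {0..1}" by (subst AE_finite_all) auto
  thus ?thesis unfolding cube_def by simp
qed

lemma PiF_coord_integral:
  assumes F: "marginal_ok F f" and \<pi>: "\<pi> \<in> PiF F" and e: "0 \<le> e"
  shows "integrable \<pi> (\<lambda>v::real^'n::finite. (v $ i) powr e)"
    "(\<integral>v. (v $ i) powr e \<partial>\<pi>) = (\<integral>x. x powr e \<partial>F)"
proof -
  have sp: "sets \<pi> = sets borel" and d: "distr \<pi> borel (\<lambda>v. v $ i) = F" and P: "prob_space \<pi>"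
    using \<pi> unfolding PiF_def by auto
  have m: "(\<lambda>v::real^'n. v $ i) \<in> \<pi> \<rightarrow>\<^sub>M borel" using sp by (simp cong: measurable_cong_sets)
  show "integrable \<pi> (\<lambda>v::real^'n::finite. (v $ i) powr e)"
  proof (rule Bochner_Integration.integrable_bound)
    show "integrable \<pi> (\<lambda>v. 1::real)" using P by (simp add: prob_space.finite_measure finite_measure.integrable_const)
    show "(\<lambda>v::real^'n::finite. (v $ i) powr e) \<in> borel_measurable \<pi>" using m by measurable
    have "AE v in \<pi>. v \<in> cube" using PiF_AE_cube[OF F \<pi>] .
    thus "AE v in \<pi>. norm ((v $ i) powr e) \<le> norm (1::real)"
    proof eventually_elim
      case (elim v)
      hence "v $ i \<in> {0..1}" unfolding cube_def by auto
      hence "(v $ i) powr e \<le> 1" using e by (intro powr_le1) auto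
      thus ?case by simp
    qed
  qed
  have "(\<integral>x. x powr e \<partial>F) = (\<integral>x. x powr e \<partial>distr \<pi> borel (\<lambda>v. v $ i))" using d by simp
  also have "\<dots> = (\<integral>v. (v $ i) powr e \<partial>\<pi>)" using m by (intro integral_distr) auto
  finally show "(\<integral>v. (v $ i) powr e \<partial>\<pi>) = (\<integral>x. x powr e \<partial>F)" by simp
qed


context
  fixes F :: "real measure" and f :: "real \<Rightarrow> real"
  assumes N: "CARD('n::finite) \<ge> 2" and F: "marginal_ok F f" and R: "regI TYPE('n) F f"
begin

lemma pistar_PiF: "pistar TYPE('n) F f \<in> PiF F"
proof -
  let ?P = "pistar TYPE('n) F f"
  have sP: "sets ?P = sets borel" by (rule sets_pistar[OF F])
  have spP: "space ?P = UNIV" by (rule space_pistar[OF F])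
  have sF: "sets F = sets borel" using mok_sets[OF F] .
  have spF: "space F = UNIV" using sets_eq_imp_space_eq[OF sF] by simp
  have D: "distr ?P borel (\<lambda>v. v $ i) = F" for i
  proof (rule measure_eqI)
    show "sets (distr ?P borel (\<lambda>v. v $ i)) = sets F" using sF by simp
    fix A assume "A \<in> sets (distr ?P borel (\<lambda>v. v $ i))"
    hence A: "A \<in> sets (borel :: real measure)" by simp
    have m: "(\<lambda>v::real^'n. v $ i) \<in> ?P \<rightarrow>\<^sub>M borel" using sP by (simp cong: measurable_cong_sets)
    have "emeasure (distr ?P borel (\<lambda>v. v $ i)) A = emeasure ?P ((\<lambda>v. v $ i) -` A \<inter> space ?P)"
      using m A by (rule emeasure_distr)
    also have "\<dots> = emeasure ?P {v. v $ i \<in> A}" using spP by (simp add: vimage_def)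
    also have "\<dots> = emeasure F A" by (rule marginal_eq[OF N F R A])
    finally show "emeasure (distr ?P borel (\<lambda>v. v $ i)) A = emeasure F A" .
  qed
  have "prob_space ?P"
  proof (rule prob_spaceI)
    obtain i :: 'n where True by simp
    have "emeasure ?P (space ?P) = emeasure ?P {v. v $ i \<in> UNIV}" using spP by simp
    also have "\<dots> = emeasure F UNIV" by (rule marginal_eq[OF N F R]) simp
    also have "\<dots> = 1" using prob_space.emeasure_space_1[OF mok_prob[OF F]] spF by simp
    finally show "emeasure ?P (space ?P) = 1" .
  qed
  thus ?thesis unfolding PiF_def using sP D by auto
qed

lemma Ls_integrable:
  assumes \<pi>: "\<pi> \<in> PiF F"
  shows "integrable \<pi> (\<lambda>v::real^'n. 1 / real CARD('n) * (\<Sum>j\<in>UNIV. (v $ j) powr expo TYPE('n)))"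
    "(\<integral>v. 1 / real CARD('n) * (\<Sum>j\<in>UNIV. (v $ j) powr expo TYPE('n)) \<partial>\<pi>) = (\<integral>x. x powr expo TYPE('n) \<partial>F)"
proof -
  have e0: "0 \<le> expo TYPE('n)" using expo_gt1[OF N] by simp
  note I = PiF_coord_integral[OF F \<pi> e0]
  show "integrable \<pi> (\<lambda>v::real^'n. 1 / real CARD('n) * (\<Sum>j\<in>UNIV. (v $ j) powr expo TYPE('n)))"
    using I(1) by auto
  have "(\<integral>v. 1 / real CARD('n) * (\<Sum>j\<in>UNIV. (v $ j) powr expo TYPE('n)) \<partial>\<pi>)
      = 1 / real CARD('n) * (\<Sum>j\<in>UNIV. \<integral>v. (v $ j) powr expo TYPE('n) \<partial>\<pi>)"
    using I(1) by (simp add: Bochner_Integration.integral_sum)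
  also have "\<dots> = 1 / real CARD('n) * (\<Sum>j\<in>(UNIV::'n set). \<integral>x. x powr expo TYPE('n) \<partial>F)"
    using I(2) by simp
  also have "\<dots> = (\<integral>x. x powr expo TYPE('n) \<partial>F)" using N by simp
  finally show "(\<integral>v. 1 / real CARD('n) * (\<Sum>j\<in>UNIV. (v $ j) powr expo TYPE('n)) \<partial>\<pi>) = (\<integral>x. x powr expo TYPE('n) \<partial>F)" .
qed

lemma Rs_integrable:
  assumes \<pi>: "\<pi> \<in> PiF F"
  shows "integrable \<pi> (\<lambda>v::real^'n. \<Sum>j\<in>UNIV. tstar v $ j)"
proof (rule Bochner_Integration.integrable_bound)
  have sp: "sets \<pi> = sets borel" and P: "prob_space \<pi>" using \<pi> unfolding PiF_def by auto
  show "integrable \<pi> (\<lambda>v. 1::real)" using P by (simp add: prob_space.finite_measure finite_measure.integrable_const)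
  show "(\<lambda>v::real^'n. \<Sum>j\<in>UNIV. tstar v $ j) \<in> borel_measurable \<pi>"
    using tstar_meas[OF N] sp by (simp cong: measurable_cong_sets)
  show "AE v in \<pi>. norm (\<Sum>j\<in>UNIV. tstar v $ j) \<le> norm (1::real)"
    using PiF_AE_cube[OF F \<pi>] by eventually_elim (use tstar_sum_bounds[OF N] in auto)
qed

lemma U_tstar_lower:
  assumes \<pi>: "\<pi> \<in> PiF F"
  shows "U (tstar :: real^'n \<Rightarrow> real^'n) \<pi> \<ge> (\<integral>x. x powr expo TYPE('n) \<partial>F)"
proof -
  have "(\<integral>x. x powr expo TYPE('n) \<partial>F) = (\<integral>v. 1 / real CARD('n) * (\<Sum>j\<in>UNIV. (v $ j) powr expo TYPE('n)) \<partial>\<pi>)"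
    using Ls_integrable(2)[OF \<pi>] by simp
  also have "\<dots> \<le> (\<integral>v. (\<Sum>j\<in>UNIV. tstar v $ j) \<partial>\<pi>)"
    using Ls_integrable(1)[OF \<pi>] Rs_integrable[OF \<pi>]
    by (rule integral_mono_AE) (use PiF_AE_cube[OF F \<pi>] in \<open>eventually_elim, use tstar_sum_lower[OF N] in auto\<close>)
  finally show ?thesis unfolding U_def .
qed

lemma zero_emb: "(0 :: real^'n) = emb i 0 0" by (simp add: vec_eq_iff emb_nth)
lemma one_emb: "(1 :: real^'n) = emb i 1 1" by (simp add: vec_eq_iff emb_nth)

lemma U_tstar_pistar:
  "U (tstar :: real^'n \<Rightarrow> real^'n) (pistar TYPE('n) F f) = (\<integral>x. x powr expo TYPE('n) \<partial>F)"
proof -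
  let ?P = "pistar TYPE('n) F f"
  let ?R = "\<lambda>v::real^'n. \<Sum>j\<in>UNIV. tstar v $ j"
  let ?L = "\<lambda>v::real^'n. 1 / real CARD('n) * (\<Sum>j\<in>UNIV. (v $ j) powr expo TYPE('n))"
  have sP: "sets ?P = sets borel" by (rule sets_pistar[OF F])
  have Rm[measurable]: "?R \<in> borel_measurable borel" using tstar_meas[OF N] .
  have Lm: "?L \<in> borel_measurable borel" by measurable
  define B where "B = {v. ?R v \<noteq> ?L v}"
  have Bm: "B \<in> sets borel"
  proof -
    have "B = {v \<in> space borel. ?R v \<noteq> ?L v}" unfolding B_def by simp
    also have "\<dots> \<in> sets borel" using Rm Lm by measurable
    finally show ?thesis .
  qed
  have notB: "0 \<le> b \<Longrightarrow> b \<le> a \<Longrightarrow> emb i a b \<notin> B" for i a b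
    unfolding B_def using tstar_sum_emb[OF N] by auto
  have "emeasure ?P B = Phi F f TYPE('n) (indicator B)"
    using emeasure_pistar[OF F Bm] pistar_em_Phi[OF F] by simp
  also have "\<dots> = 0"
  proof -
    have t0: "indicator B (0::real^'n) = (0::ennreal)" using notB[of 0 0 undefined] zero_emb[of undefined] by simp
    have t1: "indicator B (1::real^'n) = (0::ennreal)" using notB[of 1 1 undefined] one_emb[of undefined] by simp
    have t2: "(\<integral>\<^sup>+p. ennreal (Wf TYPE('n) f p) * indicator Sset p * indicator B (emb i (fst p) (snd p)) \<partial>lborel) = 0" for i
    proof -
      have "(\<integral>\<^sup>+p. ennreal (Wf TYPE('n) f p) * indicator Sset p * indicator B (emb i (fst p) (snd p)) \<partial>lborel) = (\<integral>\<^sup>+(p::real\<times>real). 0 \<partial>lborel)"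
        by (intro nn_integral_cong) (auto simp: Sset_def notB split: split_indicator)
      thus ?thesis by simp
    qed
    have t3: "(\<integral>\<^sup>+b. ennreal (cf TYPE('n) f b) * indicator {0<..<1} b * indicator B (emb i 1 b) \<partial>lborel) = 0" for i
    proof -
      have "(\<integral>\<^sup>+b. ennreal (cf TYPE('n) f b) * indicator {0<..<1} b * indicator B (emb i 1 b) \<partial>lborel) = (\<integral>\<^sup>+(b::real). 0 \<partial>lborel)"
        by (intro nn_integral_cong) (auto simp: notB split: split_indicator)
      thus ?thesis by simp
    qed
    show ?thesis unfolding Phi_def[OF F] t0 t1 t2 t3 by simp
  qed
  finally have B0: "emeasure ?P B = 0" .
  have AE: "AE v in ?P. ?R v = ?L v"
    by (rule AE_I'[of B]) (use B0 Bm sP in \<open>auto simp: null_sets_def B_def\<close>)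
  have "U tstar ?P = (\<integral>v. ?R v \<partial>?P)" unfolding U_def ..
  also have "\<dots> = (\<integral>v. ?L v \<partial>?P)"
    using Rm Lm sP AE by (intro integral_cong_AE) (auto cong: measurable_cong_sets)
  also have "\<dots> = (\<integral>x. x powr expo TYPE('n) \<partial>F)" by (rule Ls_integrable(2)[OF pistar_PiF])
  finally show ?thesis .
qed

lemma INF_tstar:
  "(INF \<pi>\<in>PiF F. U (tstar :: real^'n \<Rightarrow> real^'n) \<pi>) = (\<integral>x. x powr expo TYPE('n) \<partial>F)"
proof -
  have "(INF \<pi>\<in>PiF F. U (tstar :: real^'n \<Rightarrow> real^'n) \<pi>) = U (tstar :: real^'n \<Rightarrow> real^'n) (pistar TYPE('n) F f)"
    unfolding U_tstar_pistar
  proof (rule cInf_eq_minimum)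
    show "(\<integral>x. x powr expo TYPE('n) \<partial>F) \<in> (\<lambda>\<pi>. U (tstar :: real^'n \<Rightarrow> real^'n) \<pi>) ` PiF F"
      using pistar_PiF U_tstar_pistar by (metis image_eqI)
    fix y assume "y \<in> (\<lambda>\<pi>. U (tstar :: real^'n \<Rightarrow> real^'n) \<pi>) ` PiF F"
    thus "(\<integral>x. x powr expo TYPE('n) \<partial>F) \<le> y" using U_tstar_lower by auto
  qed
  thus ?thesis using U_tstar_pistar by simp
qed

end


lemma inv_sq_integral:
  fixes x y :: real
  assumes "0 < x" "x \<le> y"
  shows "set_integrable lborel {x<..y} (\<lambda>s. s powr (-2))"
    "(LINT s:{x<..y}|lborel. s powr (-2)) = 1 / x - 1 / y"
proof -
  have h: "((\<lambda>s. s powr (-2)) has_integral ((y powr (-2 + 1) - x powr (-2 + 1)) / (-2 + 1))) {x..y}"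
    using assms by (intro powr_has_integral) auto
  have v: "(y powr (-2 + 1) - x powr (-2 + 1)) / (-2 + 1) = 1 / x - 1 / y"
    using assms by (simp add: powr_minus_divide)
  have nn1: "(\<integral>\<^sup>+s. ennreal (s powr (-2)) * indicator {x..y} s \<partial>lborel) = ennreal (1 / x - 1 / y)"
    using nn_integral_has_integral_lebesgue'[OF _ h] v by simp
  have nn: "(\<integral>\<^sup>+s. ennreal (indicator {x<..y} s * s powr (-2)) \<partial>lborel) = ennreal (1 / x - 1 / y)"
  proof -
    have "(\<integral>\<^sup>+s. ennreal (indicator {x<..y} s * s powr (-2)) \<partial>lborel) = (\<integral>\<^sup>+s. ennreal (s powr (-2)) * indicator {x..y} s \<partial>lborel)"
    proof (rule nn_integral_cong_AE)
      have "AE s in lborel. s \<noteq> x" by (rule AE_lborel_singleton)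
      thus "AE s in lborel. ennreal (indicator {x<..y} s * s powr (-2)) = ennreal (s powr (-2)) * indicator {x..y} s"
        by eventually_elim (auto split: split_indicator)
    qed
    thus ?thesis using nn1 by simp
  qed
  show si: "set_integrable lborel {x<..y} (\<lambda>s. s powr (-2))"
    unfolding set_integrable_def
    by (rule integrableI_nonneg) (use nn in \<open>auto split: split_indicator\<close>)
  have "(LINT s:{x<..y}|lborel. s powr (-2)) = enn2real (\<integral>\<^sup>+s. ennreal (indicator {x<..y} s * s powr (-2)) \<partial>lborel)"
    unfolding set_lebesgue_integral_def by (subst integral_eq_nn_integral) (auto split: split_indicator)
  also have "\<dots> = 1 / x - 1 / y" unfolding nn using assms by (simp add: field_simps)
  finally show "(LINT s:{x<..y}|lborel. s powr (-2)) = 1 / x - 1 / y" .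
qed

lemma archimedean_le:
  fixes X Y C :: real
  assumes C: "0 \<le> C" and H: "\<And>n::nat. n \<ge> 1 \<Longrightarrow> X \<le> Y + C / real n"
  shows "X \<le> Y"
proof (rule ccontr)
  assume "\<not> X \<le> Y"
  hence d: "X - Y > 0" by simp
  obtain n :: nat where n: "C / (X - Y) < real n" using reals_Archimedean2 by blast
  have n1: "n \<ge> 1" using n C d by (metis divide_nonneg_pos not_less of_nat_0 less_one linorder_not_le order.strict_trans1)
  have "C < real n * (X - Y)" using n d by (simp add: pos_divide_less_eq mult.commute)
  hence "C / real n < X - Y" using n1 by (simp add: divide_less_eq mult.commute)
  thus False using H[OF n1] by linarith
qed

lemma K1D:
  fixes T Q :: "real \<Rightarrow> real" and b :: real
  assumes b: "0 < b" "b < 1"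
    and D: "\<And>a a'. a \<in> {b..1} \<Longrightarrow> a' \<in> {b..1} \<Longrightarrow> a * Q a - T a \<ge> a * Q a' - T a'"
  shows "set_integrable lborel {b<..1} (\<lambda>a. T a * a powr (-2))"
    "(LINT a:{b<..1}|lborel. T a * a powr (-2)) \<le> (Q 1 - T 1) - (b * Q b - T b) / b"
proof -
  have Qmono: "Q a \<le> Q a'" if "a \<in> {b..1}" "a' \<in> {b..1}" "a \<le> a'" for a a'
  proof -
    have "(a' - a) * (Q a' - Q a) \<ge> 0" using D[OF that(1,2)] D[OF that(2,1)] by (simp add: algebra_simps)
    thus ?thesis using that by (cases "a = a'") (auto simp: zero_le_mult_iff)
  qed
  have Tmono: "T a \<le> T a'" if "a \<in> {b..1}" "a' \<in> {b..1}" "a \<le> a'" for a a'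
  proof -
    have "T a' - T a \<ge> a * (Q a' - Q a)" using D[OF that(1,2)] by (simp add: algebra_simps)
    moreover have "a * (Q a' - Q a) \<ge> 0" using Qmono[OF that] that b by auto
    ultimately show ?thesis by simp
  qed
  define T' where "T' s = T (max b (min 1 s))" for s
  have T'eq: "s \<in> {b..1} \<Longrightarrow> T' s = T s" for s unfolding T'_def by simp
  have T'mono: "mono T'" unfolding T'_def mono_def using b by (intro allI impI Tmono) auto
  have T'm[measurable]: "T' \<in> borel_measurable borel" using T'mono by (rule borel_measurable_mono)
  have T'b: "T b \<le> T' s" "T' s \<le> T 1" for s unfolding T'_def using b by (auto intro!: Tmono)
  define G where "G s = T' s * s powr (-2)" for s
  have Gm[measurable]: "G \<in> borel_measurable borel" unfolding G_def[abs_def] by measurable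
  define C where "C = (\<bar>T b\<bar> + \<bar>T 1\<bar>) / b\<^sup>2"
  have Gint: "set_integrable lborel {b<..1} G"
    unfolding set_integrable_def
  proof (rule Bochner_Integration.integrable_bound)
    show "integrable lborel (\<lambda>s. indicator {b<..1} s * C)"
      using b by (intro integrable_mult_left integrable_real_indicator) (auto simp: emeasure_lborel_Ioc)
    show "(\<lambda>s. indicator {b<..1} s *\<^sub>R G s) \<in> borel_measurable lborel" by simp
    show "AE s in lborel. norm (indicator {b<..1} s *\<^sub>R G s) \<le> norm (indicator {b<..1} s * C)"
    proof (intro AE_I2)
      fix s :: real
      show "norm (indicator {b<..1} s *\<^sub>R G s) \<le> norm (indicator {b<..1} s * C)"
      proof (cases "s \<in> {b<..1}")
        case True
        hence s: "b < s" "s \<le> 1" by auto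
        have "\<bar>T' s\<bar> \<le> \<bar>T b\<bar> + \<bar>T 1\<bar>" using T'b[of s] by linarith
        moreover have "s powr (-2) \<le> b powr (-2)" using s b by (intro powr_mono2') auto
        moreover have "b powr (-2) = 1 / b\<^sup>2" using b by (simp add: powr_minus_divide flip: powr_numeral)
        moreover have "0 \<le> s powr (-2)" by simp
        ultimately have "\<bar>T' s\<bar> * s powr (-2) \<le> (\<bar>T b\<bar> + \<bar>T 1\<bar>) * (1 / b\<^sup>2)"
          by (intro mult_mono) auto
        hence "\<bar>G s\<bar> \<le> C" unfolding G_def C_def by (simp add: abs_mult)
        moreover have "C \<ge> 0" unfolding C_def by simp
        ultimately show ?thesis using True by simp
      qed simp
    qed
  qed
  have Gsub: "set_integrable lborel {x<..y} G" if "b \<le> x" "y \<le> 1" for x y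
    by (rule set_integrable_subset[OF Gint]) (use that in auto)
  define I where "I x y = (LINT s:{x<..y}|lborel. G s)" for x y
  have Iadd: "I b z = I b x + I x z" if "b \<le> x" "x \<le> z" "z \<le> 1" for x z
  proof -
    have "{b<..z} = {b<..x} \<union> {x<..z}" using that by (simp add: ivl_disj_un_two(6))
    hence "I b z = (LINT s:({b<..x} \<union> {x<..z})|lborel. G s)" unfolding I_def by simp
    also have "\<dots> = I b x + I x z" unfolding I_def
      using that by (intro set_integral_Un Gsub) auto
    finally show ?thesis .
  qed
  have Ibound: "I x y \<le> T y * (1 / x - 1 / y)" if "b \<le> x" "x \<le> y" "y \<le> 1" for x y
  proof -
    have x0: "0 < x" using that b by simp
    have "I x y \<le> (LINT s:{x<..y}|lborel. T y * s powr (-2))"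
      unfolding I_def
    proof (rule set_integral_mono)
      show "set_integrable lborel {x<..y} G" using that by (intro Gsub) auto
      show "set_integrable lborel {x<..y} (\<lambda>s. T y * s powr (-2))"
        using inv_sq_integral(1)[OF x0 that(2)] by (rule set_integrable_mult_right)
      fix s assume s: "s \<in> {x<..y}"
      hence "T' s = T s" using that by (intro T'eq) auto
      moreover have "T s \<le> T y" using s that by (intro Tmono) auto
      ultimately show "G s \<le> T y * s powr (-2)" unfolding G_def by (intro mult_right_mono) auto
    qed
    also have "\<dots> = T y * (1 / x - 1 / y)"
      using inv_sq_integral(2)[OF x0 that(2)] by (simp add: set_integral_mult_right)
    finally show ?thesis .
  qed
  define \<phi> where "\<phi> a = (a * Q a - T a) / a" for a
  have philow: "\<phi> y - \<phi> x \<ge> T x * (1 / x - 1 / y)" if "b \<le> x" "x \<le> y" "y \<le> 1" for x y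
  proof -
    have x0: "0 < x" "0 < y" using that b by auto
    have "y * Q y - T y \<ge> y * Q x - T x" using D[of y x] that by auto
    hence "\<phi> y \<ge> (y * Q x - T x) / y" unfolding \<phi>_def using x0 by (intro divide_right_mono) auto
    moreover have "(y * Q x - T x) / y - \<phi> x = T x * (1 / x - 1 / y)"
      unfolding \<phi>_def using x0 by (simp add: field_simps)
    ultimately show ?thesis by linarith
  qed
  have main: "I b 1 \<le> \<phi> 1 - \<phi> b + (T 1 - T b) * ((1 - b) / (real n * b\<^sup>2))" if n: "n \<ge> 1" for n :: nat
  proof -
    define \<delta> where "\<delta> = (1 - b) / (real n * b\<^sup>2)"
    define pt where "pt k = b + real k * (1 - b) / real n" for k :: nat
    have pt0: "pt 0 = b" unfolding pt_def by simp
    have ptn: "pt n = 1" unfolding pt_def using n by simp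
    have ptb: "k \<le> n \<Longrightarrow> b \<le> pt k \<and> pt k \<le> 1" for k
    proof -
      assume k: "k \<le> n"
      have "real k * (1 - b) / real n \<le> 1 - b"
        using k n b by (simp add: divide_le_eq mult_le_cancel_right1 mult.commute)
      thus ?thesis unfolding pt_def using b by (auto intro!: divide_nonneg_pos)
    qed
    have ptmono: "pt k \<le> pt (Suc k)" for k unfolding pt_def using b
      by (intro add_left_mono divide_right_mono mult_right_mono) auto
    have "I b (pt k) \<le> \<phi> (pt k) - \<phi> b + (T (pt k) - T b) * \<delta>" if "k \<le> n" for k
      using that
    proof (induction k)
      case 0
      have "I b b = 0" unfolding I_def set_lebesgue_integral_def by simp
      thus ?case unfolding pt0 by simp
    next
      case (Suc k)
      have k: "k \<le> n" using Suc.prems by simp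
      have bk: "b \<le> pt k" "pt k \<le> 1" using ptb[OF k] by auto
      have bk1: "b \<le> pt (Suc k)" "pt (Suc k) \<le> 1" using ptb[OF Suc.prems] by auto
      have pos: "0 < pt k" "0 < pt (Suc k)" using bk bk1 b by auto
      define d where "d = 1 / pt k - 1 / pt (Suc k)"
      have d0: "0 \<le> d" unfolding d_def using pos ptmono[of k] by (simp add: frac_le)
      have dle: "d \<le> \<delta>"
      proof -
        have diff: "pt (Suc k) - pt k = (1 - b) / real n" unfolding pt_def using n by (simp add: field_simps)
        have "d = (pt (Suc k) - pt k) / (pt k * pt (Suc k))" unfolding d_def using pos by (simp add: field_simps)
        also have "\<dots> \<le> (pt (Suc k) - pt k) / (b * b)"
          using pos bk(1) bk1(1) b ptmono[of k] by (intro divide_left_mono mult_mono) auto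
        also have "\<dots> = \<delta>" unfolding diff \<delta>_def by (simp add: power2_eq_square)
        finally show ?thesis .
      qed
      have Tinc: "0 \<le> T (pt (Suc k)) - T (pt k)" using Tmono[of "pt k" "pt (Suc k)"] bk bk1 ptmono[of k] by auto
      have "I b (pt (Suc k)) = I b (pt k) + I (pt k) (pt (Suc k))"
        using bk bk1 ptmono[of k] by (intro Iadd) auto
      also have "\<dots> \<le> (\<phi> (pt k) - \<phi> b + (T (pt k) - T b) * \<delta>) + T (pt (Suc k)) * d"
        using Suc.IH[OF k] Ibound[of "pt k" "pt (Suc k)"] bk bk1 ptmono[of k] unfolding d_def by fastforce
      also have "T (pt (Suc k)) * d = T (pt k) * d + (T (pt (Suc k)) - T (pt k)) * d" by (simp add: algebra_simps)
      also have "T (pt k) * d \<le> \<phi> (pt (Suc k)) - \<phi> (pt k)"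
        using philow[of "pt k" "pt (Suc k)"] bk bk1 ptmono[of k] unfolding d_def by auto
      also have "(T (pt (Suc k)) - T (pt k)) * d \<le> (T (pt (Suc k)) - T (pt k)) * \<delta>"
        using Tinc dle by (intro mult_left_mono) auto
      finally show ?case by (simp add: algebra_simps)
    qed
    from this[of n] show ?thesis unfolding ptn pt0 \<delta>_def by simp
  qed
  have final: "I b 1 \<le> \<phi> 1 - \<phi> b"
  proof (rule archimedean_le[of "(T 1 - T b) * ((1 - b) / b\<^sup>2)"])
    show "0 \<le> (T 1 - T b) * ((1 - b) / b\<^sup>2)" using Tmono[of b 1] b by auto
    fix n :: nat assume n: "n \<ge> 1"
    have "(T 1 - T b) * ((1 - b) / (real n * b\<^sup>2)) = (T 1 - T b) * ((1 - b) / b\<^sup>2) / real n"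
      by (simp add: field_simps)
    thus "I b 1 \<le> \<phi> 1 - \<phi> b + (T 1 - T b) * ((1 - b) / b\<^sup>2) / real n" using main[OF n] by linarith
  qed
  have GT: "(LINT a:{b<..1}|lborel. T a * a powr (-2)) = I b 1"
    unfolding I_def G_def by (intro set_lebesgue_integral_cong) (auto simp: T'eq)
  show "set_integrable lborel {b<..1} (\<lambda>a. T a * a powr (-2))"
    using Gint unfolding G_def by (rule set_integrable_cong[THEN iffD1, rotated -1]) (auto simp: T'eq)
  show "(LINT a:{b<..1}|lborel. T a * a powr (-2)) \<le> (Q 1 - T 1) - (b * Q b - T b) / b"
    using final b unfolding GT \<phi>_def by simp
qed


context
  fixes F :: "real measure" and f :: "real \<Rightarrow> real"
  assumes N: "CARD('n::finite) \<ge> 2" and F: "marginal_ok F f" and R: "regI TYPE('n) F f"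
begin

lemma F_density01:
  assumes u: "u \<in> borel_measurable borel"
  shows "(\<integral>\<^sup>+x. u x * indicator {0<..<1} x \<partial>F) = (\<integral>\<^sup>+x. u x * (ennreal (f x) * indicator {0<..<1} x) \<partial>lborel)"
proof -
  have sF: "sets F = sets borel" using mok_sets[OF F] .
  have fm[measurable]: "f \<in> borel_measurable borel" using mok_meas[OF F] .
  have eq: "density F (indicator {0<..<1}) = density lborel (\<lambda>x. ennreal (f x) * indicator {0<..<1} x)"
  proof (rule measure_eqI)
    show "sets (density F (indicator {0<..<1})) = sets (density lborel (\<lambda>x. ennreal (f x) * indicator {0<..<1} x))"
      using sF by simp
    fix A assume "A \<in> sets (density F (indicator {0<..<1}))"
    hence A: "A \<in> sets borel" using sF by simp
    have "emeasure (density F (indicator {0<..<1})) A = (\<integral>\<^sup>+x. indicator {0<..<1} x * indicator A x \<partial>F)"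
      using A sF by (subst emeasure_density) (auto cong: measurable_cong_sets)
    also have "\<dots> = (\<integral>\<^sup>+x. indicator (A \<inter> {0<..<1}) x \<partial>F)"
      by (intro nn_integral_cong) (auto split: split_indicator)
    also have "\<dots> = emeasure F (A \<inter> {0<..<1})" using A sF by (intro nn_integral_indicator) auto
    also have "\<dots> = (\<integral>\<^sup>+x\<in>A \<inter> {0<..<1}. ennreal (f x) \<partial>lborel)" using A by (intro mok_dens[OF F]) auto
    also have "\<dots> = (\<integral>\<^sup>+x. ennreal (f x) * indicator {0<..<1} x * indicator A x \<partial>lborel)"
      by (intro nn_integral_cong) (auto split: split_indicator)
    also have "\<dots> = emeasure (density lborel (\<lambda>x. ennreal (f x) * indicator {0<..<1} x)) A"
      using A by (subst emeasure_density) auto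
    finally show "emeasure (density F (indicator {0<..<1})) A = emeasure (density lborel (\<lambda>x. ennreal (f x) * indicator {0<..<1} x)) A" .
  qed
  have "(\<integral>\<^sup>+x. u x * indicator {0<..<1} x \<partial>F) = (\<integral>\<^sup>+x. indicator {0<..<1} x * u x \<partial>F)" by (simp add: mult.commute)
  also have "\<dots> = (\<integral>\<^sup>+x. u x \<partial>density F (indicator {0<..<1}))"
    using u sF by (subst nn_integral_density) (auto cong: measurable_cong_sets)
  also have "\<dots> = (\<integral>\<^sup>+x. u x \<partial>density lborel (\<lambda>x. ennreal (f x) * indicator {0<..<1} x))" unfolding eq ..
  also have "\<dots> = (\<integral>\<^sup>+x. (ennreal (f x) * indicator {0<..<1} x) * u x \<partial>lborel)"
    using u by (subst nn_integral_density) auto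
  finally show ?thesis by (simp add: mult.commute)
qed

lemma E_eq: "(\<integral>x. x powr expo TYPE('n) \<partial>F) = J TYPE('n) f 1 + measure F {1}"
proof -
  define e where "e = expo TYPE('n)"
  have e1: "e > 1" unfolding e_def using expo_gt1[OF N] .
  have sF: "sets F = sets borel" using mok_sets[OF F] .
  have spF: "space F = UNIV" using sets_eq_imp_space_eq[OF sF] by simp
  have P: "prob_space F" using mok_prob[OF F] .
  interpret PF: prob_space F by (rule P)
  have um: "(\<lambda>x::real. ennreal (x powr e)) \<in> borel_measurable borel" by measurable
  have umF: "(\<lambda>x::real. ennreal (x powr e)) \<in> borel_measurable F" using um sF by (simp cong: measurable_cong_sets)
  have out0: "emeasure F (UNIV - {0..1}) = 0"
  proof -
    have "emeasure F (space F - {0..1}) = emeasure F (space F) - emeasure F {0..1}"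
      using sF spF mok_01[OF F] by (intro emeasure_Diff) auto
    thus ?thesis using mok_01[OF F] PF.emeasure_space_1 spF by simp
  qed
  have split: "ennreal (x powr e) = ennreal (x powr e) * indicator {0<..<1} x + indicator {1} x + ennreal (x powr e) * indicator (UNIV - {0..1}) x" for x :: real
    using e1 by (auto split: split_indicator)
  have "(\<integral>\<^sup>+x. ennreal (x powr e) \<partial>F) = (\<integral>\<^sup>+x. ennreal (x powr e) * indicator {0<..<1} x + indicator {1} x + ennreal (x powr e) * indicator (UNIV - {0..1}) x \<partial>F)"
    by (subst split) rule
  also have "\<dots> = (\<integral>\<^sup>+x. ennreal (x powr e) * indicator {0<..<1} x \<partial>F) + (\<integral>\<^sup>+x. indicator {1} x \<partial>F) + (\<integral>\<^sup>+x. ennreal (x powr e) * indicator (UNIV - {0..1}) x \<partial>F)"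
    using sF by (simp add: nn_integral_add cong: measurable_cong_sets)
  also have "(\<integral>\<^sup>+x. ennreal (x powr e) * indicator (UNIV - {0..1}) x \<partial>F) = 0"
  proof -
    have "AE x in F. x \<notin> UNIV - {0..1}"
      using out0 sF by (intro AE_I'[of "UNIV - {0..1}"]) (auto simp: null_sets_def)
    hence "(\<integral>\<^sup>+x. ennreal (x powr e) * indicator (UNIV - {0..1}) x \<partial>F) = (\<integral>\<^sup>+x. 0 \<partial>F)"
      by (intro nn_integral_cong_AE) (auto split: split_indicator)
    thus ?thesis by simp
  qed
  also have "(\<integral>\<^sup>+x. indicator {1} x \<partial>F) = ennreal (measure F {1})"
    using sF by (simp add: PF.emeasure_eq_measure)
  also have "(\<integral>\<^sup>+x. ennreal (x powr e) * indicator {0<..<1} x \<partial>F) = ennreal (J TYPE('n) f 1)"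
  proof -
    have "(\<integral>\<^sup>+x. ennreal (x powr e) * indicator {0<..<1} x \<partial>F) = (\<integral>\<^sup>+x. ennreal (x powr e) * (ennreal (f x) * indicator {0<..<1} x) \<partial>lborel)"
      by (rule F_density01[OF um])
    also have "\<dots> = (\<integral>\<^sup>+x. ennreal (x powr e * f x) * indicator {0<..<1} x \<partial>lborel)"
    proof (intro nn_integral_cong)
      fix x :: real
      show "ennreal (x powr e) * (ennreal (f x) * indicator {0<..<1} x) = ennreal (x powr e * f x) * indicator {0<..<1} x"
        using mok_nonneg[OF F, of x] by (auto split: split_indicator simp: ennreal_mult)
    qed
    also have "\<dots> = ennreal (J TYPE('n) f 1)" unfolding e_def using e1 by (intro J_enn[OF F, symmetric]) (auto simp: e_def)
    finally show ?thesis .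
  qed
  finally have nn: "(\<integral>\<^sup>+x. ennreal (x powr e) \<partial>F) = ennreal (J TYPE('n) f 1) + ennreal (measure F {1})" by simp
  have "(\<integral>x. x powr e \<partial>F) = enn2real (\<integral>\<^sup>+x. ennreal (x powr e) \<partial>F)"
    using sF by (intro integral_eq_nn_integral) (auto cong: measurable_cong_sets)
  also have "\<dots> = J TYPE('n) f 1 + measure F {1}"
  proof -
    have J1: "0 \<le> J TYPE('n) f 1" by (rule J_nonneg[OF F]) simp
    show ?thesis unfolding nn using J1 by (simp add: ennreal_plus[symmetric] del: ennreal_plus)
  qed
  finally show ?thesis unfolding e_def .
qed

lemma total_mass:
  defines "Yb \<equiv> (\<integral>\<^sup>+b. ennreal (cf TYPE('n) f b * (1 / b - 1)) * indicator {0<..<1} b \<partial>lborel)"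
  shows "ennreal (measure F {0}) + ennreal (real CARD('n)) * Yb + ennreal (\<integral>x. x powr expo TYPE('n) \<partial>F) = 1"
proof -
  let ?P = "pistar TYPE('n) F f"
  have PP: "prob_space ?P" using pistar_PiF[OF N F R] unfolding PiF_def by auto
  have "1 = emeasure ?P (space ?P)" using prob_space.emeasure_space_1[OF PP] by simp
  also have "\<dots> = (\<integral>\<^sup>+x. 1 \<partial>?P)" by simp
  also have "\<dots> = Phi F f TYPE('n) (\<lambda>_. 1)" by (rule nn_integral_pistar[OF F]) simp
  also have "\<dots> = ennreal (measure F {0}) + ennreal (real CARD('n)) * Yb + ennreal (real CARD('n)) * ennreal (J TYPE('n) f 1 / (real CARD('n) - 1))
      + ennreal (mass1 TYPE('n) F f)"
  proof -
    have a: "(\<integral>\<^sup>+p. ennreal (Wf TYPE('n) f p) * indicator Sset p * 1 \<partial>lborel) = Yb" for i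
    proof -
      have "(\<integral>\<^sup>+p. ennreal (Wf TYPE('n) f p) * indicator Sset p * 1 \<partial>lborel) = (\<integral>\<^sup>+p. ennreal (Wf TYPE('n) f p) * indicator Sset p * indicator UNIV (snd p) \<partial>lborel)"
        by simp
      also have "\<dots> = (\<integral>\<^sup>+b. ennreal (cf TYPE('n) f b * (1 / b - 1)) * indicator (UNIV \<inter> {0<..<1}) b \<partial>lborel)"
        by (rule Y1_cf[OF N F R]) simp
      also have "\<dots> = Yb" unfolding Yb_def by simp
      finally show ?thesis .
    qed
    have b: "(\<integral>\<^sup>+b. ennreal (cf TYPE('n) f b) * indicator {0<..<1} b * 1 \<partial>lborel) = ennreal (J TYPE('n) f 1 / (real CARD('n) - 1))" for i
    proof -
      have "(\<integral>\<^sup>+b. ennreal (cf TYPE('n) f b) * indicator {0<..<1} b * 1 \<partial>lborel) = (\<integral>\<^sup>+b. ennreal (cf TYPE('n) f b) * indicator {0<..<1} b * indicator UNIV (1::real) \<partial>lborel)"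
        by simp
      also have "\<dots> = ennreal (J TYPE('n) f 1 / (real CARD('n) - 1)) * indicator UNIV (1::real)" by (rule X2_J[OF N F R])
      finally show ?thesis by simp
    qed
    show ?thesis unfolding Phi_def[OF F] a b by (simp add: ennreal_of_nat_eq_real_of_nat)
  qed
  finally have h1: "1 = ennreal (measure F {0}) + ennreal (real CARD('n)) * Yb + ennreal (real CARD('n)) * ennreal (J TYPE('n) f 1 / (real CARD('n) - 1))
      + ennreal (mass1 TYPE('n) F f)" .
  have h2: "ennreal (real CARD('n)) * ennreal (J TYPE('n) f 1 / (real CARD('n) - 1)) + ennreal (mass1 TYPE('n) F f)
      = ennreal (\<integral>x. x powr expo TYPE('n) \<partial>F)"
  proof -
    have J1: "0 \<le> J TYPE('n) f 1" by (rule J_nonneg[OF F]) simp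
    have m1: "0 \<le> mass1 TYPE('n) F f" unfolding mass1_def using R unfolding regI_def by simp
    have n1: "real CARD('n) - 1 > 0" using N by simp
    have "ennreal (real CARD('n)) * ennreal (J TYPE('n) f 1 / (real CARD('n) - 1)) + ennreal (mass1 TYPE('n) F f)
        = ennreal (real CARD('n) * (J TYPE('n) f 1 / (real CARD('n) - 1)) + mass1 TYPE('n) F f)"
      using J1 m1 n1 by (simp add: ennreal_mult[symmetric] ennreal_plus[symmetric] del: ennreal_mult ennreal_plus)
    also have "real CARD('n) * (J TYPE('n) f 1 / (real CARD('n) - 1)) + mass1 TYPE('n) F f = J TYPE('n) f 1 + measure F {1}"
    proof -
      have "real CARD('n) * (J TYPE('n) f 1 / (real CARD('n) - 1)) = J TYPE('n) f 1 + J TYPE('n) f 1 / (real CARD('n) - 1)"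
        using n1 by (simp add: field_simps)
      thus ?thesis unfolding mass1_def by simp
    qed
    also have "\<dots> = (\<integral>x. x powr expo TYPE('n) \<partial>F)" using E_eq by simp
    finally show ?thesis .
  qed
  show ?thesis using h1 h2 by (metis add.assoc)
qed

end


lemma emb_cube: "a \<in> {0..1} \<Longrightarrow> b \<in> {0..1} \<Longrightarrow> emb i a b \<in> cube"
  unfolding cube_def by (auto simp: emb_nth)

lemma upd_emb: "upd (emb i a b) i x = emb i x b"
  unfolding upd_def emb_def by (simp add: vec_eq_iff)

lemma vmax_emb: "b \<le> a \<Longrightarrow> vmax (emb i a b :: real^'n::finite) = a"
  unfolding vmax_def by (rule Max_eqI) (auto simp: emb_nth intro!: image_eqI[of _ _ i])

context
  fixes q t :: "real^'n::finite \<Rightarrow> real^'n"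
  assumes adm: "admissible q t"
begin

lemma adm_feas: "v \<in> cube \<Longrightarrow> 0 \<le> q v $ i \<and> q v $ i \<le> 1" "v \<in> cube \<Longrightarrow> (\<Sum>i\<in>UNIV. q v $ i) \<le> 1"
  using adm unfolding admissible_def feasible_def by auto

lemma adm_excl: "v \<in> cube \<Longrightarrow> v $ i < vmax v \<Longrightarrow> q v $ i = 0"
  using adm unfolding admissible_def exclusive_def by auto

lemma adm_dsic: "v \<in> cube \<Longrightarrow> x \<in> {0..1} \<Longrightarrow> v $ i * q v $ i - t v $ i \<ge> v $ i * q (upd v i x) $ i - t (upd v i x) $ i"
  using adm unfolding admissible_def DSIC_def by auto

lemma adm_epir: "v \<in> cube \<Longrightarrow> v $ i * q v $ i - t v $ i \<ge> 0"
  using adm unfolding admissible_def EPIR_def by auto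

lemma t_le_q: "v \<in> cube \<Longrightarrow> t v $ i \<le> q v $ i"
proof -
  assume c: "v \<in> cube"
  have "t v $ i \<le> v $ i * q v $ i" using adm_epir[OF c, of i] by simp
  also have "\<dots> \<le> q v $ i" using adm_feas(1)[OF c, of i] c unfolding cube_def
    by (intro mult_left_le_one_le) auto
  finally show ?thesis .
qed

lemma g_le1: "v \<in> cube \<Longrightarrow> (\<Sum>j\<in>UNIV. t v $ j) \<le> 1"
  using t_le_q adm_feas(2) by (meson order_trans sum_mono)

lemma g_le_T:
  assumes ab: "0 \<le> b" "b < a" "a \<le> 1"
  shows "(\<Sum>j\<in>UNIV. t (emb i a b) $ j) \<le> t (emb i a b) $ i"
proof -
  let ?v = "emb i a b"
  have c: "?v \<in> cube" using ab by (intro emb_cube) auto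
  have o: "t ?v $ j \<le> 0" if j: "j \<noteq> i" for j
  proof -
    have "?v $ j < vmax ?v" using j ab vmax_emb[of b a i] by (simp add: emb_nth)
    hence "q ?v $ j = 0" by (rule adm_excl[OF c])
    thus ?thesis using adm_epir[OF c, of j] by simp
  qed
  have "(\<Sum>j\<in>UNIV. t ?v $ j) = t ?v $ i + (\<Sum>j\<in>UNIV - {i}. t ?v $ j)"
    by (subst sum.remove[of _ i]) auto
  also have "(\<Sum>j\<in>UNIV - {i}. t ?v $ j) \<le> 0" using o by (intro sum_nonpos) auto
  finally show ?thesis by simp
qed

lemma g0_le0: "(\<Sum>j\<in>UNIV. t (0::real^'n) $ j) \<le> 0"
proof -
  have c: "(0::real^'n) \<in> cube" unfolding cube_def by simp
  show ?thesis using adm_epir[OF c] by (intro sum_nonpos) simp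
qed

end

context
  fixes F :: "real measure" and f :: "real \<Rightarrow> real"
  assumes N: "CARD('n::finite) \<ge> 2" and F: "marginal_ok F f" and R: "regI TYPE('n) F f"
begin

lemma fiber:
  fixes q t :: "real^'n \<Rightarrow> real^'n"
  assumes adm: "admissible q t" and b: "0 < b" "b < 1" and gm: "g \<in> borel_measurable borel"
    and gdef: "\<And>v. g v = (\<Sum>j\<in>UNIV. t v $ j)"
  shows "(\<integral>\<^sup>+a. ennreal (Wf TYPE('n) f (a, b)) * indicator Sset (a, b) * ennreal (1 - g (emb i a b)) \<partial>lborel)
     + ennreal (cf TYPE('n) f b) * ennreal (1 - g (emb i 1 b)) \<ge> ennreal (cf TYPE('n) f b * (1 / b - 1))"
proof -
  define c where "c = cf TYPE('n) f b"
  have c0: "0 \<le> c" unfolding c_def cf_def using hdens_nonneg[OF N R, of b] b N by simp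
  define T where "T a = t (emb i a b) $ i" for a
  define Q where "Q a = q (emb i a b) $ i" for a
  have D: "a * Q a - T a \<ge> a * Q a' - T a'" if "a \<in> {b..1}" "a' \<in> {b..1}" for a a'
  proof -
    have cv: "emb i a b \<in> cube" using that b by (intro emb_cube) auto
    have "a' \<in> {0..1}" using that b by auto
    from adm_dsic[OF adm cv this, of i] show ?thesis unfolding T_def Q_def upd_emb by (simp add: emb_nth)
  qed
  note K = K1D[OF b D]
  define LI where "LI = (LINT a:{b<..1}|lborel. T a * a powr (-2))"
  have ub: "b * Q b - T b \<ge> 0"
    using adm_epir[OF adm emb_cube[of b b i]] b unfolding Q_def T_def by (simp add: emb_nth)
  have Q1: "Q 1 \<le> 1" using adm_feas(1)[OF adm emb_cube[of 1 b i]] b unfolding Q_def by auto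
  have LIb: "LI + T 1 \<le> 1"
  proof -
    have "(b * Q b - T b) / b \<ge> 0" using ub b by simp
    thus ?thesis using K(2) Q1 unfolding LI_def by linarith
  qed
  have Tle: "T a \<le> 1" if "a \<in> {0..1}" for a
  proof -
    have cv: "emb i a b \<in> cube" using that b by (intro emb_cube) auto
    have "t (emb i a b) $ i \<le> q (emb i a b) $ i" by (rule t_le_q[OF adm cv])
    also have "\<dots> \<le> 1" using adm_feas(1)[OF adm cv, of i] by simp
    finally show ?thesis unfolding T_def .
  qed
  have si2: "set_integrable lborel {b<..1} (\<lambda>s. s powr (-2))" using inv_sq_integral(1)[of b 1] b by simp
  have siH: "set_integrable lborel {b<..1} (\<lambda>a. c * (a powr (-2) - T a * a powr (-2)))"
    by (intro set_integrable_mult_right set_integral_diff(1) si2 K(1))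
  have LH: "(LINT a:{b<..1}|lborel. c * (a powr (-2) - T a * a powr (-2))) = c * ((1 / b - 1) - LI)"
    unfolding LI_def set_integral_mult_right using set_integral_diff(2)[OF si2 K(1)] inv_sq_integral(2)[of b 1] b by simp
  have Hnn: "0 \<le> c * (a powr (-2) - T a * a powr (-2))" if "a \<in> {b<..1}" for a
  proof -
    have "T a * a powr (-2) \<le> 1 * a powr (-2)" using Tle[of a] that b by (intro mult_right_mono) auto
    thus ?thesis using c0 by simp
  qed
  have part1: "(\<integral>\<^sup>+a. ennreal (Wf TYPE('n) f (a, b)) * indicator Sset (a, b) * ennreal (1 - g (emb i a b)) \<partial>lborel)
      \<ge> ennreal (c * ((1 / b - 1) - LI))"
  proof -
    have "ennreal (c * ((1 / b - 1) - LI)) = (\<integral>\<^sup>+a. ennreal (indicator {b<..1} a * (c * (a powr (-2) - T a * a powr (-2)))) \<partial>lborel)"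
    proof -
      have sc: "(\<lambda>x. indicator {b<..1} x *\<^sub>R (c * (x powr (-2) - T x * x powr (-2)))) = (\<lambda>x. indicator {b<..1} x * (c * (x powr (-2) - T x * x powr (-2))))"
        by (simp add: fun_eq_iff)
      have ii: "integrable lborel (\<lambda>x. indicator {b<..1} x * (c * (x powr (-2) - T x * x powr (-2))))"
        using siH unfolding set_integrable_def sc .
      show ?thesis unfolding LH[symmetric] set_lebesgue_integral_def sc
        using Hnn by (intro nn_integral_eq_integral[symmetric] ii AE_I2) (auto split: split_indicator)
    qed
    also have "\<dots> \<le> (\<integral>\<^sup>+a. ennreal (Wf TYPE('n) f (a, b)) * indicator Sset (a, b) * ennreal (1 - g (emb i a b)) \<partial>lborel)"
    proof (rule nn_integral_mono_AE)
      have "AE a in lborel. a \<noteq> 1" by (rule AE_lborel_singleton)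
      thus "AE a in lborel. ennreal (indicator {b<..1} a * (c * (a powr (-2) - T a * a powr (-2))))
          \<le> ennreal (Wf TYPE('n) f (a, b)) * indicator Sset (a, b) * ennreal (1 - g (emb i a b))"
      proof eventually_elim
        fix a :: real assume a1: "a \<noteq> 1"
        show "ennreal (indicator {b<..1} a * (c * (a powr (-2) - T a * a powr (-2))))
          \<le> ennreal (Wf TYPE('n) f (a, b)) * indicator Sset (a, b) * ennreal (1 - g (emb i a b))"
        proof (cases "a \<in> {b<..1}")
          case True
          hence a: "b < a" "a < 1" using a1 by auto
          have S: "(a, b) \<in> Sset" using a b unfolding Sset_def by auto
          have W: "Wf TYPE('n) f (a, b) = c * a powr (-2)"
            unfolding Wf_def c_def cf_def using a b by (simp add: powr_minus_divide field_simps flip: powr_numeral)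
          have gT: "g (emb i a b) \<le> T a" unfolding gdef T_def using g_le_T[OF adm, of b a i] a b by simp
          have T1: "0 \<le> 1 - T a" using Tle[of a] a b by simp
          have "ennreal (indicator {b<..1} a * (c * (a powr (-2) - T a * a powr (-2)))) = ennreal (c * a powr (-2)) * ennreal (1 - T a)"
            using True c0 T1 by (simp add: ennreal_mult[symmetric] algebra_simps del: ennreal_mult)
          also have "\<dots> \<le> ennreal (c * a powr (-2)) * ennreal (1 - g (emb i a b))"
            using gT by (intro mult_left_mono ennreal_leI) auto
          finally show ?thesis using S W by simp
        qed simp
      qed
    qed
    finally show ?thesis .
  qed
  have part2: "ennreal (cf TYPE('n) f b) * ennreal (1 - g (emb i 1 b)) \<ge> ennreal (c * (1 - T 1))"
  proof -
    have gT: "g (emb i 1 b) \<le> T 1" unfolding gdef T_def using g_le_T[OF adm, of b 1 i] b by simp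
    have "ennreal (c * (1 - T 1)) = ennreal c * ennreal (1 - T 1)"
      using c0 Tle[of 1] by (simp add: ennreal_mult)
    also have "\<dots> \<le> ennreal c * ennreal (1 - g (emb i 1 b))" using gT by (intro mult_left_mono ennreal_leI) auto
    finally show ?thesis unfolding c_def .
  qed
  have nn1: "0 \<le> c * ((1 / b - 1) - LI)"
  proof -
    have "0 \<le> (LINT a:{b<..1}|lborel. c * (a powr (-2) - T a * a powr (-2)))"
      unfolding set_lebesgue_integral_def by (intro integral_nonneg_AE AE_I2) (use Hnn in \<open>auto split: split_indicator\<close>)
    thus ?thesis unfolding LH .
  qed
  have nn2: "0 \<le> c * (1 - T 1)" using c0 Tle[of 1] by simp
  have "ennreal (cf TYPE('n) f b * (1 / b - 1)) \<le> ennreal (c * ((1 / b - 1) - LI) + c * (1 - T 1))"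
  proof (intro ennreal_leI)
    have "c * (LI + T 1) \<le> c * 1" using LIb c0 by (intro mult_left_mono) auto
    thus "cf TYPE('n) f b * (1 / b - 1) \<le> c * ((1 / b - 1) - LI) + c * (1 - T 1)"
      unfolding c_def[symmetric] by (simp add: algebra_simps)
  qed
  also have "\<dots> = ennreal (c * ((1 / b - 1) - LI)) + ennreal (c * (1 - T 1))" using nn1 nn2 by (simp add: ennreal_plus)
  also have "\<dots> \<le> (\<integral>\<^sup>+a. ennreal (Wf TYPE('n) f (a, b)) * indicator Sset (a, b) * ennreal (1 - g (emb i a b)) \<partial>lborel)
     + ennreal (cf TYPE('n) f b) * ennreal (1 - g (emb i 1 b))" using part1 part2 by (rule add_mono)
  finally show ?thesis .
qed

end


context
  fixes F :: "real measure" and f :: "real \<Rightarrow> real"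
  assumes N: "CARD('n::finite) \<ge> 2" and F: "marginal_ok F f" and R: "regI TYPE('n) F f"
begin

lemma opt:
  fixes q t :: "real^'n \<Rightarrow> real^'n"
  assumes adm: "admissible q t"
  shows "U t (pistar TYPE('n) F f) \<le> (\<integral>x. x powr expo TYPE('n) \<partial>F)"
proof -
  let ?P = "pistar TYPE('n) F f"
  define g where "g v = (\<Sum>j\<in>UNIV. t v $ j)" for v
  define E where "E = (\<integral>x. x powr expo TYPE('n) \<partial>F)"
  have E0: "0 \<le> E" unfolding E_def by (intro integral_nonneg_AE AE_I2) simp
  have sP: "sets ?P = sets borel" by (rule sets_pistar[OF F])
  have PiP: "?P \<in> PiF F" by (rule pistar_PiF[OF N F R])
  have PP: "prob_space ?P" using PiP unfolding PiF_def by auto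
  interpret PPi: prob_space ?P by (rule PP)
  show ?thesis
  proof (cases "integrable ?P g")
    case False
    hence "U t ?P = 0" unfolding U_def g_def[abs_def] by (rule not_integrable_integral_eq)
    thus ?thesis using E0 unfolding E_def by simp
  next
    case True
    have gmP: "g \<in> borel_measurable ?P" using True by (rule borel_measurable_integrable)
    have gm[measurable]: "g \<in> borel_measurable borel" using gmP sP by (simp cong: measurable_cong_sets)
    have AEc: "AE v in ?P. v \<in> cube" by (rule PiF_AE_cube[OF F PiP])
    have AEg: "AE v in ?P. g v \<le> 1" using AEc by eventually_elim (simp add: g_def g_le1[OF adm])
    have ih: "integrable ?P (\<lambda>v. 1 - g v)" using True by simp
    define \<phi> where "\<phi> v = ennreal (1 - g v)" for v
    have \<phi>m[measurable]: "\<phi> \<in> borel_measurable borel" unfolding \<phi>_def[abs_def] by measurable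
    define Yb where "Yb = (\<integral>\<^sup>+b. ennreal (cf TYPE('n) f b * (1 / b - 1)) * indicator {0<..<1} b \<partial>lborel)"
    have Wm[measurable]: "Wf TYPE('n) f \<in> borel_measurable (borel \<Otimes>\<^sub>M borel)"
      using Wf_meas[OF F] by (simp add: borel_prod)
    have Sm[measurable]: "Sset \<in> sets (borel \<Otimes>\<^sub>M borel)" unfolding borel_prod by (rule Sset_meas)
    have Em[measurable]: "(\<lambda>p. emb i (fst p) (snd p)) \<in> (borel \<Otimes>\<^sub>M borel) \<rightarrow>\<^sub>M (borel :: (real^'n) measure)" for i
      unfolding borel_prod by (rule emb_meas)
    have cfm[measurable]: "cf TYPE('n) f \<in> borel_measurable borel" using cf_meas[OF F] .
    have fibsum: "(\<integral>\<^sup>+p. ennreal (Wf TYPE('n) f p) * indicator Sset p * \<phi> (emb i (fst p) (snd p)) \<partial>lborel)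
        + (\<integral>\<^sup>+b. ennreal (cf TYPE('n) f b) * indicator {0<..<1} b * \<phi> (emb i 1 b) \<partial>lborel) \<ge> Yb" for i
    proof -
      have H: "(\<lambda>p. ennreal (Wf TYPE('n) f p) * indicator Sset p * \<phi> (emb i (fst p) (snd p))) \<in> borel_measurable (lborel \<Otimes>\<^sub>M lborel)"
      proof -
        have "(\<lambda>p. ennreal (Wf TYPE('n) f p) * indicator Sset p * \<phi> (emb i (fst p) (snd p))) \<in> borel_measurable (borel \<Otimes>\<^sub>M borel)"
          by measurable
        thus ?thesis unfolding lborel_prod borel_prod by simp
      qed
      have "(\<integral>\<^sup>+p. ennreal (Wf TYPE('n) f p) * indicator Sset p * \<phi> (emb i (fst p) (snd p)) \<partial>lborel)
          = (\<integral>\<^sup>+b. \<integral>\<^sup>+a. ennreal (Wf TYPE('n) f (a, b)) * indicator Sset (a, b) * \<phi> (emb i a b) \<partial>lborel \<partial>lborel)"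
        using lborel_pair.nn_integral_snd[OF H] by (simp add: lborel_prod)
      moreover have inm: "(\<lambda>b. \<integral>\<^sup>+a. ennreal (Wf TYPE('n) f (a, b)) * indicator Sset (a, b) * \<phi> (emb i a b) \<partial>lborel) \<in> borel_measurable lborel"
      proof (rule lborel.borel_measurable_nn_integral)
        have "(\<lambda>x. ennreal (Wf TYPE('n) f (snd x, fst x)) * indicator Sset (snd x, fst x) * \<phi> (emb i (snd x) (fst x))) \<in> borel_measurable (borel \<Otimes>\<^sub>M borel)"
        proof -
          have sw: "(\<lambda>x::real\<times>real. (snd x, fst x)) \<in> (borel \<Otimes>\<^sub>M borel) \<rightarrow>\<^sub>M (borel \<Otimes>\<^sub>M borel)" by measurable
          have "(\<lambda>p. ennreal (Wf TYPE('n) f p) * indicator Sset p * \<phi> (emb i (fst p) (snd p))) \<in> borel_measurable (borel \<Otimes>\<^sub>M borel)"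
            by measurable
          from measurable_comp[OF sw this] show ?thesis by (simp add: comp_def)
        qed
        thus "(\<lambda>(b, a). ennreal (Wf TYPE('n) f (a, b)) * indicator Sset (a, b) * \<phi> (emb i a b)) \<in> borel_measurable (lborel \<Otimes>\<^sub>M lborel)"
          unfolding lborel_prod borel_prod by (simp add: case_prod_beta')
      qed
      ultimately have "(\<integral>\<^sup>+p. ennreal (Wf TYPE('n) f p) * indicator Sset p * \<phi> (emb i (fst p) (snd p)) \<partial>lborel)
        + (\<integral>\<^sup>+b. ennreal (cf TYPE('n) f b) * indicator {0<..<1} b * \<phi> (emb i 1 b) \<partial>lborel)
        = (\<integral>\<^sup>+b. (\<integral>\<^sup>+a. ennreal (Wf TYPE('n) f (a, b)) * indicator Sset (a, b) * \<phi> (emb i a b) \<partial>lborel)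
             + ennreal (cf TYPE('n) f b) * indicator {0<..<1} b * \<phi> (emb i 1 b) \<partial>lborel)"
        by (simp add: nn_integral_add)
      also have "\<dots> \<ge> Yb" unfolding Yb_def
      proof (intro nn_integral_mono)
        fix b :: real
        show "ennreal (cf TYPE('n) f b * (1 / b - 1)) * indicator {0<..<1} b \<le>
          (\<integral>\<^sup>+a. ennreal (Wf TYPE('n) f (a, b)) * indicator Sset (a, b) * \<phi> (emb i a b) \<partial>lborel)
             + ennreal (cf TYPE('n) f b) * indicator {0<..<1} b * \<phi> (emb i 1 b)"
        proof (cases "b \<in> {0<..<1}")
          case True
          have "ennreal (cf TYPE('n) f b * (1 / b - 1)) \<le>
            (\<integral>\<^sup>+a. ennreal (Wf TYPE('n) f (a, b)) * indicator Sset (a, b) * ennreal (1 - g (emb i a b)) \<partial>lborel)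
             + ennreal (cf TYPE('n) f b) * ennreal (1 - g (emb i 1 b))"
            using True by (intro fiber[OF N F R adm _ _ gm]) (auto simp: g_def)
          thus ?thesis using True unfolding \<phi>_def by simp
        qed simp
      qed
      finally show ?thesis .
    qed
    have low: "Phi F f TYPE('n) \<phi> \<ge> ennreal (measure F {0}) + ennreal (real CARD('n)) * Yb"
    proof -
      have p0: "\<phi> 0 \<ge> 1" unfolding \<phi>_def g_def using g0_le0[OF adm] by simp
      have "ennreal (measure F {0}) + ennreal (real CARD('n)) * Yb = ennreal (measure F {0}) * 1 + (\<Sum>i\<in>(UNIV::'n set). Yb)"
        by (simp add: ennreal_of_nat_eq_real_of_nat)
      also have "\<dots> \<le> ennreal (measure F {0}) * \<phi> 0 + (\<Sum>i\<in>UNIV. (\<integral>\<^sup>+p. ennreal (Wf TYPE('n) f p) * indicator Sset p * \<phi> (emb i (fst p) (snd p)) \<partial>lborel)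
        + (\<integral>\<^sup>+b. ennreal (cf TYPE('n) f b) * indicator {0<..<1} b * \<phi> (emb i 1 b) \<partial>lborel))"
        using p0 fibsum by (intro add_mono mult_left_mono sum_mono) auto
      also have "\<dots> \<le> Phi F f TYPE('n) \<phi>"
        unfolding Phi_def[OF F] sum.distrib by (simp add: add.assoc)
      finally show ?thesis .
    qed
    have tm: "ennreal (measure F {0}) + ennreal (real CARD('n)) * Yb + ennreal E = 1"
      unfolding Yb_def E_def by (rule total_mass[OF N F R])
    have eq1E: "ennreal (measure F {0}) + ennreal (real CARD('n)) * Yb = ennreal (1 - E)"
    proof -
      have "ennreal (measure F {0}) + ennreal (real CARD('n)) * Yb = 1 - ennreal E"
        using tm by (metis ennreal_add_diff_cancel_right ennreal_neq_top)
      also have "\<dots> = ennreal (1 - E)" using E0 by (simp add: ennreal_minus[symmetric])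
      finally show ?thesis .
    qed
    have "ennreal (1 - E) \<le> (\<integral>\<^sup>+v. \<phi> v \<partial>?P)"
      using low eq1E nn_integral_pistar[OF F \<phi>m] by simp
    also have "(\<integral>\<^sup>+v. \<phi> v \<partial>?P) = ennreal (\<integral>v. 1 - g v \<partial>?P)"
      unfolding \<phi>_def using ih AEg by (intro nn_integral_eq_integral) auto
    finally have le: "ennreal (1 - E) \<le> ennreal (\<integral>v. 1 - g v \<partial>?P)" .
    have I1: "1 - E \<le> (\<integral>v. 1 - g v \<partial>?P)"
    proof (cases "1 - E \<le> 0")
      case True
      have "0 \<le> (\<integral>v. 1 - g v \<partial>?P)" using AEg by (intro integral_nonneg_AE) auto
      thus ?thesis using True by simp
    next
      case False
      thus ?thesis using le by (simp add: ennreal_le_iff2)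
    qed
    have "(\<integral>v. 1 - g v \<partial>?P) = (\<integral>v. 1 \<partial>?P) - (\<integral>v. g v \<partial>?P)"
      using True by (intro Bochner_Integration.integral_diff) auto
    also have "(\<integral>v. (1::real) \<partial>?P) = 1" using PPi.prob_space by simp
    finally have "(\<integral>v. g v \<partial>?P) \<le> E" using I1 by simp
    thus ?thesis unfolding U_def g_def E_def .
  qed
qed

end


theorem theorem2:
  fixes F :: "real measure" and f :: "real \<Rightarrow> real"
  assumes N2: "CARD('n::finite) \<ge> 2"
    and F: "marginal_ok F f"
  shows "(regI TYPE('n) F f \<longrightarrow>
            admissible (qstar :: real^'n \<Rightarrow> real^'n) tstar
          \<and> pistar TYPE('n) F f \<in> PiF F
          \<and> (\<forall>\<pi>\<in>PiF F. U (tstar :: real^'n \<Rightarrow> real^'n) \<pi> \<ge> U tstar (pistar TYPE('n) F f))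
          \<and> (\<forall>q t. admissible q t \<longrightarrow> U tstar (pistar TYPE('n) F f) \<ge> U t (pistar TYPE('n) F f))
          \<and> (INF \<pi>\<in>PiF F. U (tstar :: real^'n \<Rightarrow> real^'n) \<pi>) = (\<integral>x. x powr expo TYPE('n) \<partial>F))
       \<and> (regII TYPE('n) F f \<longrightarrow> regI TYPE('n) F f)"
  proof (intro conjI impI)
  assume R: "regI TYPE('n) F f"
  show "admissible (qstar :: real^'n \<Rightarrow> real^'n) tstar" by (rule admissible_star[OF N2])
  show "pistar TYPE('n) F f \<in> PiF F" by (rule pistar_PiF[OF N2 F R])
  show "\<forall>\<pi>\<in>PiF F. U (tstar :: real^'n \<Rightarrow> real^'n) \<pi> \<ge> U tstar (pistar TYPE('n) F f)"
    using U_tstar_lower[OF N2 F R] U_tstar_pistar[OF N2 F R] by auto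
  show "\<forall>q t. admissible q t \<longrightarrow> U tstar (pistar TYPE('n) F f) \<ge> U t (pistar TYPE('n) F f)"
    using opt[OF N2 F R] U_tstar_pistar[OF N2 F R] by auto
  show "(INF \<pi>\<in>PiF F. U (tstar :: real^'n \<Rightarrow> real^'n) \<pi>) = (\<integral>x. x powr expo TYPE('n) \<partial>F)"
    by (rule INF_tstar[OF N2 F R])
next
  assume "regII TYPE('n) F f"
  thus "regI TYPE('n) F f" by (rule regII_regI[OF N2 F])
qed

end
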